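(* Let $(G,N,\vartheta)$ and $(H,M,\varphi)$ be character triples of finite groups with $(G,N,\vartheta)\geq_c(H,M,\varphi)$, and let $C\leq\mathbf{C}_G(N)$. Let $\nu\in\mathrm{Irr}(C\cap N)$ be the unique irreducible constituent of $\vartheta_{C\cap N}$, which is also the unique irreducible constituent of $\varphi_{C\cap N}$. Then $$\left(\mathbf{N}_G(C)_{\vartheta\cdot\psi},N\cdot C,\vartheta\cdot\psi\right)\geq_c\left(\mathbf{N}_H(C)_{\varphi\cdot\psi},M\cdot C,\varphi\cdot\psi\right)$$ for every $\psi\in\mathrm{Irr}(C\mid\nu)$.
   Context: Central products: since $C$ centralizes $N$ (and hence $M$), $NC$ and $MC$ are central products, written $N\cdot C$ and $M\cdot C$. For $\vartheta\in\mathrm{Irr}(N)$ and $\psi\in\mathrm{Irr}(C)$ lying over the same character $\nu$ of $N\cap C$, $\vartheta\cdot\psi$ denotes the unique irreducible character of $N\cdot C$ with $(\vartheta\cdot\psi)(nc)=\vartheta(n)\psi(c)$ for $n\in N$, $c\in C$ (similarly $\varphi\cdot\psi$ on $M\cdot C$). Subscripts denote stabilizers; $\mathrm{Irr}(C\mid\nu)$ is the set of irreducible characters of $C$ lying over $\nu$. Character triples and $\geq_c$: a character triple $(G,N,\vartheta)$ consists of $N\trianglelefteq G$ and a $G$-invariant $\vartheta\in\mathrm{Irr}(N)$. A projective representation of $G$ associated with $\vartheta$ is a map $\mathcal{P}:G\to\mathrm{GL}_{\vartheta(1)}(\mathbb{C})$ with $\mathcal{P}(x)\mathcal{P}(y)=\alpha(x,y)\mathcal{P}(xy)$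 for a factor set $\alpha$, such that $\mathcal{P}|_N$ is a representation affording $\vartheta$ and $\mathcal{P}(xn)=\mathcal{P}(x)\mathcal{P}(n)$, $\mathcal{P}(nx)=\mathcal{P}(n)\mathcal{P}(x)$ for $x\in G,n\in N$. One writes $(G,N,\vartheta)\geq_c(H,M,\varphi)$ for character triples if $G=NH$, $M=N\cap H$, $\mathbf{C}_G(N)\leq H$, and there are projective representations $\mathcal{P}$ of $G$ associated with $\vartheta$ and $\mathcal{P}'$ of $H$ associated with $\varphi$, with factor sets $\alpha,\alpha'$, such that $\alpha|_{H\times H}=\alpha'$ and for every $c\in\mathbf{C}_G(N)$ the matrices $\mathcal{P}(c)$, $\mathcal{P}'(c)$ are scalar with the same scalar. *)

theory Defs
  imports "HOL-Algebra.Coset" "Jordan_Normal_Form.Matrix"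
begin

text \<open>All groups are subgroups (given as subsets) of an ambient finite group A
  (a HOL-Algebra group structure). Characters are complex-valued functions on
  the carrier of A that vanish outside the subgroup they are characters of.\<close>

definition mat_trace :: "complex mat \<Rightarrow> complex" where
  "mat_trace P = (\<Sum>i<dim_row P. P $$ (i, i))"

definition is_rep :: "('a, 'b) monoid_scheme \<Rightarrow> 'a set \<Rightarrow> nat \<Rightarrow> ('a \<Rightarrow> complex mat) \<Rightarrow> bool" where
  "is_rep A K n \<rho> \<longleftrightarrow>
     (\<forall>g\<in>K. \<rho> g \<in> carrier_mat n n) \<and> \<rho> \<one>\<^bsub>A\<^esub> = 1\<^sub>m n \<and>
     (\<forall>g\<in>K. \<forall>h\<in>K. \<rho> (g \<otimes>\<^bsub>A\<^esub> h) = \<rho> g * \<rho> h)"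

definition invariant_subspace :: "'a set \<Rightarrow> nat \<Rightarrow> ('a \<Rightarrow> complex mat) \<Rightarrow> complex vec set \<Rightarrow> bool" where
  "invariant_subspace K n \<rho> W \<longleftrightarrow>
     W \<subseteq> carrier_vec n \<and> 0\<^sub>v n \<in> W \<and>
     (\<forall>v\<in>W. \<forall>w\<in>W. v + w \<in> W) \<and> (\<forall>a. \<forall>v\<in>W. a \<cdot>\<^sub>v v \<in> W) \<and>
     (\<forall>g\<in>K. \<forall>v\<in>W. \<rho> g *\<^sub>v v \<in> W)"

definition irreducible_rep :: "('a, 'b) monoid_scheme \<Rightarrow> 'a set \<Rightarrow> nat \<Rightarrow> ('a \<Rightarrow> complex mat) \<Rightarrow> bool" where
  "irreducible_rep A K n \<rho> \<longleftrightarrow> is_rep A K n \<rho> \<and> n > 0 \<and>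
     (\<forall>W. invariant_subspace K n \<rho> W \<longrightarrow> W = {0\<^sub>v n} \<or> W = carrier_vec n)"

definition Irr :: "('a, 'b) monoid_scheme \<Rightarrow> 'a set \<Rightarrow> ('a \<Rightarrow> complex) set" where
  "Irr A K = {\<chi>. \<exists>n \<rho>. irreducible_rep A K n \<rho> \<and>
      (\<forall>g\<in>K. \<chi> g = mat_trace (\<rho> g)) \<and> (\<forall>g. g \<notin> K \<longrightarrow> \<chi> g = 0)}"

definition char_inner :: "'a set \<Rightarrow> ('a \<Rightarrow> complex) \<Rightarrow> ('a \<Rightarrow> complex) \<Rightarrow> complex" where
  "char_inner K \<chi> \<psi> = (\<Sum>g\<in>K. \<chi> g * cnj (\<psi> g)) / of_nat (card K)"

definition lies_over :: "'a set \<Rightarrow> ('a \<Rightarrow> complex) \<Rightarrow> ('a \<Rightarrow> complex) \<Rightarrow> bool" where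
  "lies_over L \<chi> \<nu> \<longleftrightarrow> char_inner L \<chi> \<nu> \<noteq> 0"

definition Irr_over :: "('a, 'b) monoid_scheme \<Rightarrow> 'a set \<Rightarrow> 'a set \<Rightarrow> ('a \<Rightarrow> complex) \<Rightarrow> ('a \<Rightarrow> complex) set" where
  "Irr_over A K L \<nu> = {\<psi> \<in> Irr A K. lies_over L \<psi> \<nu>}"

definition centralizer_in :: "('a, 'b) monoid_scheme \<Rightarrow> 'a set \<Rightarrow> 'a set \<Rightarrow> 'a set" where
  "centralizer_in A K X = {g \<in> K. \<forall>x\<in>X. g \<otimes>\<^bsub>A\<^esub> x = x \<otimes>\<^bsub>A\<^esub> g}"

definition normalizer_in :: "('a, 'b) monoid_scheme \<Rightarrow> 'a set \<Rightarrow> 'a set \<Rightarrow> 'a set" where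
  "normalizer_in A K X = {g \<in> K. (\<lambda>x. g \<otimes>\<^bsub>A\<^esub> x \<otimes>\<^bsub>A\<^esub> inv\<^bsub>A\<^esub> g) ` X = X}"

definition char_stab :: "('a, 'b) monoid_scheme \<Rightarrow> 'a set \<Rightarrow> ('a \<Rightarrow> complex) \<Rightarrow> 'a set" where
  "char_stab A K \<chi> = {g \<in> K. \<forall>x\<in>carrier A. \<chi> (g \<otimes>\<^bsub>A\<^esub> x \<otimes>\<^bsub>A\<^esub> inv\<^bsub>A\<^esub> g) = \<chi> x}"

definition cprod_char :: "('a, 'b) monoid_scheme \<Rightarrow> 'a set \<Rightarrow> 'a set \<Rightarrow> ('a \<Rightarrow> complex) \<Rightarrow> ('a \<Rightarrow> complex) \<Rightarrow> 'a \<Rightarrow> complex" where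
  "cprod_char A N C \<theta> \<psi> x =
     (if x \<in> N <#>\<^bsub>A\<^esub> C
      then (let p = (SOME p. fst p \<in> N \<and> snd p \<in> C \<and> x = fst p \<otimes>\<^bsub>A\<^esub> snd p)
            in \<theta> (fst p) * \<psi> (snd p))
      else 0)"

definition char_triple :: "('a, 'b) monoid_scheme \<Rightarrow> 'a set \<Rightarrow> 'a set \<Rightarrow> ('a \<Rightarrow> complex) \<Rightarrow> bool" where
  "char_triple A K N \<theta> \<longleftrightarrow> subgroup K A \<and> normal N (A\<lparr>carrier := K\<rparr>) \<and> \<theta> \<in> Irr A N \<and>
     (\<forall>g\<in>K. \<forall>x\<in>carrier A. \<theta> (g \<otimes>\<^bsub>A\<^esub> x \<otimes>\<^bsub>A\<^esub> inv\<^bsub>A\<^esub> g) = \<theta> x)"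

definition proj_rep_assoc :: "('a, 'b) monoid_scheme \<Rightarrow> 'a set \<Rightarrow> 'a set \<Rightarrow> ('a \<Rightarrow> complex)
    \<Rightarrow> ('a \<Rightarrow> complex mat) \<Rightarrow> ('a \<times> 'a \<Rightarrow> complex) \<Rightarrow> bool" where
  "proj_rep_assoc A K N \<theta> P \<alpha> \<longleftrightarrow>
     (\<exists>d. of_nat d = \<theta> \<one>\<^bsub>A\<^esub> \<and>
        (\<forall>x\<in>K. P x \<in> carrier_mat d d \<and> invertible_mat (P x)) \<and>
        (\<forall>x\<in>K. \<forall>y\<in>K. P x * P y = \<alpha> (x, y) \<cdot>\<^sub>m P (x \<otimes>\<^bsub>A\<^esub> y)) \<and>
        is_rep A N d P \<and> (\<forall>n\<in>N. \<theta> n = mat_trace (P n)) \<and>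
        (\<forall>x\<in>K. \<forall>n\<in>N. P (x \<otimes>\<^bsub>A\<^esub> n) = P x * P n \<and> P (n \<otimes>\<^bsub>A\<^esub> x) = P n * P x))"

definition geq_c :: "('a, 'b) monoid_scheme \<Rightarrow> 'a set \<Rightarrow> 'a set \<Rightarrow> ('a \<Rightarrow> complex)
    \<Rightarrow> 'a set \<Rightarrow> 'a set \<Rightarrow> ('a \<Rightarrow> complex) \<Rightarrow> bool" where
  "geq_c A G N \<theta> H M \<phi> \<longleftrightarrow>
     char_triple A G N \<theta> \<and> char_triple A H M \<phi> \<and>
     G = N <#>\<^bsub>A\<^esub> H \<and> M = N \<inter> H \<and> centralizer_in A G N \<subseteq> H \<and>
     (\<exists>P \<alpha> P' \<alpha>'. proj_rep_assoc A G N \<theta> P \<alpha> \<and> proj_rep_assoc A H M \<phi> P' \<alpha>' \<and>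
        (\<forall>x\<in>H. \<forall>y\<in>H. \<alpha> (x, y) = \<alpha>' (x, y)) \<and>
        (\<forall>c\<in>centralizer_in A G N. \<exists>z::complex.
            P c = z \<cdot>\<^sub>m 1\<^sub>m (dim_row (P c)) \<and> P' c = z \<cdot>\<^sub>m 1\<^sub>m (dim_row (P' c))))"

end

theory Submission
  imports Defs "Jordan_Normal_Form.Spectral_Radius" "Jordan_Normal_Form.Determinant"
begin

lemma sum_div_mod_split:
  fixes f :: "nat \<Rightarrow> 'c::comm_monoid_add"
  shows "(\<Sum>k<a*b. f k) = (\<Sum>i<a. \<Sum>j<b. f (i*b+j))"
proof -
  have "(\<Sum>k<a*b. f k) = (\<Sum>i<a. sum f {i*b..<i*b+b})"
    using sum.nat_group[of f b a] by simp
  also have "\<dots> = (\<Sum>i<a. \<Sum>j<b. f (i*b+j))"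
  proof (rule sum.cong[OF refl])
    fix i
    have "sum f {i*b..<i*b+b} = (\<Sum>j\<in>{0..<b}. f (j + i*b))"
      using sum.shift_bounds_nat_ivl[of f 0 "i*b" b] by (simp add: add.commute)
    also have "\<dots> = (\<Sum>j<b. f (i*b+j))" by (simp add: atLeast0LessThan add.commute)
    finally show "sum f {i*b..<i*b+b} = (\<Sum>j<b. f (i*b+j))" .
  qed
  finally show ?thesis .
qed



definition kron :: "complex mat \<Rightarrow> complex mat \<Rightarrow> complex mat" where
  "kron A B = mat (dim_row A * dim_row B) (dim_col A * dim_col B)
     (\<lambda>(i,j). A $$ (i div dim_row B, j div dim_col B) * B $$ (i mod dim_row B, j mod dim_col B))"

lemma kron_carrier: "A \<in> carrier_mat a a \<Longrightarrow> B \<in> carrier_mat b b \<Longrightarrow> kron A B \<in> carrier_mat (a*b) (a*b)"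
  unfolding kron_def by auto

lemma kron_dims[simp]: "dim_row (kron A B) = dim_row A * dim_row B" "dim_col (kron A B) = dim_col A * dim_col B"
  unfolding kron_def by auto

lemma div_mod_lt: "i < a*b \<Longrightarrow> i div b < a \<and> i mod b < (b::nat)"
  by (metis less_mult_imp_div_less mod_less_divisor mult_zero_right neq0_conv not_less0 mult.commute)

lemma idx_lt: assumes "x < (a::nat)" "y < b" shows "x*b+y < a*b"
proof -
  have "x*b+y < x*b+b" using assms by simp
  also have "\<dots> = Suc x * b" by simp
  also have "\<dots> \<le> a*b" using assms(1) by (intro mult_le_mono1) simp
  finally show ?thesis .
qed

lemma kron_index: "i < dim_row A * dim_row B \<Longrightarrow> j < dim_col A * dim_col B \<Longrightarrow>
  kron A B $$ (i,j) = A $$ (i div dim_row B, j div dim_col B) * B $$ (i mod dim_row B, j mod dim_col B)"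
  unfolding kron_def by auto

lemma kron_mult:
  assumes A: "A \<in> carrier_mat a a" and B: "B \<in> carrier_mat b b"
    and C: "C \<in> carrier_mat a a" and D: "D \<in> carrier_mat b b"
  shows "kron A B * kron C D = kron (A * C) (B * D)"
proof (rule eq_matI)
  fix i j assume i: "i < dim_row (kron (A * C) (B * D))" and j: "j < dim_col (kron (A * C) (B * D))"
  from i j A B C D have i': "i < a*b" and j': "j < a*b" by auto
  from div_mod_lt[OF i'] have i1: "i div b < a" and i2: "i mod b < b" by auto
  from div_mod_lt[OF j'] have j1: "j div b < a" and j2: "j mod b < b" by auto
  have "(kron A B * kron C D) $$ (i,j) = (\<Sum>k<a*b. kron A B $$ (i,k) * kron C D $$ (k,j))"
    using A B C D i' j' by (simp add: scalar_prod_def atLeast0LessThan)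
  also have "\<dots> = (\<Sum>x<a. \<Sum>y<b. kron A B $$ (i,x*b+y) * kron C D $$ (x*b+y,j))"
    by (rule sum_div_mod_split)
  also have "\<dots> = (\<Sum>x<a. \<Sum>y<b. (A $$ (i div b, x) * C $$ (x, j div b)) * (B $$ (i mod b, y) * D $$ (y, j mod b)))"
  proof (intro sum.cong refl)
    fix x y assume x: "x \<in> {..<a}" and y: "y \<in> {..<b}"
    have lt: "x*b+y < a*b" using x y idx_lt by blast
    have dm: "(x*b+y) div b = x" "(x*b+y) mod b = y" using y by auto
    show "kron A B $$ (i,x*b+y) * kron C D $$ (x*b+y,j) = (A $$ (i div b, x) * C $$ (x, j div b)) * (B $$ (i mod b, y) * D $$ (y, j mod b))"
      using A B C D i' j' lt dm by (simp add: kron_index)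
  qed
  also have "\<dots> = (\<Sum>x<a. A $$ (i div b, x) * C $$ (x, j div b)) * (\<Sum>y<b. B $$ (i mod b, y) * D $$ (y, j mod b))"
    by (simp add: sum_product)
  also have "\<dots> = (A*C) $$ (i div b, j div b) * (B*D) $$ (i mod b, j mod b)"
    using A B C D i1 i2 j1 j2 by (simp add: scalar_prod_def atLeast0LessThan)
  also have "\<dots> = kron (A * C) (B * D) $$ (i,j)"
    using A B C D i' j' by (simp add: kron_index)
  finally show "(kron A B * kron C D) $$ (i,j) = kron (A * C) (B * D) $$ (i,j)" .
qed (insert A B C D, auto)

lemma kron_one: "kron (1\<^sub>m a) (1\<^sub>m b) = 1\<^sub>m (a*b)"
proof (rule eq_matI)
  fix i j assume "i < dim_row (1\<^sub>m (a*b))" "j < dim_col (1\<^sub>m (a*b))"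
  hence i: "i < a*b" and j: "j < a*b" by auto
  from div_mod_lt[OF i] div_mod_lt[OF j]
  have "i div b < a" "i mod b < b" "j div b < a" "j mod b < b" by auto
  moreover have "(i div b = j div b \<and> i mod b = j mod b) \<longleftrightarrow> i = j"
    by (metis div_mult_mod_eq)
  ultimately show "kron (1\<^sub>m a) (1\<^sub>m b) $$ (i,j) = 1\<^sub>m (a*b) $$ (i,j)"
    using i j by (auto simp: kron_index)
qed auto

lemma kron_smult_left: "kron (c \<cdot>\<^sub>m A) B = c \<cdot>\<^sub>m kron A B"
  by (rule eq_matI) (auto simp: kron_index div_mod_lt)

lemma kron_smult_right: "kron A (c \<cdot>\<^sub>m B) = c \<cdot>\<^sub>m kron A B"
  by (rule eq_matI) (auto simp: kron_index div_mod_lt)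

lemma mat_trace_kron:
  assumes A: "A \<in> carrier_mat a a" and B: "B \<in> carrier_mat b b"
  shows "mat_trace (kron A B) = mat_trace A * mat_trace B"
proof -
  have "mat_trace (kron A B) = (\<Sum>k<a*b. kron A B $$ (k,k))" using A B by (simp add: mat_trace_def)
  also have "\<dots> = (\<Sum>x<a. \<Sum>y<b. kron A B $$ (x*b+y,x*b+y))" by (rule sum_div_mod_split)
  also have "\<dots> = (\<Sum>x<a. \<Sum>y<b. A $$ (x,x) * B $$ (y,y))"
  proof (intro sum.cong refl)
    fix x y assume x: "x \<in> {..<a}" and y: "y \<in> {..<b}"
    have lt: "x*b+y < a*b" using x y idx_lt by blast
    show "kron A B $$ (x*b+y,x*b+y) = A $$ (x,x) * B $$ (y,y)"
      using A B lt y by (simp add: kron_index)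
  qed
  also have "\<dots> = mat_trace A * mat_trace B" using A B by (simp add: mat_trace_def sum_product)
  finally show ?thesis .
qed

lemma invertible_matD:
  assumes "invertible_mat T" "T \<in> carrier_mat n n"
  obtains Ti where "Ti \<in> carrier_mat n n" "T * Ti = 1\<^sub>m n" "Ti * T = 1\<^sub>m n"
proof -
  from assms obtain B where B: "T * B = 1\<^sub>m (dim_row T)" "B * T = 1\<^sub>m (dim_row B)"
    unfolding invertible_mat_def inverts_mat_def by blast
  have "dim_col B = n" using B(1) assms(2) by (metis index_mult_mat(3) index_one_mat(3) carrier_matD(1))
  moreover have "dim_row B = n" using B(2) assms(2) by (metis index_mult_mat(3) index_one_mat(3) carrier_matD(2))
  ultimately have "B \<in> carrier_mat n n" by auto
  with B assms(2) show ?thesis using that by auto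
qed

lemma invertible_matI:
  assumes "T \<in> carrier_mat n n" "Ti \<in> carrier_mat n n" "T * Ti = 1\<^sub>m n" "Ti * T = 1\<^sub>m n"
  shows "invertible_mat T"
  using assms unfolding invertible_mat_def inverts_mat_def square_mat.simps by auto

lemma det_nonzero_invertible:
  assumes T: "(T :: complex mat) \<in> carrier_mat n n" and d: "det T \<noteq> 0"
  shows "invertible_mat T"
proof -
  have "T \<in> Units (ring_mat TYPE(complex) n undefined)" by (rule det_non_zero_imp_unit[OF T d])
  then obtain B where "B \<in> carrier_mat n n" "B * T = 1\<^sub>m n" "T * B = 1\<^sub>m n"
    unfolding Units_def ring_mat_def by auto
  thus ?thesis using T invertible_matI by blast
qed

lemma kron_invertible:
  assumes A: "A \<in> carrier_mat a a" and B: "B \<in> carrier_mat b b"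
    and iA: "invertible_mat A" and iB: "invertible_mat B"
  shows "invertible_mat (kron A B)"
proof -
  obtain Ai where Ai: "Ai \<in> carrier_mat a a" "A * Ai = 1\<^sub>m a" "Ai * A = 1\<^sub>m a" using invertible_matD[OF iA A] by blast
  obtain Bi where Bi: "Bi \<in> carrier_mat b b" "B * Bi = 1\<^sub>m b" "Bi * B = 1\<^sub>m b" using invertible_matD[OF iB B] by blast
  have 1: "kron A B * kron Ai Bi = 1\<^sub>m (a*b)"
    unfolding kron_mult[OF A B Ai(1) Bi(1)] Ai(2) Bi(2) kron_one ..
  have 2: "kron Ai Bi * kron A B = 1\<^sub>m (a*b)"
    unfolding kron_mult[OF Ai(1) Bi(1) A B] Ai(3) Bi(3) kron_one ..
  show ?thesis
    by (rule invertible_matI[OF kron_carrier[OF A B] kron_carrier[OF Ai(1) Bi(1)] 1 2])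
qed

lemma mat_trace_comm:
  assumes A: "(A::complex mat) \<in> carrier_mat n m" and B: "B \<in> carrier_mat m n"
  shows "mat_trace (A * B) = mat_trace (B * A)"
proof -
  have "mat_trace (A * B) = (\<Sum>i<n. \<Sum>j<m. A $$ (i,j) * B $$ (j,i))"
    using A B by (simp add: mat_trace_def scalar_prod_def atLeast0LessThan)
  also have "\<dots> = (\<Sum>j<m. \<Sum>i<n. B $$ (j,i) * A $$ (i,j))"
    by (subst sum.swap) (simp add: mult.commute)
  also have "\<dots> = mat_trace (B * A)"
    using A B by (simp add: mat_trace_def scalar_prod_def atLeast0LessThan)
  finally show ?thesis .
qed

lemma mat_trace_one[simp]: "mat_trace (1\<^sub>m n) = of_nat n"
  by (simp add: mat_trace_def)

lemma mat_trace_smult: "A \<in> carrier_mat n n \<Longrightarrow> mat_trace (c \<cdot>\<^sub>m A) = c * mat_trace A"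
  by (simp add: mat_trace_def sum_distrib_left)



lemma is_repD:
  assumes "is_rep A K n \<rho>"
  shows "\<And>g. g \<in> K \<Longrightarrow> \<rho> g \<in> carrier_mat n n" "\<rho> \<one>\<^bsub>A\<^esub> = 1\<^sub>m n"
    "\<And>g h. g \<in> K \<Longrightarrow> h \<in> K \<Longrightarrow> \<rho> (g \<otimes>\<^bsub>A\<^esub> h) = \<rho> g * \<rho> h"
  using assms unfolding is_rep_def by auto

lemma rep_inv:
  assumes A: "group A" and K: "subgroup K A" and r: "is_rep A K n \<rho>" and k: "k \<in> K"
  shows "\<rho> (inv\<^bsub>A\<^esub> k) * \<rho> k = 1\<^sub>m n" "\<rho> k * \<rho> (inv\<^bsub>A\<^esub> k) = 1\<^sub>m n"
proof -
  have ik: "inv\<^bsub>A\<^esub> k \<in> K" using K k by (rule subgroup.m_inv_closed)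
  have kA: "k \<in> carrier A" by (rule subgroup.mem_carrier[OF K k])
  have e1: "inv\<^bsub>A\<^esub> k \<otimes>\<^bsub>A\<^esub> k = \<one>\<^bsub>A\<^esub>" using group.l_inv[OF A kA] .
  have e2: "k \<otimes>\<^bsub>A\<^esub> inv\<^bsub>A\<^esub> k = \<one>\<^bsub>A\<^esub>" using group.r_inv[OF A kA] .
  show "\<rho> (inv\<^bsub>A\<^esub> k) * \<rho> k = 1\<^sub>m n"
    using is_repD(3)[OF r ik k] is_repD(2)[OF r] unfolding e1 by simp
  show "\<rho> k * \<rho> (inv\<^bsub>A\<^esub> k) = 1\<^sub>m n"
    using is_repD(3)[OF r k ik] is_repD(2)[OF r] unfolding e2 by simp
qed

lemma irreducible_repD:
  assumes "irreducible_rep A K n \<rho>"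
  shows "is_rep A K n \<rho>" "n > 0"
    "\<And>W. invariant_subspace K n \<rho> W \<Longrightarrow> W = {0\<^sub>v n} \<or> W = carrier_vec n"
  using assms unfolding irreducible_rep_def by blast+

lemma mat_eq_from_unit_vecs:
  assumes X: "(X::complex mat) \<in> carrier_mat n n" and Y: "Y \<in> carrier_mat n n"
    and h: "\<And>j. j < n \<Longrightarrow> X *\<^sub>v unit_vec n j = Y *\<^sub>v unit_vec n j"
  shows "X = Y"
proof (rule eq_matI)
  fix i j assume i: "i < dim_row Y" and j: "j < dim_col Y"
  have "X $$ (i,j) = (X *\<^sub>v unit_vec n j) $ i" using X Y i j
    apply (simp add: row_def del: scalar_prod_right_unit)
    apply (subst scalar_prod_right_unit)
    apply auto
    done
  also have "\<dots> = (Y *\<^sub>v unit_vec n j) $ i" using h j Y by auto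
  also have "\<dots> = Y $$ (i,j)" using Y i j
    apply (simp add: row_def del: scalar_prod_right_unit)
    apply (subst scalar_prod_right_unit)
    apply auto
    done
  finally show "X $$ (i,j) = Y $$ (i,j)" .
qed (insert X Y, auto)

lemma mat_eq_unit_aux: "j < n \<Longrightarrow> ((c::complex) \<cdot>\<^sub>m 1\<^sub>m n) *\<^sub>v unit_vec n j = c \<cdot>\<^sub>v unit_vec n (j::nat)"
  apply (rule eq_vecI)
   apply (simp add: row_def del: scalar_prod_right_unit)
   apply (subst scalar_prod_right_unit)
    apply auto
  done

lemma schur:
  assumes irr: "irreducible_rep A K n \<rho>" and X: "X \<in> carrier_mat n n"
    and comm: "\<forall>k\<in>K. X * \<rho> k = \<rho> k * X"
  shows "\<exists>c. X = c \<cdot>\<^sub>m 1\<^sub>m n"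
proof -
  note r = irreducible_repD(1)[OF irr]
  have n: "n > 0" using irreducible_repD(2)[OF irr] .
  obtain c where "c \<in> spectrum X" using spectrum_non_empty[OF X n] by blast
  then obtain v where v: "v \<in> carrier_vec n" "v \<noteq> 0\<^sub>v n" "X *\<^sub>v v = c \<cdot>\<^sub>v v"
    unfolding spectrum_def eigenvalue_def eigenvector_def using X by auto
  define W where "W = {w \<in> carrier_vec n. X *\<^sub>v w = c \<cdot>\<^sub>v w}"
  have inv: "invariant_subspace K n \<rho> W"
    unfolding invariant_subspace_def
  proof (intro conjI ballI allI)
    show "W \<subseteq> carrier_vec n" unfolding W_def by auto
    show "0\<^sub>v n \<in> W" unfolding W_def using X by (auto intro!: eq_vecI)
    fix w1 w2 assume "w1 \<in> W" "w2 \<in> W"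
    thus "w1 + w2 \<in> W" unfolding W_def using X
      by (auto simp: mult_add_distrib_mat_vec smult_add_distrib_vec)
  next
    fix a w assume "w \<in> W"
    thus "a \<cdot>\<^sub>v w \<in> W" unfolding W_def using X
      by (auto simp: mult_mat_vec smult_smult_assoc mult.commute)
  next
    fix g w assume g: "g \<in> K" and w: "w \<in> W"
    have wc: "w \<in> carrier_vec n" using w unfolding W_def by auto
    have rg: "\<rho> g \<in> carrier_mat n n" using is_repD(1)[OF r g] .
    have "X *\<^sub>v (\<rho> g *\<^sub>v w) = (X * \<rho> g) *\<^sub>v w" using X rg w unfolding W_def
      by (simp add: assoc_mult_mat_vec)
    also have "\<dots> = (\<rho> g * X) *\<^sub>v w" using comm g by simp
    also have "\<dots> = \<rho> g *\<^sub>v (c \<cdot>\<^sub>v w)" using X rg w unfolding W_def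
      by (simp add: assoc_mult_mat_vec)
    also have "\<dots> = c \<cdot>\<^sub>v (\<rho> g *\<^sub>v w)" using rg w unfolding W_def by (simp add: mult_mat_vec)
    finally show "\<rho> g *\<^sub>v w \<in> W" unfolding W_def using rg wc by auto
  qed
  have "v \<in> W" unfolding W_def using v by auto
  hence "W \<noteq> {0\<^sub>v n}" using v by auto
  hence W: "W = carrier_vec n" using irreducible_repD(3)[OF irr inv] by auto
  have "X = c \<cdot>\<^sub>m 1\<^sub>m n"
  proof (rule mat_eq_from_unit_vecs[OF X])
    fix j assume j: "j < n"
    have "unit_vec n j \<in> W" using W by auto
    hence "X *\<^sub>v unit_vec n j = c \<cdot>\<^sub>v unit_vec n j" unfolding W_def by auto
    also have "\<dots> = (c \<cdot>\<^sub>m 1\<^sub>m n) *\<^sub>v unit_vec n j"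
      using mat_eq_unit_aux[of j n c] j by simp
    finally show "X *\<^sub>v unit_vec n j = (c \<cdot>\<^sub>m 1\<^sub>m n) *\<^sub>v unit_vec n j" .
  qed auto
  thus ?thesis by blast
qed

lemma mult_entry:
  assumes "(X::complex mat) \<in> carrier_mat n m" "Y \<in> carrier_mat m p" "i < n" "j < p"
  shows "(X * Y) $$ (i,j) = (\<Sum>c<m. X $$ (i,c) * Y $$ (c,j))"
  using assms by (simp add: scalar_prod_def atLeast0LessThan)

lemma bij_left_mult:
  assumes A: "group A" and K: "subgroup K A" and h: "h \<in> K"
  shows "bij_betw (\<lambda>k. h \<otimes>\<^bsub>A\<^esub> k) K K"
proof -
  have hA: "h \<in> carrier A" by (rule subgroup.mem_carrier[OF K h])
  show ?thesis unfolding bij_betw_def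
  proof
    show "inj_on (\<lambda>k. h \<otimes>\<^bsub>A\<^esub> k) K"
    proof (rule inj_onI)
      fix x y assume x: "x \<in> K" and y: "y \<in> K" and e: "h \<otimes>\<^bsub>A\<^esub> x = h \<otimes>\<^bsub>A\<^esub> y"
      have xA: "x \<in> carrier A" by (rule subgroup.mem_carrier[OF K x])
      have yA: "y \<in> carrier A" by (rule subgroup.mem_carrier[OF K y])
      have hy: "h \<otimes>\<^bsub>A\<^esub> y \<in> carrier A" using A hA yA by (simp add: group.is_monoid monoid.m_closed)
      have "x = inv\<^bsub>A\<^esub> h \<otimes>\<^bsub>A\<^esub> (h \<otimes>\<^bsub>A\<^esub> y)"
        using group.inv_solve_left[OF A xA hA hy] e by simp
      moreover have "y = inv\<^bsub>A\<^esub> h \<otimes>\<^bsub>A\<^esub> (h \<otimes>\<^bsub>A\<^esub> y)"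
        using group.inv_solve_left[OF A yA hA hy] by simp
      ultimately show "x = y" by simp
    qed
    show "(\<lambda>k. h \<otimes>\<^bsub>A\<^esub> k) ` K = K"
    proof
      show "(\<lambda>k. h \<otimes>\<^bsub>A\<^esub> k) ` K \<subseteq> K" using subgroup.m_closed[OF K h] by blast
      show "K \<subseteq> (\<lambda>k. h \<otimes>\<^bsub>A\<^esub> k) ` K"
      proof
        fix y assume y: "y \<in> K"
        have yA: "y \<in> carrier A" by (rule subgroup.mem_carrier[OF K y])
        interpret G: group A by fact
        have "inv\<^bsub>A\<^esub> h \<otimes>\<^bsub>A\<^esub> y \<in> K"
          by (rule subgroup.m_closed[OF K subgroup.m_inv_closed[OF K h] y])
        moreover have "h \<otimes>\<^bsub>A\<^esub> (inv\<^bsub>A\<^esub> h \<otimes>\<^bsub>A\<^esub> y) = y"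
        proof -
          have "h \<otimes>\<^bsub>A\<^esub> (inv\<^bsub>A\<^esub> h \<otimes>\<^bsub>A\<^esub> y) = (h \<otimes>\<^bsub>A\<^esub> inv\<^bsub>A\<^esub> h) \<otimes>\<^bsub>A\<^esub> y"
            using G.m_assoc[OF hA G.inv_closed[OF hA] yA] by simp
          also have "\<dots> = y" using G.r_inv[OF hA] G.l_one[OF yA] by simp
          finally show ?thesis .
        qed
        ultimately show "y \<in> (\<lambda>k. h \<otimes>\<^bsub>A\<^esub> k) ` K" by (metis image_eqI)
      qed
    qed
  qed
qed

definition avg :: "('a,'b) monoid_scheme \<Rightarrow> 'a set \<Rightarrow> nat \<Rightarrow> nat \<Rightarrow> ('a \<Rightarrow> complex mat) \<Rightarrow> ('a \<Rightarrow> complex mat) \<Rightarrow> nat \<Rightarrow> nat \<Rightarrow> complex mat" where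
  "avg A K m n \<rho>2 \<rho>1 j l = mat m n (\<lambda>(i,i'). \<Sum>k\<in>K. \<rho>2 k $$ (i,j) * \<rho>1 (inv\<^bsub>A\<^esub> k) $$ (l,i'))"

lemma avg_carrier: "avg A K m n \<rho>2 \<rho>1 j l \<in> carrier_mat m n"
  unfolding avg_def by auto

lemma avg_index: "i < m \<Longrightarrow> i' < n \<Longrightarrow> avg A K m n \<rho>2 \<rho>1 j l $$ (i,i') = (\<Sum>k\<in>K. \<rho>2 k $$ (i,j) * \<rho>1 (inv\<^bsub>A\<^esub> k) $$ (l,i'))"
  unfolding avg_def by auto

lemma avg_intertwine:
  assumes A: "group A" and K: "subgroup K A" and fin: "finite K"
    and r2: "is_rep A K m \<rho>2" and r1: "is_rep A K n \<rho>1" and j: "j < m" and l: "l < n" and h: "h \<in> K"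
  shows "\<rho>2 h * avg A K m n \<rho>2 \<rho>1 j l = avg A K m n \<rho>2 \<rho>1 j l * \<rho>1 h"
proof (rule eq_matI)
  let ?T = "avg A K m n \<rho>2 \<rho>1 j l"
  have hA: "h \<in> carrier A" by (rule subgroup.mem_carrier[OF K h])
  have r2h: "\<rho>2 h \<in> carrier_mat m m" using is_repD(1)[OF r2 h] .
  have r1h: "\<rho>1 h \<in> carrier_mat n n" using is_repD(1)[OF r1 h] .
  fix a i' assume a: "a < dim_row (?T * \<rho>1 h)" and i': "i' < dim_col (?T * \<rho>1 h)"
  hence a: "a < m" and i': "i' < n" using r1h avg_carrier[of A K m n \<rho>2 \<rho>1 j l] by auto
  have ik: "\<And>k. k \<in> K \<Longrightarrow> inv\<^bsub>A\<^esub> k \<in> K" using K by (rule subgroup.m_inv_closed)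
  have "(\<rho>2 h * ?T) $$ (a,i') = (\<Sum>b<m. \<rho>2 h $$ (a,b) * (\<Sum>k\<in>K. \<rho>2 k $$ (b,j) * \<rho>1 (inv\<^bsub>A\<^esub> k) $$ (l,i')))"
    using mult_entry[OF r2h avg_carrier a i'] by (simp add: avg_index i')
  also have "\<dots> = (\<Sum>k\<in>K. (\<Sum>b<m. \<rho>2 h $$ (a,b) * \<rho>2 k $$ (b,j)) * \<rho>1 (inv\<^bsub>A\<^esub> k) $$ (l,i'))"
    by (simp add: sum_distrib_left sum_distrib_right mult.assoc) (rule sum.swap)
  also have "\<dots> = (\<Sum>k\<in>K. \<rho>2 (h \<otimes>\<^bsub>A\<^esub> k) $$ (a,j) * \<rho>1 (inv\<^bsub>A\<^esub> k) $$ (l,i'))"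
  proof (rule sum.cong[OF refl])
    fix k assume k: "k \<in> K"
    show "(\<Sum>b<m. \<rho>2 h $$ (a,b) * \<rho>2 k $$ (b,j)) * \<rho>1 (inv\<^bsub>A\<^esub> k) $$ (l,i') = \<rho>2 (h \<otimes>\<^bsub>A\<^esub> k) $$ (a,j) * \<rho>1 (inv\<^bsub>A\<^esub> k) $$ (l,i')"
      using is_repD(3)[OF r2 h k] mult_entry[OF r2h is_repD(1)[OF r2 k] a j] by simp
  qed
  also have "\<dots> = (\<Sum>k\<in>K. \<rho>2 (h \<otimes>\<^bsub>A\<^esub> k) $$ (a,j) * \<rho>1 (inv\<^bsub>A\<^esub> (h \<otimes>\<^bsub>A\<^esub> k) \<otimes>\<^bsub>A\<^esub> h) $$ (l,i'))"
  proof (rule sum.cong[OF refl])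
    fix k assume k: "k \<in> K"
    have kA: "k \<in> carrier A" by (rule subgroup.mem_carrier[OF K k])
    have "inv\<^bsub>A\<^esub> (h \<otimes>\<^bsub>A\<^esub> k) \<otimes>\<^bsub>A\<^esub> h = inv\<^bsub>A\<^esub> k"
    proof -
      interpret G: group A by fact
      have "inv\<^bsub>A\<^esub> (h \<otimes>\<^bsub>A\<^esub> k) \<otimes>\<^bsub>A\<^esub> h = (inv\<^bsub>A\<^esub> k \<otimes>\<^bsub>A\<^esub> inv\<^bsub>A\<^esub> h) \<otimes>\<^bsub>A\<^esub> h"
        using G.inv_mult_group[OF hA kA] by simp
      also have "\<dots> = inv\<^bsub>A\<^esub> k \<otimes>\<^bsub>A\<^esub> (inv\<^bsub>A\<^esub> h \<otimes>\<^bsub>A\<^esub> h)"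
        using G.m_assoc[OF G.inv_closed[OF kA] G.inv_closed[OF hA] hA] by simp
      also have "\<dots> = inv\<^bsub>A\<^esub> k" using G.l_inv[OF hA] G.r_one[OF G.inv_closed[OF kA]] by simp
      finally show ?thesis .
    qed
    thus "\<rho>2 (h \<otimes>\<^bsub>A\<^esub> k) $$ (a,j) * \<rho>1 (inv\<^bsub>A\<^esub> k) $$ (l,i') = \<rho>2 (h \<otimes>\<^bsub>A\<^esub> k) $$ (a,j) * \<rho>1 (inv\<^bsub>A\<^esub> (h \<otimes>\<^bsub>A\<^esub> k) \<otimes>\<^bsub>A\<^esub> h) $$ (l,i')"
      by simp
  qed
  also have "\<dots> = (\<Sum>k\<in>K. \<rho>2 k $$ (a,j) * \<rho>1 (inv\<^bsub>A\<^esub> k \<otimes>\<^bsub>A\<^esub> h) $$ (l,i'))"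
    using sum.reindex_bij_betw[OF bij_left_mult[OF A K h], of "\<lambda>k. \<rho>2 k $$ (a,j) * \<rho>1 (inv\<^bsub>A\<^esub> k \<otimes>\<^bsub>A\<^esub> h) $$ (l,i')"]
    by simp
  also have "\<dots> = (\<Sum>k\<in>K. \<rho>2 k $$ (a,j) * (\<Sum>b<n. \<rho>1 (inv\<^bsub>A\<^esub> k) $$ (l,b) * \<rho>1 h $$ (b,i')))"
  proof (rule sum.cong[OF refl])
    fix k assume k: "k \<in> K"
    show "\<rho>2 k $$ (a,j) * \<rho>1 (inv\<^bsub>A\<^esub> k \<otimes>\<^bsub>A\<^esub> h) $$ (l,i') = \<rho>2 k $$ (a,j) * (\<Sum>b<n. \<rho>1 (inv\<^bsub>A\<^esub> k) $$ (l,b) * \<rho>1 h $$ (b,i'))"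
      using is_repD(3)[OF r1 ik[OF k] h] mult_entry[OF is_repD(1)[OF r1 ik[OF k]] r1h l i'] by simp
  qed
  also have "\<dots> = (\<Sum>b<n. (\<Sum>k\<in>K. \<rho>2 k $$ (a,j) * \<rho>1 (inv\<^bsub>A\<^esub> k) $$ (l,b)) * \<rho>1 h $$ (b,i'))"
    by (simp add: sum_distrib_left sum_distrib_right mult.assoc) (rule sum.swap)
  also have "\<dots> = (?T * \<rho>1 h) $$ (a,i')"
    using mult_entry[OF avg_carrier[of A K m n \<rho>2 \<rho>1 j l] r1h a i'] by (simp add: avg_index a)
  finally show "(\<rho>2 h * ?T) $$ (a,i') = (?T * \<rho>1 h) $$ (a,i')" .
qed (insert is_repD(1)[OF r1 h] is_repD(1)[OF r2 h], auto simp: avg_def)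

lemma mat_vec_zero: "(X::complex mat) \<in> carrier_mat n m \<Longrightarrow> X *\<^sub>v 0\<^sub>v m = 0\<^sub>v n"
  by (rule eq_vecI) (auto simp: row_def)

lemma orth:
  assumes A: "group A" and K: "subgroup K A" and fin: "finite K"
    and irr: "irreducible_rep A K n \<rho>" and i: "i < n" and i': "i' < n" and j: "j < n" and l: "l < n"
  shows "(\<Sum>k\<in>K. \<rho> k $$ (i,j) * \<rho> (inv\<^bsub>A\<^esub> k) $$ (l,i')) = (if i = i' \<and> j = l then of_nat (card K) / of_nat n else 0)"
proof -
  note r = irreducible_repD(1)[OF irr]
  have n: "n > 0" using irreducible_repD(2)[OF irr] .
  let ?T = "avg A K n n \<rho> \<rho> j l"
  have ik: "\<And>k. k \<in> K \<Longrightarrow> inv\<^bsub>A\<^esub> k \<in> K" using K by (rule subgroup.m_inv_closed)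
  have "\<forall>k\<in>K. ?T * \<rho> k = \<rho> k * ?T" using avg_intertwine[OF A K fin r r j l] by simp
  then obtain c where c: "?T = c \<cdot>\<^sub>m 1\<^sub>m n" using schur[OF irr avg_carrier] by blast
  have "mat_trace ?T = (\<Sum>i<n. \<Sum>k\<in>K. \<rho> k $$ (i,j) * \<rho> (inv\<^bsub>A\<^esub> k) $$ (l,i))"
    by (simp add: mat_trace_def avg_def)
  also have "\<dots> = (\<Sum>k\<in>K. \<Sum>i<n. \<rho> (inv\<^bsub>A\<^esub> k) $$ (l,i) * \<rho> k $$ (i,j))"
    by (subst sum.swap) (simp add: mult.commute)
  also have "\<dots> = (\<Sum>k\<in>K. (\<rho> (inv\<^bsub>A\<^esub> k) * \<rho> k) $$ (l,j))"
    by (rule sum.cong[OF refl], subst mult_entry[OF is_repD(1)[OF r ik] is_repD(1)[OF r] l j]) auto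
  also have "\<dots> = (\<Sum>k\<in>K. (if l = j then 1 else 0))"
    by (rule sum.cong[OF refl]) (simp add: rep_inv[OF A K r] l j)
  also have "\<dots> = of_nat (card K) * (if l = j then 1 else 0)" by simp
  finally have tr: "mat_trace ?T = of_nat (card K) * (if l = j then 1 else 0)" .
  have "mat_trace ?T = c * of_nat n" using c mat_trace_smult[of "1\<^sub>m n" n c] by simp
  hence cval: "c = of_nat (card K) * (if l = j then 1 else 0) / of_nat n" using tr n by (simp add: field_simps)
  have "(\<Sum>k\<in>K. \<rho> k $$ (i,j) * \<rho> (inv\<^bsub>A\<^esub> k) $$ (l,i')) = ?T $$ (i,i')"
    by (simp add: avg_index i i')
  also have "\<dots> = c * (if i = i' then 1 else 0)" using c i i' by simp
  finally show ?thesis using cval by auto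
qed

lemma char_orth:
  assumes A: "group A" and K: "subgroup K A" and fin: "finite K" and irr: "irreducible_rep A K n \<rho>"
  shows "(\<Sum>k\<in>K. mat_trace (\<rho> k) * mat_trace (\<rho> (inv\<^bsub>A\<^esub> k))) = of_nat (card K)"
proof -
  note r = irreducible_repD(1)[OF irr]
  have n: "n > 0" using irreducible_repD(2)[OF irr] .
  have ik: "\<And>k. k \<in> K \<Longrightarrow> inv\<^bsub>A\<^esub> k \<in> K" using K by (rule subgroup.m_inv_closed)
  have "(\<Sum>k\<in>K. mat_trace (\<rho> k) * mat_trace (\<rho> (inv\<^bsub>A\<^esub> k)))
      = (\<Sum>k\<in>K. (\<Sum>i<n. \<rho> k $$ (i,i)) * (\<Sum>l<n. \<rho> (inv\<^bsub>A\<^esub> k) $$ (l,l)))"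
  proof (rule sum.cong[OF refl])
    fix k assume k: "k \<in> K"
    have "dim_row (\<rho> k) = n" "dim_row (\<rho> (inv\<^bsub>A\<^esub> k)) = n"
      using is_repD(1)[OF r k] is_repD(1)[OF r ik[OF k]] by auto
    thus "mat_trace (\<rho> k) * mat_trace (\<rho> (inv\<^bsub>A\<^esub> k)) = (\<Sum>i<n. \<rho> k $$ (i,i)) * (\<Sum>l<n. \<rho> (inv\<^bsub>A\<^esub> k) $$ (l,l))"
      by (simp add: mat_trace_def)
  qed
  also have "\<dots> = (\<Sum>k\<in>K. \<Sum>i<n. \<Sum>l<n. \<rho> k $$ (i,i) * \<rho> (inv\<^bsub>A\<^esub> k) $$ (l,l))"
    by (simp only: sum_product)
  also have "\<dots> = (\<Sum>i<n. \<Sum>k\<in>K. \<Sum>l<n. \<rho> k $$ (i,i) * \<rho> (inv\<^bsub>A\<^esub> k) $$ (l,l))"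
    by (rule sum.swap)
  also have "\<dots> = (\<Sum>i<n. \<Sum>l<n. \<Sum>k\<in>K. \<rho> k $$ (i,i) * \<rho> (inv\<^bsub>A\<^esub> k) $$ (l,l))"
    by (rule sum.cong[OF refl], rule sum.swap)
  also have "\<dots> = (\<Sum>i<n. \<Sum>l<n. (if i = l then of_nat (card K) / of_nat n else 0))"
    by (intro sum.cong refl) (simp add: orth[OF A K fin irr])
  also have "\<dots> = (\<Sum>i<n. of_nat (card K) / of_nat n)" by simp
  also have "\<dots> = of_nat (card K)" using n by simp
  finally show ?thesis .
qed

lemma injective_invertible:
  assumes T: "(T::complex mat) \<in> carrier_mat n n"
    and inj: "\<And>v. v \<in> carrier_vec n \<Longrightarrow> T *\<^sub>v v = 0\<^sub>v n \<Longrightarrow> v = 0\<^sub>v n"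
  shows "invertible_mat T"
proof -
  have "det T \<noteq> 0" using det_0_iff_vec_prod_zero[OF T] inj by blast
  thus ?thesis by (rule det_nonzero_invertible[OF T])
qed

lemma equiv_rep:
  assumes A: "group A" and K: "subgroup K A" and fin: "finite K"
    and irr: "irreducible_rep A K n \<rho>1" and r2: "is_rep A K m \<rho>2"
    and tr: "\<forall>k\<in>K. mat_trace (\<rho>2 k) = mat_trace (\<rho>1 k)"
  shows "m = n \<and> (\<exists>T\<in>carrier_mat n n. invertible_mat T \<and> (\<forall>k\<in>K. \<rho>2 k * T = T * \<rho>1 k))"
proof -
  note r1 = irreducible_repD(1)[OF irr]
  have n: "n > 0" using irreducible_repD(2)[OF irr] .
  have one: "\<one>\<^bsub>A\<^esub> \<in> K" using K by (rule subgroup.one_closed)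
  have "mat_trace (\<rho>2 \<one>\<^bsub>A\<^esub>) = of_nat m" using is_repD(2)[OF r2] by simp
  moreover have "mat_trace (\<rho>1 \<one>\<^bsub>A\<^esub>) = of_nat n" using is_repD(2)[OF r1] by simp
  ultimately have mn: "m = n" using tr one by simp
  note r2' = r2[unfolded mn]
  have ik: "\<And>k. k \<in> K \<Longrightarrow> inv\<^bsub>A\<^esub> k \<in> K" using K by (rule subgroup.m_inv_closed)
  have ex: "\<exists>j<n. \<exists>l<n. avg A K n n \<rho>2 \<rho>1 j l \<noteq> 0\<^sub>m n n"
  proof (rule ccontr)
    assume "\<not> ?thesis"
    hence z: "\<And>j l. j < n \<Longrightarrow> l < n \<Longrightarrow> avg A K n n \<rho>2 \<rho>1 j l = 0\<^sub>m n n" by blast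
    have "(\<Sum>j<n. \<Sum>l<n. avg A K n n \<rho>2 \<rho>1 j l $$ (j,l)) = 0"
      by (intro sum.neutral ballI) (simp add: z)
    moreover have "(\<Sum>j<n. \<Sum>l<n. avg A K n n \<rho>2 \<rho>1 j l $$ (j,l)) = of_nat (card K)"
    proof -
      have "(\<Sum>j<n. \<Sum>l<n. avg A K n n \<rho>2 \<rho>1 j l $$ (j,l)) = (\<Sum>j<n. \<Sum>l<n. \<Sum>k\<in>K. \<rho>2 k $$ (j,j) * \<rho>1 (inv\<^bsub>A\<^esub> k) $$ (l,l))"
        by (intro sum.cong refl) (simp add: avg_index)
      also have "\<dots> = (\<Sum>j<n. \<Sum>k\<in>K. \<Sum>l<n. \<rho>2 k $$ (j,j) * \<rho>1 (inv\<^bsub>A\<^esub> k) $$ (l,l))"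
        by (rule sum.cong[OF refl], rule sum.swap)
      also have "\<dots> = (\<Sum>k\<in>K. \<Sum>j<n. \<Sum>l<n. \<rho>2 k $$ (j,j) * \<rho>1 (inv\<^bsub>A\<^esub> k) $$ (l,l))"
        by (rule sum.swap)
      also have "\<dots> = (\<Sum>k\<in>K. mat_trace (\<rho>2 k) * mat_trace (\<rho>1 (inv\<^bsub>A\<^esub> k)))"
      proof (rule sum.cong[OF refl])
        fix k assume k: "k \<in> K"
        have "dim_row (\<rho>2 k) = n" "dim_row (\<rho>1 (inv\<^bsub>A\<^esub> k)) = n"
          using is_repD(1)[OF r2' k] is_repD(1)[OF r1 ik[OF k]] by auto
        thus "(\<Sum>j<n. \<Sum>l<n. \<rho>2 k $$ (j,j) * \<rho>1 (inv\<^bsub>A\<^esub> k) $$ (l,l)) = mat_trace (\<rho>2 k) * mat_trace (\<rho>1 (inv\<^bsub>A\<^esub> k))"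
          by (simp add: mat_trace_def sum_product)
      qed
      also have "\<dots> = (\<Sum>k\<in>K. mat_trace (\<rho>1 k) * mat_trace (\<rho>1 (inv\<^bsub>A\<^esub> k)))"
        using tr by simp
      also have "\<dots> = of_nat (card K)" by (rule char_orth[OF A K fin irr])
      finally show ?thesis .
    qed
    moreover have "card K > 0" using fin one card_gt_0_iff by blast
    ultimately show False by simp
  qed
  then obtain j l where j: "j < n" and l: "l < n" and nz: "avg A K n n \<rho>2 \<rho>1 j l \<noteq> 0\<^sub>m n n" by blast
  define T where "T = avg A K n n \<rho>2 \<rho>1 j l"
  have T: "T \<in> carrier_mat n n" unfolding T_def by (rule avg_carrier)
  have intw: "\<forall>k\<in>K. \<rho>2 k * T = T * \<rho>1 k"
    unfolding T_def using avg_intertwine[OF A K fin r2' r1 j l] by simp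
  define W where "W = {v \<in> carrier_vec n. T *\<^sub>v v = 0\<^sub>v n}"
  have inv: "invariant_subspace K n \<rho>1 W"
    unfolding invariant_subspace_def
  proof (intro conjI ballI allI)
    show "W \<subseteq> carrier_vec n" unfolding W_def by auto
    show "0\<^sub>v n \<in> W" unfolding W_def using mat_vec_zero[OF T] by auto
    fix v w assume "v \<in> W" "w \<in> W"
    thus "v + w \<in> W" unfolding W_def using T
      by (auto simp: mult_add_distrib_mat_vec)
  next
    fix a v assume "v \<in> W"
    thus "a \<cdot>\<^sub>v v \<in> W" unfolding W_def using T
      by (auto simp: mult_mat_vec)
  next
    fix g v assume g: "g \<in> K" and v: "v \<in> W"
    have vc: "v \<in> carrier_vec n" using v unfolding W_def by auto
    have rg: "\<rho>1 g \<in> carrier_mat n n" using is_repD(1)[OF r1 g] .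
    have rg2: "\<rho>2 g \<in> carrier_mat n n" using is_repD(1)[OF r2' g] .
    have "T *\<^sub>v (\<rho>1 g *\<^sub>v v) = (T * \<rho>1 g) *\<^sub>v v" using T rg vc by (simp add: assoc_mult_mat_vec)
    also have "\<dots> = (\<rho>2 g * T) *\<^sub>v v" using intw g by simp
    also have "\<dots> = \<rho>2 g *\<^sub>v (T *\<^sub>v v)" using T rg2 vc by (simp add: assoc_mult_mat_vec)
    also have "\<dots> = 0\<^sub>v n" using v mat_vec_zero[OF rg2] unfolding W_def by simp
    finally show "\<rho>1 g *\<^sub>v v \<in> W" unfolding W_def using rg vc by auto
  qed
  have "W \<noteq> carrier_vec n"
  proof
    assume W: "W = carrier_vec n"
    have "T = 0\<^sub>m n n"
    proof (rule mat_eq_from_unit_vecs[OF T])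
      fix b assume b: "b < n"
      have "unit_vec n b \<in> W" using W by auto
      hence "T *\<^sub>v unit_vec n b = 0\<^sub>v n" unfolding W_def by auto
      moreover have "0\<^sub>m n n *\<^sub>v unit_vec n b = (0\<^sub>v n :: complex vec)"
        using b apply -
        apply (rule eq_vecI)
         apply (simp add: row_def del: scalar_prod_right_unit)
         apply (subst scalar_prod_right_unit)
          apply auto
        done
      ultimately show "T *\<^sub>v unit_vec n b = 0\<^sub>m n n *\<^sub>v unit_vec n b" by simp
    qed auto
    thus False using nz unfolding T_def by simp
  qed
  hence W0: "W = {0\<^sub>v n}" using irreducible_repD(3)[OF irr inv] by auto
  have "invertible_mat T"
    by (rule injective_invertible[OF T]) (use W0 in \<open>auto simp: W_def\<close>)
  thus ?thesis using mn T intw by blast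
qed

lemma irr_transfer:
  assumes irr: "irreducible_rep A K n \<rho>1" and r2: "is_rep A K n \<rho>2"
    and T: "T \<in> carrier_mat n n" and iT: "invertible_mat T"
    and intw: "\<forall>k\<in>K. \<rho>2 k * T = T * \<rho>1 k"
  shows "irreducible_rep A K n \<rho>2"
proof -
  note r1 = irreducible_repD(1)[OF irr]
  obtain Ti where Ti: "Ti \<in> carrier_mat n n" "T * Ti = 1\<^sub>m n" "Ti * T = 1\<^sub>m n"
    using invertible_matD[OF iT T] by blast
  have "W = {0\<^sub>v n} \<or> W = carrier_vec n" if inv: "invariant_subspace K n \<rho>2 W" for W :: "complex vec set"
  proof -
    from inv have Wc: "W \<subseteq> carrier_vec n" and W0: "0\<^sub>v n \<in> W"
      and Wadd: "\<And>v w. v \<in> W \<Longrightarrow> w \<in> W \<Longrightarrow> v + w \<in> W"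
      and Wsm: "\<And>a v. v \<in> W \<Longrightarrow> a \<cdot>\<^sub>v v \<in> W"
      and Wg: "\<And>g v. g \<in> K \<Longrightarrow> v \<in> W \<Longrightarrow> \<rho>2 g *\<^sub>v v \<in> W"
      unfolding invariant_subspace_def by blast+
    define W' where "W' = {v \<in> carrier_vec n. T *\<^sub>v v \<in> W}"
    have inv': "invariant_subspace K n \<rho>1 W'"
      unfolding invariant_subspace_def
    proof (intro conjI ballI allI)
      show "W' \<subseteq> carrier_vec n" unfolding W'_def by auto
      show "0\<^sub>v n \<in> W'" unfolding W'_def using mat_vec_zero[OF T] W0 by auto
      fix v w assume "v \<in> W'" "w \<in> W'"
      thus "v + w \<in> W'" unfolding W'_def using T Wadd
        by (auto simp: mult_add_distrib_mat_vec)
    next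
      fix a v assume "v \<in> W'"
      thus "a \<cdot>\<^sub>v v \<in> W'" unfolding W'_def using T Wsm
        by (auto simp: mult_mat_vec)
    next
      fix g v assume g: "g \<in> K" and v: "v \<in> W'"
      have vc: "v \<in> carrier_vec n" using v unfolding W'_def by auto
      have rg: "\<rho>1 g \<in> carrier_mat n n" using is_repD(1)[OF r1 g] .
      have rg2: "\<rho>2 g \<in> carrier_mat n n" using is_repD(1)[OF r2 g] .
      have "T *\<^sub>v (\<rho>1 g *\<^sub>v v) = (T * \<rho>1 g) *\<^sub>v v" using T rg vc by (simp add: assoc_mult_mat_vec)
      also have "\<dots> = (\<rho>2 g * T) *\<^sub>v v" using intw g by simp
      also have "\<dots> = \<rho>2 g *\<^sub>v (T *\<^sub>v v)" using T rg2 vc by (simp add: assoc_mult_mat_vec)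
      finally have "T *\<^sub>v (\<rho>1 g *\<^sub>v v) \<in> W" using Wg[OF g] v unfolding W'_def by simp
      thus "\<rho>1 g *\<^sub>v v \<in> W'" unfolding W'_def using rg vc by auto
    qed
    have bk: "T *\<^sub>v (Ti *\<^sub>v w) = w" if "w \<in> carrier_vec n" for w :: "complex vec"
      using that T Ti by (simp add: assoc_mult_mat_vec[symmetric])
    from irreducible_repD(3)[OF irr inv'] show ?thesis
    proof
      assume W'0: "W' = {0\<^sub>v n}"
      have "W \<subseteq> {0\<^sub>v n}"
      proof
        fix w assume w: "w \<in> W"
        have wc: "w \<in> carrier_vec n" using w Wc by auto
        have "Ti *\<^sub>v w \<in> W'" unfolding W'_def using bk[OF wc] w Ti wc by auto
        hence "Ti *\<^sub>v w = 0\<^sub>v n" using W'0 by auto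
        hence "w = T *\<^sub>v 0\<^sub>v n" using bk[OF wc] by simp
        thus "w \<in> {0\<^sub>v n}" using mat_vec_zero[OF T] by simp
      qed
      thus ?thesis using W0 by auto
    next
      assume W'c: "W' = carrier_vec n"
      have "carrier_vec n \<subseteq> W"
      proof
        fix w :: "complex vec" assume wc: "w \<in> carrier_vec n"
        have "Ti *\<^sub>v w \<in> W'" using W'c Ti wc by auto
        thus "w \<in> W" unfolding W'_def using bk[OF wc] by auto
      qed
      thus ?thesis using Wc by auto
    qed
  qed
  thus ?thesis unfolding irreducible_rep_def using r2 irreducible_repD(2)[OF irr] by blast
qed

lemma subspace_sum:
  assumes inv: "invariant_subspace K n \<rho> W" and fin: "finite S" and v: "\<forall>x\<in>S. v x \<in> W"
  shows "vec n (\<lambda>i. \<Sum>x\<in>S. f x * v x $ i) \<in> W"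
  using fin v
proof (induction S rule: finite_induct)
  case empty
  have "vec n (\<lambda>i. \<Sum>x\<in>{}. f x * v x $ i) = 0\<^sub>v n" by (rule eq_vecI) auto
  thus ?case using inv unfolding invariant_subspace_def by simp
next
  case (insert a S)
  have Wc: "W \<subseteq> carrier_vec n" and Wadd: "\<And>v w. v \<in> W \<Longrightarrow> w \<in> W \<Longrightarrow> v + w \<in> W"
    and Wsm: "\<And>c v. v \<in> W \<Longrightarrow> c \<cdot>\<^sub>v v \<in> W"
    using inv unfolding invariant_subspace_def by blast+
  have va: "v a \<in> W" using insert by simp
  hence vac: "v a \<in> carrier_vec n" using Wc by auto
  have IH: "vec n (\<lambda>i. \<Sum>x\<in>S. f x * v x $ i) \<in> W" using insert by simp
  have "vec n (\<lambda>i. \<Sum>x\<in>insert a S. f x * v x $ i) = f a \<cdot>\<^sub>v v a + vec n (\<lambda>i. \<Sum>x\<in>S. f x * v x $ i)"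
    by (rule eq_vecI) (use insert vac in auto)
  thus ?case using Wadd[OF Wsm[OF va] IH] by simp
qed

lemma kron_mult_vec_index:
  assumes A: "X \<in> carrier_mat d d" and B: "Y \<in> carrier_mat e e" and w: "w \<in> carrier_vec (d*e)" and i: "i < d*e"
  shows "(kron X Y *\<^sub>v w) $ i = (\<Sum>x<d. \<Sum>y<e. X $$ (i div e, x) * Y $$ (i mod e, y) * w $ (x*e+y))"
proof -
  have "(kron X Y *\<^sub>v w) $ i = (\<Sum>k<d*e. kron X Y $$ (i,k) * w $ k)"
    using A B w i by (simp add: scalar_prod_def atLeast0LessThan)
  also have "\<dots> = (\<Sum>x<d. \<Sum>y<e. kron X Y $$ (i,x*e+y) * w $ (x*e+y))" by (rule sum_div_mod_split)
  also have "\<dots> = (\<Sum>x<d. \<Sum>y<e. X $$ (i div e, x) * Y $$ (i mod e, y) * w $ (x*e+y))"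
  proof (intro sum.cong refl)
    fix x y assume x: "x \<in> {..<d}" and y: "y \<in> {..<e}"
    have lt: "x*e+y < d*e" using x y idx_lt by blast
    show "kron X Y $$ (i,x*e+y) * w $ (x*e+y) = X $$ (i div e, x) * Y $$ (i mod e, y) * w $ (x*e+y)"
      using A B lt i y by (simp add: kron_index)
  qed
  finally show ?thesis .
qed

lemma units_orth:
  assumes A: "group A" and K: "subgroup K A" and fin: "finite K"
    and irr: "irreducible_rep A K d \<rho>" and x: "x < d" and y: "y < d" and a: "a < d" and b: "b < d"
  shows "(\<Sum>n\<in>K. (of_nat d / of_nat (card K) * \<rho> (inv\<^bsub>A\<^esub> n) $$ (b,a)) * \<rho> n $$ (x,y)) = (if x = a \<and> y = b then 1 else 0)"
proof -
  have one: "\<one>\<^bsub>A\<^esub> \<in> K" using K by (rule subgroup.one_closed)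
  have cK: "card K > 0" using fin one card_gt_0_iff by blast
  have d: "d > 0" using irreducible_repD(2)[OF irr] .
  have "(\<Sum>n\<in>K. (of_nat d / of_nat (card K) * \<rho> (inv\<^bsub>A\<^esub> n) $$ (b,a)) * \<rho> n $$ (x,y))
     = of_nat d / of_nat (card K) * (\<Sum>n\<in>K. \<rho> n $$ (x,y) * \<rho> (inv\<^bsub>A\<^esub> n) $$ (b,a))"
    by (simp add: sum_distrib_left mult_ac)
  also have "\<dots> = of_nat d / of_nat (card K) * (if x = a \<and> y = b then of_nat (card K) / of_nat d else 0)"
    by (simp add: orth[OF A K fin irr x a y b])
  also have "\<dots> = (if x = a \<and> y = b then 1 else 0)" using cK d by simp
  finally show ?thesis .
qed

lemma sum_rearr:
  fixes g h :: "'x \<Rightarrow> complex" and F :: "'x \<Rightarrow> nat \<Rightarrow> complex" and G :: "'x \<Rightarrow> nat \<Rightarrow> complex"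
  assumes "finite N" "finite C"
  shows "(\<Sum>p\<in>N\<times>C. g (fst p) * h (snd p) * (\<Sum>x<d. \<Sum>y<e. F (fst p) x * G (snd p) y * w x y))
       = (\<Sum>x<d. \<Sum>y<e. w x y * (\<Sum>n\<in>N. g n * F n x) * (\<Sum>c\<in>C. h c * G c y))"
proof -
  have "(\<Sum>p\<in>N\<times>C. g (fst p) * h (snd p) * (\<Sum>x<d. \<Sum>y<e. F (fst p) x * G (snd p) y * w x y))
      = (\<Sum>n\<in>N. \<Sum>c\<in>C. \<Sum>x<d. \<Sum>y<e. g n * h c * (F n x * G c y * w x y))"
  proof -
    have "(\<Sum>p\<in>N\<times>C. g (fst p) * h (snd p) * (\<Sum>x<d. \<Sum>y<e. F (fst p) x * G (snd p) y * w x y))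
        = (\<Sum>n\<in>N. \<Sum>c\<in>C. g n * h c * (\<Sum>x<d. \<Sum>y<e. F n x * G c y * w x y))"
      using sum.cartesian_product[of "\<lambda>n c. g n * h c * (\<Sum>x<d. \<Sum>y<e. F n x * G c y * w x y)" C N]
      by (simp add: case_prod_beta')
    thus ?thesis by (simp add: sum_distrib_left)
  qed
  also have "\<dots> = (\<Sum>n\<in>N. \<Sum>x<d. \<Sum>c\<in>C. \<Sum>y<e. g n * h c * (F n x * G c y * w x y))"
    by (rule sum.cong[OF refl], rule sum.swap)
  also have "\<dots> = (\<Sum>x<d. \<Sum>n\<in>N. \<Sum>c\<in>C. \<Sum>y<e. g n * h c * (F n x * G c y * w x y))"
    by (rule sum.swap)
  also have "\<dots> = (\<Sum>x<d. \<Sum>n\<in>N. \<Sum>y<e. \<Sum>c\<in>C. g n * h c * (F n x * G c y * w x y))"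
    by (intro sum.cong refl, rule sum.swap)
  also have "\<dots> = (\<Sum>x<d. \<Sum>y<e. \<Sum>n\<in>N. \<Sum>c\<in>C. g n * h c * (F n x * G c y * w x y))"
    by (rule sum.cong[OF refl], rule sum.swap)
  also have "\<dots> = (\<Sum>x<d. \<Sum>y<e. w x y * (\<Sum>n\<in>N. g n * F n x) * (\<Sum>c\<in>C. h c * G c y))"
    by (intro sum.cong refl) (simp add: sum_distrib_left sum_distrib_right sum_product mult_ac)
  finally show ?thesis .
qed

lemma sum_if_one:
  fixes f :: "nat \<Rightarrow> complex"
  assumes "q < e"
  shows "(\<Sum>y<e. f y * (if y = q then 1 else 0)) = f q"
proof -
  have "(\<Sum>y<e. f y * (if y = q then 1 else 0)) = (\<Sum>y<e. if y = q then f y else 0)"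
    by (rule sum.cong) auto
  also have "\<dots> = f q" using assms by simp
  finally show ?thesis .
qed

lemma sum_delta2:
  fixes w :: "nat \<Rightarrow> nat \<Rightarrow> complex"
  assumes b: "b < d" and q: "q < e"
  shows "(\<Sum>x<d. \<Sum>y<e. w x y * (if P \<and> x = b then 1 else 0) * (if Q \<and> y = q then 1 else 0))
       = (if P \<and> Q then w b q else 0)"
proof -
  have "(\<Sum>x<d. \<Sum>y<e. w x y * (if P \<and> x = b then 1 else 0) * (if Q \<and> y = q then 1 else 0))
      = (\<Sum>x<d. \<Sum>y<e. if y = q then (if x = b then (if P \<and> Q then w x y else 0) else 0) else 0)"
    by (intro sum.cong refl) auto
  also have "\<dots> = (\<Sum>x<d. if x = b then (if P \<and> Q then w x q else 0) else 0)"
    using q by (simp only: sum.delta finite_lessThan lessThan_iff if_True)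
  also have "\<dots> = (if P \<and> Q then w b q else 0)"
    using b by (simp only: sum.delta finite_lessThan lessThan_iff if_True)
  finally show ?thesis .
qed

lemma kron_irr:
  assumes A: "group A" and N: "subgroup N A" and finN: "finite N"
    and C: "subgroup C A" and finC: "finite C"
    and irrN: "irreducible_rep A N d \<rho>" and irrC: "irreducible_rep A C e \<sigma>"
    and R: "is_rep A Y (d*e) R"
    and NC: "\<forall>n\<in>N. \<forall>c\<in>C. n \<otimes>\<^bsub>A\<^esub> c \<in> Y \<and> R (n \<otimes>\<^bsub>A\<^esub> c) = kron (\<rho> n) (\<sigma> c)"
  shows "irreducible_rep A Y (d*e) R"
proof -
  note rN = irreducible_repD(1)[OF irrN] and rC = irreducible_repD(1)[OF irrC]
  have d: "d > 0" using irreducible_repD(2)[OF irrN] .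
  have e: "e > 0" using irreducible_repD(2)[OF irrC] .
  have ikN: "\<And>k. k \<in> N \<Longrightarrow> inv\<^bsub>A\<^esub> k \<in> N" using N by (rule subgroup.m_inv_closed)
  have ikC: "\<And>k. k \<in> C \<Longrightarrow> inv\<^bsub>A\<^esub> k \<in> C" using C by (rule subgroup.m_inv_closed)
  have main: "W = {0\<^sub>v (d*e)} \<or> W = carrier_vec (d*e)" if inv: "invariant_subspace Y (d*e) R W" for W :: "complex vec set"
  proof (cases "W \<subseteq> {0\<^sub>v (d*e)}")
    case True
    moreover have "0\<^sub>v (d*e) \<in> W" using inv unfolding invariant_subspace_def by blast
    ultimately show ?thesis by auto
  next
    case False
    have Wc: "W \<subseteq> carrier_vec (d*e)" and WR: "\<And>g v. g \<in> Y \<Longrightarrow> v \<in> W \<Longrightarrow> R g *\<^sub>v v \<in> W"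
      using inv unfolding invariant_subspace_def by blast+
    from False obtain w where w: "w \<in> W" and wnz: "w \<noteq> 0\<^sub>v (d*e)" by auto
    have wc: "w \<in> carrier_vec (d*e)" using w Wc by auto
    obtain i0 where i0: "i0 < d*e" and wi0: "w $ i0 \<noteq> 0"
    proof (rule ccontr)
      assume "\<not> thesis"
      hence "\<forall>i<d*e. w $ i = 0" using that by blast
      hence "w = 0\<^sub>v (d*e)" using wc by (intro eq_vecI) auto
      thus False using wnz by simp
    qed
    define b where "b = i0 div e"
    define q where "q = i0 mod e"
    have b: "b < d" and q: "q < e" using div_mod_lt[OF i0] unfolding b_def q_def by auto
    have i0eq: "b*e+q = i0" unfolding b_def q_def by simp
    have unit: "unit_vec (d*e) (a*e+s) \<in> W" if a: "a < d" and s: "s < e" for a s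
    proof -
      define g where "g n = of_nat d / of_nat (card N) * \<rho> (inv\<^bsub>A\<^esub> n) $$ (b,a)" for n
      define h where "h c = (of_nat e / of_nat (card C) * \<sigma> (inv\<^bsub>A\<^esub> c) $$ (q,s)) / w $ i0" for c
      define u where "u = vec (d*e) (\<lambda>i. \<Sum>p\<in>N\<times>C. (g (fst p) * h (snd p)) * (R (fst p \<otimes>\<^bsub>A\<^esub> snd p) *\<^sub>v w) $ i)"
      have uW: "u \<in> W" unfolding u_def
      proof (rule subspace_sum[OF inv])
        show "finite (N \<times> C)" using finN finC by simp
        show "\<forall>p\<in>N \<times> C. R (fst p \<otimes>\<^bsub>A\<^esub> snd p) *\<^sub>v w \<in> W"
        proof
          fix p assume "p \<in> N \<times> C"
          hence "fst p \<otimes>\<^bsub>A\<^esub> snd p \<in> Y" using NC by auto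
          thus "R (fst p \<otimes>\<^bsub>A\<^esub> snd p) *\<^sub>v w \<in> W" using WR w by blast
        qed
      qed
      have "u = unit_vec (d*e) (a*e+s)"
      proof (rule eq_vecI)
        fix i assume "i < dim_vec (unit_vec (d*e) (a*e+s))"
        hence i: "i < d*e" by simp
        have I: "i div e < d" and J: "i mod e < e" using div_mod_lt[OF i] by auto
        have "u $ i = (\<Sum>p\<in>N\<times>C. g (fst p) * h (snd p) * (\<Sum>x<d. \<Sum>y<e. \<rho> (fst p) $$ (i div e, x) * \<sigma> (snd p) $$ (i mod e, y) * w $ (x*e+y)))"
          unfolding u_def using i
        proof (simp, intro sum.cong refl)
          fix p assume p: "p \<in> N \<times> C"
          have "R (fst p \<otimes>\<^bsub>A\<^esub> snd p) = kron (\<rho> (fst p)) (\<sigma> (snd p))" using NC p by auto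
          thus "g (fst p) * h (snd p) * (R (fst p \<otimes>\<^bsub>A\<^esub> snd p) *\<^sub>v w) $ i = g (fst p) * h (snd p) * (\<Sum>x<d. \<Sum>y<e. \<rho> (fst p) $$ (i div e, x) * \<sigma> (snd p) $$ (i mod e, y) * w $ (x*e+y))"
            using kron_mult_vec_index[OF is_repD(1)[OF rN] is_repD(1)[OF rC] wc i] p by auto
        qed
        also have "\<dots> = (\<Sum>x<d. \<Sum>y<e. w $ (x*e+y) * (\<Sum>n\<in>N. g n * \<rho> n $$ (i div e, x)) * (\<Sum>c\<in>C. h c * \<sigma> c $$ (i mod e, y)))"
          by (rule sum_rearr[OF finN finC])
        also have "\<dots> = (\<Sum>x<d. \<Sum>y<e. w $ (x*e+y) * (if i div e = a \<and> x = b then 1 else 0) * ((if i mod e = s \<and> y = q then 1 else 0) / w $ i0))"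
        proof (intro sum.cong refl)
          fix x y assume x: "x \<in> {..<d}" and y: "y \<in> {..<e}"
          have "(\<Sum>n\<in>N. g n * \<rho> n $$ (i div e, x)) = (if i div e = a \<and> x = b then 1 else 0)"
            unfolding g_def using units_orth[OF A N finN irrN I _ a b, of x] x by simp
          moreover have "(\<Sum>c\<in>C. h c * \<sigma> c $$ (i mod e, y)) = (if i mod e = s \<and> y = q then 1 else 0) / w $ i0"
          proof -
            have "(\<Sum>c\<in>C. h c * \<sigma> c $$ (i mod e, y)) = (\<Sum>c\<in>C. (of_nat e / of_nat (card C) * \<sigma> (inv\<^bsub>A\<^esub> c) $$ (q,s)) * \<sigma> c $$ (i mod e, y)) / w $ i0"
              unfolding h_def by (simp add: sum_divide_distrib)
            thus ?thesis using units_orth[OF A C finC irrC J _ s q, of y] y by simp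
          qed
          ultimately show "w $ (x*e+y) * (\<Sum>n\<in>N. g n * \<rho> n $$ (i div e, x)) * (\<Sum>c\<in>C. h c * \<sigma> c $$ (i mod e, y)) = w $ (x*e+y) * (if i div e = a \<and> x = b then 1 else 0) * ((if i mod e = s \<and> y = q then 1 else 0) / w $ i0)"
            by simp
        qed
        also have "\<dots> = (\<Sum>x<d. \<Sum>y<e. w $ (x*e+y) * (if i div e = a \<and> x = b then 1 else 0) * (if i mod e = s \<and> y = q then 1 else 0)) / w $ i0"
          by (simp add: sum_divide_distrib)
        also have "\<dots> = (if i div e = a \<and> i mod e = s then w $ (b*e+q) else 0) / w $ i0"
          using sum_delta2[OF b q, of "\<lambda>x y. w $ (x*e+y)" "i div e = a" "i mod e = s"] by simp
        also have "\<dots> = (if i = a*e+s then 1 else 0)"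
        proof -
          have "(i div e = a \<and> i mod e = s) \<longleftrightarrow> i = a*e+s"
            using s by (metis div_mult_mod_eq mult.commute div_mult_self1 mod_mult_self1 mod_less div_less add.commute e gr_implies_not0 add_0_right)
          thus ?thesis using i0eq wi0 by auto
        qed
        also have "\<dots> = unit_vec (d*e) (a*e+s) $ i" using i by (auto simp: unit_vec_def)
        finally show "u $ i = unit_vec (d*e) (a*e+s) $ i" .
      qed (simp add: u_def)
      thus ?thesis using uW by simp
    qed
    have "carrier_vec (d*e) \<subseteq> W"
    proof
      fix v :: "complex vec" assume v: "v \<in> carrier_vec (d*e)"
      have "\<forall>k\<in>{..<d*e}. unit_vec (d*e) k \<in> W"
      proof
        fix k assume "k \<in> {..<d*e}"
        hence k: "k < d*e" by simp
        have "unit_vec (d*e) ((k div e)*e + k mod e) \<in> W"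
          using unit div_mod_lt[OF k] by blast
        thus "unit_vec (d*e) k \<in> W" by simp
      qed
      hence "vec (d*e) (\<lambda>i. \<Sum>k\<in>{..<d*e}. v $ k * unit_vec (d*e) k $ i) \<in> W"
        by (intro subspace_sum[OF inv]) auto
      moreover have "vec (d*e) (\<lambda>i. \<Sum>k\<in>{..<d*e}. v $ k * unit_vec (d*e) k $ i) = v"
      proof (rule eq_vecI)
        fix i assume "i < dim_vec v"
        hence i: "i < d*e" using v by simp
        have "(\<Sum>k\<in>{..<d*e}. v $ k * unit_vec (d*e) k $ i) = (\<Sum>k\<in>{..<d*e}. if k = i then v $ k else 0)"
          by (rule sum.cong) (use i in auto)
        also have "\<dots> = v $ i" using i by simp
        finally show "vec (d*e) (\<lambda>i. \<Sum>k\<in>{..<d*e}. v $ k * unit_vec (d*e) k $ i) $ i = v $ i" using i by simp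
      qed (use v in simp)
      ultimately show "v \<in> W" by simp
    qed
    thus ?thesis using Wc by auto
  qed
  show ?thesis unfolding irreducible_rep_def using R d e main by simp
qed

lemma lin_char_unit:
  assumes A: "group A" and Z: "subgroup Z A" and fin: "finite Z"
    and mul: "\<forall>x\<in>Z. \<forall>y\<in>Z. \<mu> (x \<otimes>\<^bsub>A\<^esub> y) = \<mu> x * (\<mu> y :: complex)" and one: "\<mu> \<one>\<^bsub>A\<^esub> = 1"
    and z: "z \<in> Z"
  shows "cmod (\<mu> z) = 1" and "cnj (\<mu> z) = 1 / \<mu> z"
proof -
  have nz: "\<mu> x \<noteq> 0" if x: "x \<in> Z" for x
  proof -
    have ix: "inv\<^bsub>A\<^esub> x \<in> Z" using Z x by (rule subgroup.m_inv_closed)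
    have "x \<otimes>\<^bsub>A\<^esub> inv\<^bsub>A\<^esub> x = \<one>\<^bsub>A\<^esub>" using group.r_inv[OF A subgroup.mem_carrier[OF Z x]] .
    hence "\<mu> x * \<mu> (inv\<^bsub>A\<^esub> x) = 1" using mul x ix one by metis
    thus ?thesis by auto
  qed
  have "(\<Prod>x\<in>Z. \<mu> x) = (\<Prod>x\<in>Z. \<mu> (z \<otimes>\<^bsub>A\<^esub> x))"
    using prod.reindex_bij_betw[OF bij_left_mult[OF A Z z], of \<mu>] by simp
  also have "\<dots> = (\<Prod>x\<in>Z. \<mu> z * \<mu> x)" using mul z by (intro prod.cong) auto
  also have "\<dots> = \<mu> z ^ card Z * (\<Prod>x\<in>Z. \<mu> x)" by (simp add: prod.distrib)
  finally have "\<mu> z ^ card Z = 1" using nz fin by (simp add: prod_zero_iff)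
  hence "cmod (\<mu> z) ^ card Z = 1" by (metis norm_power norm_one)
  moreover have "card Z > 0" using fin subgroup.one_closed[OF Z] card_gt_0_iff by blast
  ultimately show c: "cmod (\<mu> z) = 1"
    using power_eq_imp_eq_base[of "cmod (\<mu> z)" "card Z" 1] by simp
  show "cnj (\<mu> z) = 1 / \<mu> z"
  proof -
    have "\<mu> z * cnj (\<mu> z) = complex_of_real ((cmod (\<mu> z))\<^sup>2)" by (rule complex_norm_square[symmetric])
    hence "\<mu> z * cnj (\<mu> z) = 1" using c by simp
    thus ?thesis using nz[OF z] by (simp add: field_simps)
  qed
qed

lemma lin_orth:
  assumes A: "group A" and Z: "subgroup Z A" and fin: "finite Z"
    and mull: "\<forall>x\<in>Z. \<forall>y\<in>Z. la (x \<otimes>\<^bsub>A\<^esub> y) = la x * (la y :: complex)" and onel: "la \<one>\<^bsub>A\<^esub> = 1"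
    and mul: "\<forall>x\<in>Z. \<forall>y\<in>Z. \<mu> (x \<otimes>\<^bsub>A\<^esub> y) = \<mu> x * (\<mu> y :: complex)" and one: "\<mu> \<one>\<^bsub>A\<^esub> = 1"
    and ne: "(\<Sum>z\<in>Z. la z * cnj (\<mu> z)) \<noteq> 0"
  shows "\<forall>z\<in>Z. la z = \<mu> z"
proof (rule ccontr)
  assume "\<not> ?thesis"
  then obtain z0 where z0: "z0 \<in> Z" and neq: "la z0 \<noteq> \<mu> z0" by blast
  define f where "f z = la z * cnj (\<mu> z)" for z
  have fm: "f (x \<otimes>\<^bsub>A\<^esub> y) = f x * f y" if "x \<in> Z" "y \<in> Z" for x y
    unfolding f_def using mull mul that by simp
  have cu: "\<And>z. z \<in> Z \<Longrightarrow> cnj (\<mu> z) = 1 / \<mu> z" using lin_char_unit(2)[OF A Z fin mul one] by blast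
  have mnz: "\<mu> z0 \<noteq> 0" using lin_char_unit(1)[OF A Z fin mul one z0] by auto
  have "f z0 = la z0 / \<mu> z0" unfolding f_def using cu[OF z0] by simp
  moreover have "la z0 / \<mu> z0 \<noteq> 1" using mnz neq by (metis divide_self nonzero_eq_divide_eq mult_1)
  ultimately have f0: "f z0 \<noteq> 1" by simp
  have "(\<Sum>z\<in>Z. f z) = (\<Sum>z\<in>Z. f (z0 \<otimes>\<^bsub>A\<^esub> z))"
    using sum.reindex_bij_betw[OF bij_left_mult[OF A Z z0], of f] by simp
  also have "\<dots> = f z0 * (\<Sum>z\<in>Z. f z)" using fm z0 by (simp add: sum_distrib_left)
  finally have "(1 - f z0) * (\<Sum>z\<in>Z. f z) = 0" by (simp add: algebra_simps)
  hence "(\<Sum>z\<in>Z. f z) = 0" using f0 by simp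
  thus False using ne unfolding f_def by simp
qed

lemma scalar_rep:
  assumes irr: "irreducible_rep A K n \<rho>" and s: "s \<in> K" and cen: "\<forall>k\<in>K. s \<otimes>\<^bsub>A\<^esub> k = k \<otimes>\<^bsub>A\<^esub> s"
  shows "\<rho> s = (\<rho> s $$ (0,0)) \<cdot>\<^sub>m 1\<^sub>m n"
proof -
  note r = irreducible_repD(1)[OF irr]
  have n: "n > 0" using irreducible_repD(2)[OF irr] .
  have "\<forall>k\<in>K. \<rho> s * \<rho> k = \<rho> k * \<rho> s"
    using cen is_repD(3)[OF r s] is_repD(3)[OF r _ s] by metis
  then obtain c where c: "\<rho> s = c \<cdot>\<^sub>m 1\<^sub>m n" using schur[OF irr is_repD(1)[OF r s]] by blast
  hence "\<rho> s $$ (0,0) = c" using n by simp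
  thus ?thesis using c by simp
qed

lemma scalar_mat_mult: "((a::complex) \<cdot>\<^sub>m 1\<^sub>m n) * (b \<cdot>\<^sub>m 1\<^sub>m n) = (a * b) \<cdot>\<^sub>m 1\<^sub>m n"
proof -
  have "(a \<cdot>\<^sub>m 1\<^sub>m n) * (b \<cdot>\<^sub>m 1\<^sub>m n) = a \<cdot>\<^sub>m (1\<^sub>m n * (b \<cdot>\<^sub>m 1\<^sub>m n))"
    by (rule mult_smult_assoc_mat) auto
  also have "1\<^sub>m n * (b \<cdot>\<^sub>m 1\<^sub>m n) = b \<cdot>\<^sub>m 1\<^sub>m n" by (rule left_mult_one_mat) auto
  also have "a \<cdot>\<^sub>m (b \<cdot>\<^sub>m 1\<^sub>m n) = (a * b) \<cdot>\<^sub>m 1\<^sub>m n" by (rule eq_matI) auto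
  finally show ?thesis .
qed

lemma scalar_mult:
  assumes "X = a \<cdot>\<^sub>m 1\<^sub>m n" "Y = b \<cdot>\<^sub>m 1\<^sub>m n" "X * Y = (c::complex) \<cdot>\<^sub>m 1\<^sub>m n" "n > 0"
  shows "c = a * b"
proof -
  have "X * Y = (a * b) \<cdot>\<^sub>m 1\<^sub>m n" using assms(1,2) scalar_mat_mult by simp
  hence "(c \<cdot>\<^sub>m 1\<^sub>m n) $$ (0,0) = ((a * b) \<cdot>\<^sub>m 1\<^sub>m n) $$ (0,0)" using assms(3) by simp
  thus ?thesis using assms(4) by simp
qed

lemma scal:
  assumes A: "group A" and K: "subgroup K A" and finK: "finite K" and irr: "irreducible_rep A K n \<rho>"
    and Z: "subgroup Z A" and ZK: "Z \<subseteq> K" and cen: "\<forall>z\<in>Z. \<forall>k\<in>K. z \<otimes>\<^bsub>A\<^esub> k = k \<otimes>\<^bsub>A\<^esub> z"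
    and nu: "\<nu> \<in> Irr A Z" and th: "\<forall>z\<in>Z. \<theta> z = mat_trace (\<rho> z)" and lo: "lies_over Z \<theta> \<nu>"
  shows "\<forall>z\<in>Z. \<rho> z = (\<nu> z / \<nu> \<one>\<^bsub>A\<^esub>) \<cdot>\<^sub>m 1\<^sub>m n"
proof -
  note r = irreducible_repD(1)[OF irr]
  have n: "n > 0" using irreducible_repD(2)[OF irr] .
  have finZ: "finite Z" using finK ZK finite_subset by blast
  have one: "\<one>\<^bsub>A\<^esub> \<in> Z" using Z by (rule subgroup.one_closed)
  define la where "la z = \<rho> z $$ (0,0)" for z
  have rl: "\<forall>z\<in>Z. \<rho> z = la z \<cdot>\<^sub>m 1\<^sub>m n"
    unfolding la_def using scalar_rep[OF irr] ZK cen by blast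
  have lam: "\<forall>x\<in>Z. \<forall>y\<in>Z. la (x \<otimes>\<^bsub>A\<^esub> y) = la x * la y"
  proof (intro ballI)
    fix x y assume x: "x \<in> Z" and y: "y \<in> Z"
    have xy: "x \<otimes>\<^bsub>A\<^esub> y \<in> Z" using Z x y by (rule subgroup.m_closed)
    have "\<rho> x * \<rho> y = la (x \<otimes>\<^bsub>A\<^esub> y) \<cdot>\<^sub>m 1\<^sub>m n"
    proof -
      have "x \<in> K" "y \<in> K" using x y ZK by auto
      hence "\<rho> (x \<otimes>\<^bsub>A\<^esub> y) = \<rho> x * \<rho> y" using is_repD(3)[OF r] by blast
      thus ?thesis using rl xy by simp
    qed
    thus "la (x \<otimes>\<^bsub>A\<^esub> y) = la x * la y" using scalar_mult rl x y n by blast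
  qed
  have la1: "la \<one>\<^bsub>A\<^esub> = 1" unfolding la_def using is_repD(2)[OF r] n by simp
  obtain m \<tau> where irrt: "irreducible_rep A Z m \<tau>" and nut: "\<forall>g\<in>Z. \<nu> g = mat_trace (\<tau> g)"
    using nu unfolding Irr_def by blast
  note rt = irreducible_repD(1)[OF irrt]
  have m: "m > 0" using irreducible_repD(2)[OF irrt] .
  define mu where "mu z = \<tau> z $$ (0,0)" for z
  have cenZ: "\<forall>z\<in>Z. \<forall>k\<in>Z. z \<otimes>\<^bsub>A\<^esub> k = k \<otimes>\<^bsub>A\<^esub> z" using cen ZK by blast
  have tm: "\<forall>z\<in>Z. \<tau> z = mu z \<cdot>\<^sub>m 1\<^sub>m m"
    unfolding mu_def using scalar_rep[OF irrt] cenZ by blast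
  have mum: "\<forall>x\<in>Z. \<forall>y\<in>Z. mu (x \<otimes>\<^bsub>A\<^esub> y) = mu x * mu y"
  proof (intro ballI)
    fix x y assume x: "x \<in> Z" and y: "y \<in> Z"
    have xy: "x \<otimes>\<^bsub>A\<^esub> y \<in> Z" using Z x y by (rule subgroup.m_closed)
    have "\<tau> x * \<tau> y = mu (x \<otimes>\<^bsub>A\<^esub> y) \<cdot>\<^sub>m 1\<^sub>m m"
    proof -
      have "\<tau> (x \<otimes>\<^bsub>A\<^esub> y) = \<tau> x * \<tau> y" using is_repD(3)[OF rt] x y by blast
      thus ?thesis using tm xy by simp
    qed
    thus "mu (x \<otimes>\<^bsub>A\<^esub> y) = mu x * mu y" using scalar_mult tm x y m by blast
  qed
  have mu1: "mu \<one>\<^bsub>A\<^esub> = 1" unfolding mu_def using is_repD(2)[OF rt] m by simp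
  have nuz: "\<forall>z\<in>Z. \<nu> z = of_nat m * mu z"
    using nut tm by (simp add: mat_trace_smult[of "1\<^sub>m m" m] mult.commute)
  have nu1: "\<nu> \<one>\<^bsub>A\<^esub> = of_nat m" using nuz one mu1 by simp
  have thz: "\<forall>z\<in>Z. \<theta> z = of_nat n * la z"
    using th rl by (simp add: mat_trace_smult[of "1\<^sub>m n" n] mult.commute)
  have "(\<Sum>z\<in>Z. \<theta> z * cnj (\<nu> z)) \<noteq> 0" using lo unfolding lies_over_def char_inner_def by auto
  moreover have "(\<Sum>z\<in>Z. \<theta> z * cnj (\<nu> z)) = of_nat n * of_nat m * (\<Sum>z\<in>Z. la z * cnj (mu z))"
    by (simp add: sum_distrib_left thz nuz mult_ac)
  ultimately have "(\<Sum>z\<in>Z. la z * cnj (mu z)) \<noteq> 0" by auto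
  hence eq: "\<forall>z\<in>Z. la z = mu z" by (rule lin_orth[OF A Z finZ lam la1 mum mu1])
  show ?thesis
  proof
    fix z assume z: "z \<in> Z"
    have "\<nu> z / \<nu> \<one>\<^bsub>A\<^esub> = mu z" using nuz z nu1 m by simp
    thus "\<rho> z = (\<nu> z / \<nu> \<one>\<^bsub>A\<^esub>) \<cdot>\<^sub>m 1\<^sub>m n" using rl eq z by simp
  qed
qed

lemma set_mult_mem: "x \<in> X <#>\<^bsub>A\<^esub> Y \<longleftrightarrow> (\<exists>a\<in>X. \<exists>b\<in>Y. x = a \<otimes>\<^bsub>A\<^esub> b)"
  unfolding set_mult_def by blast

lemma mat_cancel_assoc:
  assumes "X \<in> carrier_mat n n" "Y \<in> carrier_mat n n" "Z \<in> carrier_mat n m" "X * Y = 1\<^sub>m n"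
  shows "X * (Y * Z) = (Z :: complex mat)"
proof -
  have "X * (Y * Z) = (X * Y) * Z" by (rule assoc_mult_mat[symmetric, OF assms(1-3)])
  thus ?thesis using assms by simp
qed

lemma smult_one_mult: "V \<in> carrier_mat n m \<Longrightarrow> ((k::complex) \<cdot>\<^sub>m 1\<^sub>m n) * V = k \<cdot>\<^sub>m V"
  using mult_smult_assoc_mat[of "1\<^sub>m n" n n V m k] by simp

lemma mult_smult_one: "V \<in> carrier_mat n m \<Longrightarrow> V * ((k::complex) \<cdot>\<^sub>m 1\<^sub>m m) = k \<cdot>\<^sub>m V"
  using mult_smult_distrib[of V n m "1\<^sub>m m" m k] by simp

lemma invertible_mult:
  assumes "X \<in> carrier_mat n n" "Y \<in> carrier_mat n n" "invertible_mat X" "invertible_mat (Y::complex mat)"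
  shows "invertible_mat (X * Y)"
proof -
  obtain Xi where Xi: "Xi \<in> carrier_mat n n" "X * Xi = 1\<^sub>m n" "Xi * X = 1\<^sub>m n" using invertible_matD assms by metis
  obtain Yi where Yi: "Yi \<in> carrier_mat n n" "Y * Yi = 1\<^sub>m n" "Yi * Y = 1\<^sub>m n" using invertible_matD assms by metis
  have "X * Y * (Yi * Xi) = X * (Y * (Yi * Xi))" using assms Xi Yi by (simp add: assoc_mult_mat[of _ n n _ n _ n])
  also have "Y * (Yi * Xi) = Xi" by (rule mat_cancel_assoc) (use assms Xi Yi in auto)
  finally have 1: "X * Y * (Yi * Xi) = 1\<^sub>m n" using Xi by simp
  have "Yi * Xi * (X * Y) = Yi * (Xi * (X * Y))" using assms Xi Yi by (simp add: assoc_mult_mat[of _ n n _ n _ n])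
  also have "Xi * (X * Y) = Y" by (rule mat_cancel_assoc) (use assms Xi Yi in auto)
  finally have 2: "Yi * Xi * (X * Y) = 1\<^sub>m n" using Yi by simp
  show ?thesis by (rule invertible_matI[OF _ _ 1 2]) (use assms Xi Yi in auto)
qed

lemma (in group) mul_inv_cancel_left:
  "x \<in> carrier G \<Longrightarrow> y \<in> carrier G \<Longrightarrow> x \<otimes> (inv x \<otimes> y) = y"
  by (simp add: m_assoc[symmetric])

lemma (in group) inv_mul_cancel_left:
  "x \<in> carrier G \<Longrightarrow> y \<in> carrier G \<Longrightarrow> inv x \<otimes> (x \<otimes> y) = y"
  by (simp add: m_assoc[symmetric])

locale base0 = group A for A :: "('a, 'b) monoid_scheme" (structure) +
  fixes C :: "'a set" and e :: nat and \<sigma> :: "'a \<Rightarrow> complex mat"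
  assumes finA: "finite (carrier A)"
    and C: "subgroup C A"
    and irrC: "irreducible_rep A C e \<sigma>"
begin

lemma finC: "finite C" using finA subgroup.subset[OF C] finite_subset by blast

lemma rC: "is_rep A C e \<sigma>" using irreducible_repD(1)[OF irrC] .

lemma Cc: "c \<in> C \<Longrightarrow> c \<in> carrier A" using subgroup.mem_carrier[OF C] .

lemma sig_carrier: "c \<in> C \<Longrightarrow> \<sigma> c \<in> carrier_mat e e" using is_repD(1)[OF rC] .

lemma sig_mult: "c \<in> C \<Longrightarrow> c' \<in> C \<Longrightarrow> \<sigma> (c \<otimes> c') = \<sigma> c * \<sigma> c'" using is_repD(3)[OF rC] .

lemma sig_one: "\<sigma> \<one> = 1\<^sub>m e" using is_repD(2)[OF rC] .

lemma sig_invertible: "c \<in> C \<Longrightarrow> invertible_mat (\<sigma> c)"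
  using invertible_matI[OF sig_carrier sig_carrier[OF subgroup.m_inv_closed[OF C]]
      rep_inv(2)[OF is_group C rC] rep_inv(1)[OF is_group C rC]] by blast

definition tw :: "complex mat \<Rightarrow> 'a \<Rightarrow> bool" where
  "tw X g \<longleftrightarrow> (\<forall>\<gamma>\<in>C. X * \<sigma> \<gamma> = \<sigma> (g \<otimes> \<gamma> \<otimes> inv g) * X)"

definition normC :: "'a \<Rightarrow> bool" where
  "normC g \<longleftrightarrow> g \<in> carrier A \<and> (\<forall>c\<in>C. g \<otimes> c \<otimes> inv g \<in> C \<and> inv g \<otimes> c \<otimes> g \<in> C)"

lemma normC_mult: assumes "normC g" "normC h" shows "normC (g \<otimes> h)"
proof -
  have g: "g \<in> carrier A" and h: "h \<in> carrier A" using assms unfolding normC_def by auto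
  have "g \<otimes> h \<otimes> c \<otimes> inv (g \<otimes> h) = g \<otimes> (h \<otimes> c \<otimes> inv h) \<otimes> inv g" if c: "c \<in> C" for c
    using g h Cc[OF c] by (simp add: inv_mult_group m_assoc)
  moreover have "inv (g \<otimes> h) \<otimes> c \<otimes> (g \<otimes> h) = inv h \<otimes> (inv g \<otimes> c \<otimes> g) \<otimes> h" if c: "c \<in> C" for c
    using g h Cc[OF c] by (simp add: inv_mult_group m_assoc)
  ultimately show ?thesis using assms g h unfolding normC_def by auto
qed

lemma normC_C: "c \<in> C \<Longrightarrow> normC c"
  unfolding normC_def using C Cc by (auto intro!: subgroup.m_closed[OF C] subgroup.m_inv_closed[OF C])

lemma tw_mult:
  assumes "tw X g" "tw Y h" "normC h" "X \<in> carrier_mat e e" "Y \<in> carrier_mat e e" "normC g"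
  shows "tw (X * Y) (g \<otimes> h)"
  unfolding tw_def
proof
  fix \<gamma> assume \<gamma>: "\<gamma> \<in> C"
  have h: "h \<in> carrier A" using assms(3) unfolding normC_def by auto
  have g: "g \<in> carrier A" using assms(6) unfolding normC_def by auto
  have ghC: "(g \<otimes> h) \<otimes> \<gamma> \<otimes> inv (g \<otimes> h) \<in> C" using normC_mult[OF assms(6,3)] \<gamma> unfolding normC_def by auto
  have hg: "h \<otimes> \<gamma> \<otimes> inv h \<in> C" using assms(3) \<gamma> unfolding normC_def by auto
  have "X * Y * \<sigma> \<gamma> = X * (Y * \<sigma> \<gamma>)" using assms(4,5) sig_carrier[OF \<gamma>] by simp
  also have "\<dots> = X * (\<sigma> (h \<otimes> \<gamma> \<otimes> inv h) * Y)" using assms(2) \<gamma> unfolding tw_def by simp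
  also have "\<dots> = (X * \<sigma> (h \<otimes> \<gamma> \<otimes> inv h)) * Y" using assms(4,5) sig_carrier[OF hg] by simp
  also have "\<dots> = \<sigma> (g \<otimes> (h \<otimes> \<gamma> \<otimes> inv h) \<otimes> inv g) * X * Y" using assms(1) hg unfolding tw_def by simp
  also have "g \<otimes> (h \<otimes> \<gamma> \<otimes> inv h) \<otimes> inv g = (g \<otimes> h) \<otimes> \<gamma> \<otimes> inv (g \<otimes> h)"
    using g h Cc[OF \<gamma>] by (simp add: inv_mult_group m_assoc)
  also have "\<sigma> ((g \<otimes> h) \<otimes> \<gamma> \<otimes> inv (g \<otimes> h)) * X * Y = \<sigma> ((g \<otimes> h) \<otimes> \<gamma> \<otimes> inv (g \<otimes> h)) * (X * Y)"
    using assms(4,5) sig_carrier[OF ghC] by (simp add: assoc_mult_mat[of _ e e _ e _ e])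
  finally show "X * Y * \<sigma> \<gamma> = \<sigma> (g \<otimes> h \<otimes> \<gamma> \<otimes> inv (g \<otimes> h)) * (X * Y)" .
qed

lemma tw_sig: assumes c: "c \<in> C" shows "tw (\<sigma> c) c"
  unfolding tw_def
proof
  fix \<gamma> assume g: "\<gamma> \<in> C"
  have cg: "c \<otimes> \<gamma> \<otimes> inv c \<in> C" using normC_C[OF c] g unfolding normC_def by auto
  have "c \<otimes> \<gamma> = (c \<otimes> \<gamma> \<otimes> inv c) \<otimes> c" using Cc[OF c] Cc[OF g] by (simp add: m_assoc)
  hence "\<sigma> (c \<otimes> \<gamma>) = \<sigma> (c \<otimes> \<gamma> \<otimes> inv c) * \<sigma> c" using sig_mult[OF cg c] by simp
  thus "\<sigma> c * \<sigma> \<gamma> = \<sigma> (c \<otimes> \<gamma> \<otimes> inv c) * \<sigma> c" using sig_mult[OF c g] by simp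
qed

lemma tw_cong: "tw X g \<Longrightarrow> (\<forall>\<gamma>\<in>C. g \<otimes> \<gamma> \<otimes> inv g = g' \<otimes> \<gamma> \<otimes> inv g') \<Longrightarrow> tw X g'"
  unfolding tw_def by simp

lemma conj_central:
  assumes t: "t \<in> carrier A" and m: "m \<in> carrier A" and mc: "\<forall>\<gamma>\<in>C. m \<otimes> \<gamma> = \<gamma> \<otimes> m" and c: "c \<in> C"
  shows "\<forall>\<gamma>\<in>C. (t \<otimes> m \<otimes> c) \<otimes> \<gamma> \<otimes> inv (t \<otimes> m \<otimes> c) = (t \<otimes> c) \<otimes> \<gamma> \<otimes> inv (t \<otimes> c)"
proof
  fix \<gamma> assume g: "\<gamma> \<in> C"
  have cg: "c \<otimes> \<gamma> \<otimes> inv c \<in> C" using normC_C[OF c] g unfolding normC_def by auto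
  have cA: "c \<in> carrier A" using Cc[OF c] .
  have gA: "\<gamma> \<in> carrier A" using Cc[OF g] .
  have "(t \<otimes> m \<otimes> c) \<otimes> \<gamma> \<otimes> inv (t \<otimes> m \<otimes> c) = t \<otimes> (m \<otimes> (c \<otimes> \<gamma> \<otimes> inv c)) \<otimes> inv m \<otimes> inv t"
    using t m cA gA by (simp add: inv_mult_group m_assoc)
  also have "m \<otimes> (c \<otimes> \<gamma> \<otimes> inv c) = (c \<otimes> \<gamma> \<otimes> inv c) \<otimes> m" using mc cg by blast
  also have "t \<otimes> ((c \<otimes> \<gamma> \<otimes> inv c) \<otimes> m) \<otimes> inv m \<otimes> inv t = (t \<otimes> c) \<otimes> \<gamma> \<otimes> inv (t \<otimes> c)"
    using t m cA gA by (simp add: inv_mult_group m_assoc)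
  finally show "(t \<otimes> m \<otimes> c) \<otimes> \<gamma> \<otimes> inv (t \<otimes> m \<otimes> c) = (t \<otimes> c) \<otimes> \<gamma> \<otimes> inv (t \<otimes> c)" .
qed

lemma tw_scalar:
  assumes X: "tw X g" and V: "tw V g" and g: "normC g" and Xc: "X \<in> carrier_mat e e" and Vc: "V \<in> carrier_mat e e"
    and iV: "invertible_mat V"
  shows "\<exists>\<kappa>. X = \<kappa> \<cdot>\<^sub>m V"
proof -
  obtain Vi where Vi: "Vi \<in> carrier_mat e e" "V * Vi = 1\<^sub>m e" "Vi * V = 1\<^sub>m e" using invertible_matD[OF iV Vc] by blast
  have gA: "g \<in> carrier A" using g unfolding normC_def by auto
  have comm: "\<forall>\<gamma>\<in>C. (X * Vi) * \<sigma> \<gamma> = \<sigma> \<gamma> * (X * Vi)"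
  proof
    fix \<gamma> assume gm: "\<gamma> \<in> C"
    define \<gamma>' where "\<gamma>' = inv g \<otimes> \<gamma> \<otimes> g"
    have g': "\<gamma>' \<in> C" using g gm unfolding normC_def \<gamma>'_def by auto
    have bkk: "g \<otimes> \<gamma>' \<otimes> inv g = \<gamma>" unfolding \<gamma>'_def using gA Cc[OF gm] by (simp add: m_assoc mul_inv_cancel_left)
    have "V * \<sigma> \<gamma>' = \<sigma> (g \<otimes> \<gamma>' \<otimes> inv g) * V" using V g' unfolding tw_def by blast
    hence s1: "V * \<sigma> \<gamma>' = \<sigma> \<gamma> * V" unfolding bkk .
    have "X * \<sigma> \<gamma>' = \<sigma> (g \<otimes> \<gamma>' \<otimes> inv g) * X" using X g' unfolding tw_def by blast
    hence s2: "X * \<sigma> \<gamma>' = \<sigma> \<gamma> * X" unfolding bkk .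
    note sc = sig_carrier[OF gm] sig_carrier[OF g']
    have s3: "Vi * \<sigma> \<gamma> = \<sigma> \<gamma>' * Vi"
    proof -
      have "Vi * \<sigma> \<gamma> = Vi * (\<sigma> \<gamma> * (V * Vi))" using Vi sc by simp
      also have "\<dots> = Vi * ((\<sigma> \<gamma> * V) * Vi)" using Vi sc Vc by (simp add: assoc_mult_mat[of _ e e _ e _ e])
      also have "\<dots> = Vi * ((V * \<sigma> \<gamma>') * Vi)" using s1 by simp
      also have "\<dots> = Vi * (V * (\<sigma> \<gamma>' * Vi))" using Vi sc Vc by (simp add: assoc_mult_mat[of _ e e _ e _ e])
      also have "\<dots> = \<sigma> \<gamma>' * Vi" by (rule mat_cancel_assoc[OF Vi(1) Vc _ Vi(3)]) (use sc Vi in auto)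
      finally show ?thesis .
    qed
    have "(X * Vi) * \<sigma> \<gamma> = X * (Vi * \<sigma> \<gamma>)" using Vi sc Xc by (simp add: assoc_mult_mat[of _ e e _ e _ e])
    also have "\<dots> = (X * \<sigma> \<gamma>') * Vi" using s3 Vi sc Xc by (simp add: assoc_mult_mat[of _ e e _ e _ e])
    also have "\<dots> = \<sigma> \<gamma> * (X * Vi)" using s2 Vi sc Xc by (simp add: assoc_mult_mat[of _ e e _ e _ e])
    finally show "(X * Vi) * \<sigma> \<gamma> = \<sigma> \<gamma> * (X * Vi)" .
  qed
  have XVc: "X * Vi \<in> carrier_mat e e" using Xc Vi by simp
  obtain \<kappa> where k: "X * Vi = \<kappa> \<cdot>\<^sub>m 1\<^sub>m e" using schur[OF irrC XVc comm] by blast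
  have "X = (X * Vi) * V" using Xc Vi Vc by (simp add: assoc_mult_mat[of _ e e _ e _ e])
  also have "\<dots> = \<kappa> \<cdot>\<^sub>m V" using k Vc smult_one_mult by simp
  finally show ?thesis by blast
qed

end


locale base = base0 +
  fixes Hp :: "'a set" and Mt :: "'a \<Rightarrow> complex mat"
  assumes Hp: "subgroup Hp A"
    and Hp_norm: "\<forall>h\<in>Hp. \<forall>c\<in>C. h \<otimes> c \<otimes> inv h \<in> C \<and> inv h \<otimes> c \<otimes> h \<in> C"
    and Mt: "\<forall>t\<in>Hp. Mt t \<in> carrier_mat e e \<and> invertible_mat (Mt t) \<and> (\<forall>c\<in>C. \<sigma> (t \<otimes> c \<otimes> inv t) * Mt t = Mt t * \<sigma> c)"
    and Mt1: "Mt \<one> = 1\<^sub>m e"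
begin

lemma normC_Hp: "h \<in> Hp \<Longrightarrow> normC h"
  unfolding normC_def using Hp_norm subgroup.mem_carrier[OF Hp] by auto

lemma tw_Mt: "t \<in> Hp \<Longrightarrow> tw (Mt t) t"
  unfolding tw_def using Mt by simp

end

definition Fm :: "('a,'b) monoid_scheme \<Rightarrow> 'a set \<Rightarrow> 'a set \<Rightarrow> ('a \<Rightarrow> complex mat) \<Rightarrow> ('a \<Rightarrow> complex mat) \<Rightarrow> ('a \<Rightarrow> complex mat) \<Rightarrow> ('a \<Rightarrow> 'a) \<Rightarrow> 'a \<Rightarrow> complex mat" where
  "Fm A Nx C Px Mt \<sigma> tr x = (let t = tr x; p = (SOME p. fst p \<in> Nx \<and> snd p \<in> C \<and> inv\<^bsub>A\<^esub> t \<otimes>\<^bsub>A\<^esub> x = fst p \<otimes>\<^bsub>A\<^esub> snd p)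
     in kron (Px (t \<otimes>\<^bsub>A\<^esub> fst p)) (Mt t * \<sigma> (snd p)))"

locale side0 = base0 +
  fixes K Nx :: "'a set" and \<theta>x :: "'a \<Rightarrow> complex" and Px :: "'a \<Rightarrow> complex mat" and \<alpha>x :: "'a \<times> 'a \<Rightarrow> complex"
    and d :: nat and \<psi> \<nu> :: "'a \<Rightarrow> complex"
  assumes ct: "char_triple A K Nx \<theta>x"
    and Pd: "\<forall>x\<in>K. Px x \<in> carrier_mat d d \<and> invertible_mat (Px x)"
    and Pm: "\<forall>x\<in>K. \<forall>y\<in>K. Px x * Px y = \<alpha>x (x, y) \<cdot>\<^sub>m Px (x \<otimes> y)"
    and Pr: "is_rep A Nx d Px"
    and Pt: "\<forall>n\<in>Nx. \<theta>x n = mat_trace (Px n)"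
    and Pa: "\<forall>x\<in>K. \<forall>n\<in>Nx. Px (x \<otimes> n) = Px x * Px n \<and> Px (n \<otimes> x) = Px n * Px x"
    and CK: "C \<subseteq> K"
    and cent: "\<forall>c\<in>C. \<forall>n\<in>Nx. c \<otimes> n = n \<otimes> c"
    and psiC: "\<forall>c\<in>C. \<psi> c = mat_trace (\<sigma> c)"
    and nu: "\<nu> \<in> Irr A (C \<inter> Nx)" and lo1: "lies_over (C \<inter> Nx) \<theta>x \<nu>" and lo2: "lies_over (C \<inter> Nx) \<psi> \<nu>"
begin

abbreviation "Y \<equiv> Nx <#> C"
abbreviation "\<chi> \<equiv> cprod_char A Nx C \<theta>x \<psi>"
abbreviation "Kp \<equiv> char_stab A (normalizer_in A K C) \<chi>"

lemma K: "subgroup K A" using ct unfolding char_triple_def by blast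

lemma Nnorm: "Nx \<lhd> A\<lparr>carrier := K\<rparr>" using ct unfolding char_triple_def by blast

lemma N: "subgroup Nx A"
  using incl_subgroup[OF K normal_imp_subgroup[OF Nnorm]] .

lemma NK: "Nx \<subseteq> K"
  using subgroup.subset[OF normal_imp_subgroup[OF Nnorm]] by simp

lemma finN: "finite Nx" using finA subgroup.subset[OF N] finite_subset by blast

lemma Nc: "n \<in> Nx \<Longrightarrow> n \<in> carrier A" using subgroup.mem_carrier[OF N] .

lemma Kc: "k \<in> K \<Longrightarrow> k \<in> carrier A" using subgroup.mem_carrier[OF K] .

lemma N_conj: assumes "g \<in> K" "n \<in> Nx" shows "g \<otimes> n \<otimes> inv g \<in> Nx"
proof -
  have "g \<otimes>\<^bsub>A\<lparr>carrier := K\<rparr>\<^esub> n \<otimes>\<^bsub>A\<lparr>carrier := K\<rparr>\<^esub> inv\<^bsub>A\<lparr>carrier := K\<rparr>\<^esub> g \<in> Nx"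
    using normal.inv_op_closed2[OF Nnorm] assms by simp
  thus ?thesis using m_inv_consistent[OF K assms(1)] by simp
qed

lemma N_conj': assumes "g \<in> K" "n \<in> Nx" shows "inv g \<otimes> n \<otimes> g \<in> Nx"
  using N_conj[OF subgroup.m_inv_closed[OF K assms(1)] assms(2)] Kc[OF assms(1)] by simp

lemma theta_Irr: "\<theta>x \<in> Irr A Nx" using ct unfolding char_triple_def by blast

lemma theta_inv: "g \<in> K \<Longrightarrow> x \<in> carrier A \<Longrightarrow> \<theta>x (g \<otimes> x \<otimes> inv g) = \<theta>x x"
  using ct unfolding char_triple_def by blast

lemma P_irr: "irreducible_rep A Nx d Px"
proof -
  obtain n0 \<rho>0 where irr0: "irreducible_rep A Nx n0 \<rho>0" and t0: "\<forall>g\<in>Nx. \<theta>x g = mat_trace (\<rho>0 g)"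
    using theta_Irr unfolding Irr_def by blast
  have "\<forall>k\<in>Nx. mat_trace (Px k) = mat_trace (\<rho>0 k)" using t0 Pt by simp
  from equiv_rep[OF is_group N finN irr0 Pr this]
  obtain T where "d = n0" "T \<in> carrier_mat n0 n0" "invertible_mat T" "\<forall>k\<in>Nx. Px k * T = T * \<rho>0 k" by blast
  thus ?thesis using irr_transfer[OF irr0] Pr by blast
qed

lemma d_pos: "d > 0" using irreducible_repD(2)[OF P_irr] .
lemma e_pos: "e > 0" using irreducible_repD(2)[OF irrC] .

lemma Pc: "x \<in> K \<Longrightarrow> Px x \<in> carrier_mat d d" using Pd by blast
lemma Pinv: "x \<in> K \<Longrightarrow> invertible_mat (Px x)" using Pd by blast
lemma Pright: "x \<in> K \<Longrightarrow> n \<in> Nx \<Longrightarrow> Px (x \<otimes> n) = Px x * Px n" using Pa by blast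
lemma Pleft: "x \<in> K \<Longrightarrow> n \<in> Nx \<Longrightarrow> Px (n \<otimes> x) = Px n * Px x" using Pa by blast
lemma Pone: "Px \<one> = 1\<^sub>m d" using is_repD(2)[OF Pr] .

abbreviation "Z \<equiv> C \<inter> Nx"

lemma Z: "subgroup Z A" using subgroups_Inter_pair[OF C N] .

definition lz :: "'a \<Rightarrow> complex" where "lz z = \<nu> z / \<nu> \<one>"

lemma P_Z: "z \<in> Z \<Longrightarrow> Px z = lz z \<cdot>\<^sub>m 1\<^sub>m d"
proof -
  have cen': "\<forall>z\<in>Z. \<forall>k\<in>Nx. z \<otimes> k = k \<otimes> z" using cent by blast
  have "\<forall>z\<in>Z. Px z = (\<nu> z / \<nu> \<one>) \<cdot>\<^sub>m 1\<^sub>m d"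
    by (rule scal[OF is_group N finN P_irr Z _ cen' nu _ lo1]) (use Pt in auto)
  thus "z \<in> Z \<Longrightarrow> Px z = lz z \<cdot>\<^sub>m 1\<^sub>m d" unfolding lz_def by blast
qed

lemma sig_Z: "z \<in> Z \<Longrightarrow> \<sigma> z = lz z \<cdot>\<^sub>m 1\<^sub>m e"
proof -
  have cen': "\<forall>z\<in>Z. \<forall>k\<in>C. z \<otimes> k = k \<otimes> z" using cent by (metis IntD1 IntD2)
  have "\<forall>z\<in>Z. \<sigma> z = (\<nu> z / \<nu> \<one>) \<cdot>\<^sub>m 1\<^sub>m e"
    by (rule scal[OF is_group C finC irrC Z _ cen' nu _ lo2]) (use psiC in auto)
  thus "z \<in> Z \<Longrightarrow> \<sigma> z = lz z \<cdot>\<^sub>m 1\<^sub>m e" unfolding lz_def by blast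
qed

lemma Y_mem: "y \<in> Y \<longleftrightarrow> (\<exists>n\<in>Nx. \<exists>c\<in>C. y = n \<otimes> c)" by (rule set_mult_mem)

lemma kron_wd:
  assumes t: "t \<in> K" and n: "n \<in> Nx" and n': "n' \<in> Nx" and c: "c \<in> C" and c': "c' \<in> C"
    and eq: "n \<otimes> c = n' \<otimes> c'" and Mc: "Mm \<in> carrier_mat e e"
  shows "kron (Px (t \<otimes> n)) (Mm * \<sigma> c) = kron (Px (t \<otimes> n')) (Mm * \<sigma> c')"
proof -
  have nA: "n \<in> carrier A" and n'A: "n' \<in> carrier A" using Nc n n' by auto
  have cA: "c \<in> carrier A" and c'A: "c' \<in> carrier A" using Cc c c' by auto
  define z where "z = inv n' \<otimes> n"
  have zN: "z \<in> Nx" unfolding z_def using N n n' by (simp add: subgroup.m_closed subgroup.m_inv_closed)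
  have z2: "z = c' \<otimes> inv c"
  proof -
    have "inv n' \<otimes> n = inv n' \<otimes> (n \<otimes> c) \<otimes> inv c" using nA n'A cA by (simp add: m_assoc)
    also have "\<dots> = inv n' \<otimes> (n' \<otimes> c') \<otimes> inv c" using eq by simp
    also have "\<dots> = c' \<otimes> inv c" using n'A c'A cA by (simp add: m_assoc[symmetric])
    finally show ?thesis unfolding z_def .
  qed
  have zC: "z \<in> C" unfolding z2 using C c c' by (simp add: subgroup.m_closed subgroup.m_inv_closed)
  have zA: "z \<in> carrier A" using Nc zN .
  have nz: "n = n' \<otimes> z" unfolding z_def using nA n'A by (simp add: m_assoc[symmetric])
  have cz: "c' = z \<otimes> c" unfolding z2 using cA c'A by (simp add: m_assoc)
  have tn': "t \<otimes> n' \<in> K" using t n' NK subgroup.m_closed[OF K] by blast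
  have "Px (t \<otimes> n) = Px ((t \<otimes> n') \<otimes> z)" using nz Kc[OF t] n'A zA by (simp add: m_assoc)
  also have "\<dots> = Px (t \<otimes> n') * Px z" using Pright[OF tn' zN] .
  also have "\<dots> = lz z \<cdot>\<^sub>m Px (t \<otimes> n')" using P_Z[of z] zC zN Pc[OF tn'] mult_smult_one by simp
  finally have 1: "Px (t \<otimes> n) = lz z \<cdot>\<^sub>m Px (t \<otimes> n')" .
  have "Mm * \<sigma> c' = Mm * (\<sigma> z * \<sigma> c)" using cz sig_mult[OF zC c] by simp
  also have "\<dots> = Mm * (lz z \<cdot>\<^sub>m \<sigma> c)" using sig_Z[of z] zC zN sig_carrier[OF c] smult_one_mult by simp
  also have "\<dots> = lz z \<cdot>\<^sub>m (Mm * \<sigma> c)" using Mc sig_carrier[OF c] by (simp add: mult_smult_distrib)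
  finally have 2: "Mm * \<sigma> c' = lz z \<cdot>\<^sub>m (Mm * \<sigma> c)" .
  show ?thesis unfolding 1 2 by (simp add: kron_smult_left kron_smult_right)
qed

end

context side0 begin

lemma chi_val: assumes n: "n \<in> Nx" and c: "c \<in> C" shows "\<chi> (n \<otimes> c) = \<theta>x n * \<psi> c"
proof -
  define p where "p = (SOME p. fst p \<in> Nx \<and> snd p \<in> C \<and> n \<otimes> c = fst p \<otimes> snd p)"
  have ex: "\<exists>p. fst p \<in> Nx \<and> snd p \<in> C \<and> n \<otimes> c = fst p \<otimes> snd p" using n c by (intro exI[of _ "(n,c)"]) simp
  have p: "fst p \<in> Nx" "snd p \<in> C" "n \<otimes> c = fst p \<otimes> snd p"
    using someI_ex[OF ex] unfolding p_def by blast+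
  have mem: "n \<otimes> c \<in> Y" using n c Y_mem by blast
  have chi: "\<chi> (n \<otimes> c) = \<theta>x (fst p) * \<psi> (snd p)"
    unfolding cprod_char_def using mem by (simp add: p_def Let_def)
  have one: "\<one> \<in> K" using subgroup.one_closed[OF K] .
  have kw: "kron (Px (\<one> \<otimes> n)) (1\<^sub>m e * \<sigma> c) = kron (Px (\<one> \<otimes> fst p)) (1\<^sub>m e * \<sigma> (snd p))"
    by (rule kron_wd[OF one n p(1) c p(2) p(3)]) simp
  have "\<theta>x n * \<psi> c = mat_trace (kron (Px n) (\<sigma> c))"
    using Pt psiC n c mat_trace_kron[OF is_repD(1)[OF Pr n] sig_carrier[OF c]] by simp
  also have "\<dots> = mat_trace (kron (Px (fst p)) (\<sigma> (snd p)))"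
    using kw Nc[OF n] Nc[OF p(1)] sig_carrier[OF c] sig_carrier[OF p(2)] by simp
  also have "\<dots> = \<theta>x (fst p) * \<psi> (snd p)"
    using Pt psiC p mat_trace_kron[OF is_repD(1)[OF Pr p(1)] sig_carrier[OF p(2)]] by simp
  finally show ?thesis using chi by simp
qed

lemma chi_out: "x \<notin> Y \<Longrightarrow> \<chi> x = 0" unfolding cprod_char_def by simp

lemma theta_one: "\<theta>x \<one> = of_nat d" using Pt Pone subgroup.one_closed[OF N] by simp

lemma psi_class: assumes c: "c \<in> C" and g: "\<gamma> \<in> C" shows "\<psi> (c \<otimes> \<gamma> \<otimes> inv c) = \<psi> \<gamma>"
proof -
  have ic: "inv c \<in> C" using subgroup.m_inv_closed[OF C c] .
  have cg: "c \<otimes> \<gamma> \<in> C" using subgroup.m_closed[OF C c g] .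
  have "\<sigma> (c \<otimes> \<gamma> \<otimes> inv c) = \<sigma> c * \<sigma> \<gamma> * \<sigma> (inv c)"
    using sig_mult[OF cg ic] sig_mult[OF c g] by simp
  hence "mat_trace (\<sigma> (c \<otimes> \<gamma> \<otimes> inv c)) = mat_trace (\<sigma> (inv c) * (\<sigma> c * \<sigma> \<gamma>))"
    using mat_trace_comm[of "\<sigma> c * \<sigma> \<gamma>" e e "\<sigma> (inv c)"] sig_carrier[OF c] sig_carrier[OF g] sig_carrier[OF ic] by simp
  also have "\<sigma> (inv c) * (\<sigma> c * \<sigma> \<gamma>) = \<sigma> \<gamma>"
    by (rule mat_cancel_assoc[OF sig_carrier[OF ic] sig_carrier[OF c] sig_carrier[OF g] rep_inv(1)[OF is_group C rC c]])
  finally show ?thesis using psiC c g subgroup.m_closed[OF C] ic cg by simp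
qed

lemma norm_iff: "g \<in> normalizer_in A K C \<longleftrightarrow> g \<in> K \<and> normC g"
proof
  assume g: "g \<in> normalizer_in A K C"
  hence gK: "g \<in> K" and im: "(\<lambda>x. g \<otimes> x \<otimes> inv g) ` C = C" unfolding normalizer_in_def by auto
  have gA: "g \<in> carrier A" using Kc[OF gK] .
  have "\<forall>c\<in>C. g \<otimes> c \<otimes> inv g \<in> C \<and> inv g \<otimes> c \<otimes> g \<in> C"
  proof
    fix c assume c: "c \<in> C"
    have 1: "g \<otimes> c \<otimes> inv g \<in> C" using im c by blast
    from c im obtain c' where c': "c' \<in> C" "c = g \<otimes> c' \<otimes> inv g" by blast
    have "inv g \<otimes> c \<otimes> g = c'" using c' gA Cc[OF c'(1)] by (simp add: m_assoc inv_mul_cancel_left)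
    thus "g \<otimes> c \<otimes> inv g \<in> C \<and> inv g \<otimes> c \<otimes> g \<in> C" using 1 c' by simp
  qed
  thus "g \<in> K \<and> normC g" using gK gA unfolding normC_def by blast
next
  assume g: "g \<in> K \<and> normC g"
  hence gA: "g \<in> carrier A" and gc: "\<forall>c\<in>C. g \<otimes> c \<otimes> inv g \<in> C \<and> inv g \<otimes> c \<otimes> g \<in> C" unfolding normC_def by auto
  have "(\<lambda>x. g \<otimes> x \<otimes> inv g) ` C = C"
  proof
    show "(\<lambda>x. g \<otimes> x \<otimes> inv g) ` C \<subseteq> C" using gc by blast
    show "C \<subseteq> (\<lambda>x. g \<otimes> x \<otimes> inv g) ` C"
    proof
      fix c assume c: "c \<in> C"
      have "c = g \<otimes> (inv g \<otimes> c \<otimes> g) \<otimes> inv g" using gA Cc[OF c] by (simp add: m_assoc mul_inv_cancel_left)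
      thus "c \<in> (\<lambda>x. g \<otimes> x \<otimes> inv g) ` C" using gc c by blast
    qed
  qed
  thus "g \<in> normalizer_in A K C" using g unfolding normalizer_in_def by blast
qed

lemma conj_prod: "g \<in> carrier A \<Longrightarrow> n \<in> carrier A \<Longrightarrow> c \<in> carrier A \<Longrightarrow>
  g \<otimes> (n \<otimes> c) \<otimes> inv g = (g \<otimes> n \<otimes> inv g) \<otimes> (g \<otimes> c \<otimes> inv g)"
  by (simp add: m_assoc inv_mul_cancel_left)

lemma Kp_iff: "g \<in> Kp \<longleftrightarrow> g \<in> K \<and> normC g \<and> (\<forall>c\<in>C. \<psi> (g \<otimes> c \<otimes> inv g) = \<psi> c)"
proof
  assume g: "g \<in> Kp"
  hence gN: "g \<in> normalizer_in A K C" and st: "\<forall>x\<in>carrier A. \<chi> (g \<otimes> x \<otimes> inv g) = \<chi> x"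
    unfolding char_stab_def by auto
  hence gK: "g \<in> K" and nc: "normC g" using norm_iff by auto
  have gA: "g \<in> carrier A" using Kc[OF gK] .
  have one: "\<one> \<in> Nx" using subgroup.one_closed[OF N] .
  have "\<forall>c\<in>C. \<psi> (g \<otimes> c \<otimes> inv g) = \<psi> c"
  proof
    fix c assume c: "c \<in> C"
    have gc: "g \<otimes> c \<otimes> inv g \<in> C" using nc c unfolding normC_def by auto
    have "\<chi> (g \<otimes> c \<otimes> inv g) = \<chi> c" using st Cc[OF c] by blast
    moreover have "\<chi> (g \<otimes> c \<otimes> inv g) = \<theta>x \<one> * \<psi> (g \<otimes> c \<otimes> inv g)"
      using chi_val[OF one gc] Cc[OF gc] by simp
    moreover have "\<chi> c = \<theta>x \<one> * \<psi> c" using chi_val[OF one c] Cc[OF c] by simp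
    ultimately show "\<psi> (g \<otimes> c \<otimes> inv g) = \<psi> c" using theta_one d_pos by simp
  qed
  thus "g \<in> K \<and> normC g \<and> (\<forall>c\<in>C. \<psi> (g \<otimes> c \<otimes> inv g) = \<psi> c)" using gK nc by blast
next
  assume g: "g \<in> K \<and> normC g \<and> (\<forall>c\<in>C. \<psi> (g \<otimes> c \<otimes> inv g) = \<psi> c)"
  hence gK: "g \<in> K" and nc: "normC g" and ps: "\<forall>c\<in>C. \<psi> (g \<otimes> c \<otimes> inv g) = \<psi> c" by auto
  have gA: "g \<in> carrier A" using Kc[OF gK] .
  have "\<chi> (g \<otimes> x \<otimes> inv g) = \<chi> x" if x: "x \<in> carrier A" for x
  proof (cases "x \<in> Y")
    case True
    then obtain n c where n: "n \<in> Nx" and c: "c \<in> C" and xe: "x = n \<otimes> c" using Y_mem by blast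
    have gn: "g \<otimes> n \<otimes> inv g \<in> Nx" using N_conj[OF gK n] .
    have gc: "g \<otimes> c \<otimes> inv g \<in> C" using nc c unfolding normC_def by auto
    have "\<chi> (g \<otimes> x \<otimes> inv g) = \<chi> ((g \<otimes> n \<otimes> inv g) \<otimes> (g \<otimes> c \<otimes> inv g))"
      using xe conj_prod gA Nc[OF n] Cc[OF c] by simp
    also have "\<dots> = \<theta>x (g \<otimes> n \<otimes> inv g) * \<psi> (g \<otimes> c \<otimes> inv g)" by (rule chi_val[OF gn gc])
    also have "\<dots> = \<theta>x n * \<psi> c" using theta_inv[OF gK Nc[OF n]] ps c by simp
    also have "\<dots> = \<chi> x" using chi_val[OF n c] xe by simp
    finally show ?thesis .
  next
    case False
    have "g \<otimes> x \<otimes> inv g \<notin> Y"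
    proof
      assume "g \<otimes> x \<otimes> inv g \<in> Y"
      then obtain n c where n: "n \<in> Nx" and c: "c \<in> C" and xe: "g \<otimes> x \<otimes> inv g = n \<otimes> c" using Y_mem by blast
      have ig: "inv g \<in> K" using subgroup.m_inv_closed[OF K gK] .
      have "x = inv g \<otimes> (g \<otimes> x \<otimes> inv g) \<otimes> g" using gA x by (simp add: m_assoc inv_mul_cancel_left)
      also have "\<dots> = (inv g \<otimes> n \<otimes> g) \<otimes> (inv g \<otimes> c \<otimes> g)"
        using xe conj_prod[of "inv g" n c] gA Nc[OF n] Cc[OF c] by simp
      finally have "x = (inv g \<otimes> n \<otimes> g) \<otimes> (inv g \<otimes> c \<otimes> g)" .
      moreover have "inv g \<otimes> n \<otimes> g \<in> Nx" using N_conj'[OF gK n] .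
      moreover have "inv g \<otimes> c \<otimes> g \<in> C" using nc c unfolding normC_def by auto
      ultimately show False using False Y_mem by blast
    qed
    thus ?thesis using False chi_out by simp
  qed
  moreover have "g \<in> normalizer_in A K C" using norm_iff gK nc by blast
  ultimately show "g \<in> Kp" unfolding char_stab_def by blast
qed

end

lemma (in group) comm_conj:
  assumes a: "a \<in> carrier G" and b: "b \<in> carrier G" and ab: "a \<otimes> b = b \<otimes> a"
  shows "a \<otimes> b \<otimes> inv a = b" "inv a \<otimes> b \<otimes> a = b"
proof -
  show "a \<otimes> b \<otimes> inv a = b" using ab a b by (simp add: m_assoc)
  have "inv a \<otimes> b \<otimes> a = inv a \<otimes> (a \<otimes> b)" using ab a b by (simp add: m_assoc)
  thus "inv a \<otimes> b \<otimes> a = b" using a b by (simp add: inv_mul_cancel_left)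
qed

context side0 begin

lemma Y_memI: "n \<in> Nx \<Longrightarrow> c \<in> C \<Longrightarrow> n \<otimes> c \<in> Y"
  unfolding set_mult_def by blast

lemma Y_memE: assumes "y \<in> Y" obtains n c where "n \<in> Nx" "c \<in> C" "y = n \<otimes> c"
  using assms unfolding set_mult_def by blast

lemma Y_sub: "subgroup Y A"
proof (rule subgroupI)
  show "Y \<subseteq> carrier A" using Y_mem Nc Cc by auto
  show "Y \<noteq> {}" using Y_mem subgroup.one_closed[OF N] subgroup.one_closed[OF C] by blast
next
  fix a assume "a \<in> Y"
  then obtain n c where n: "n \<in> Nx" and c: "c \<in> C" and a: "a = n \<otimes> c" using Y_mem by blast
  have "inv a = inv c \<otimes> inv n" using a Nc[OF n] Cc[OF c] by (simp add: inv_mult_group)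
  also have "\<dots> = inv n \<otimes> inv c" using cent subgroup.m_inv_closed[OF C c] subgroup.m_inv_closed[OF N n] by blast
  finally show "inv a \<in> Y" using Y_mem subgroup.m_inv_closed[OF C c] subgroup.m_inv_closed[OF N n] by blast
next
  fix a b assume "a \<in> Y" "b \<in> Y"
  then obtain n c n' c' where n: "n \<in> Nx" and c: "c \<in> C" and a: "a = n \<otimes> c"
    and n': "n' \<in> Nx" and c': "c' \<in> C" and b: "b = n' \<otimes> c'" using Y_mem by metis
  have "a \<otimes> b = n \<otimes> (c \<otimes> n') \<otimes> c'" using a b Nc[OF n] Cc[OF c] Nc[OF n'] Cc[OF c'] by (simp add: m_assoc)
  also have "c \<otimes> n' = n' \<otimes> c" using cent c n' by blast
  also have "n \<otimes> (n' \<otimes> c) \<otimes> c' = (n \<otimes> n') \<otimes> (c \<otimes> c')" using Nc[OF n] Cc[OF c] Nc[OF n'] Cc[OF c'] by (simp add: m_assoc)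
  finally show "a \<otimes> b \<in> Y" using Y_mem subgroup.m_closed[OF N n n'] subgroup.m_closed[OF C c c'] by blast
qed

lemma Yc: "y \<in> Y \<Longrightarrow> y \<in> carrier A" using subgroup.mem_carrier[OF Y_sub] .

lemma Kp_sub: "subgroup Kp A"
proof (rule subgroupI)
  show "Kp \<subseteq> carrier A" using Kp_iff Kc by blast
  show "Kp \<noteq> {}"
  proof -
    have "normC \<one>" unfolding normC_def using Cc by simp
    moreover have "\<forall>c\<in>C. \<psi> (\<one> \<otimes> c \<otimes> inv \<one>) = \<psi> c" using Cc by simp
    ultimately have "\<one> \<in> Kp" using Kp_iff subgroup.one_closed[OF K] by blast
    thus ?thesis by blast
  qed
next
  fix g assume g: "g \<in> Kp"
  hence gK: "g \<in> K" and nc: "normC g" and ps: "\<forall>c\<in>C. \<psi> (g \<otimes> c \<otimes> inv g) = \<psi> c" using Kp_iff by auto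
  have gA: "g \<in> carrier A" using Kc[OF gK] .
  have "normC (inv g)" using nc gA unfolding normC_def by simp
  moreover have "\<forall>c\<in>C. \<psi> (inv g \<otimes> c \<otimes> inv (inv g)) = \<psi> c"
  proof
    fix c assume c: "c \<in> C"
    have c': "inv g \<otimes> c \<otimes> g \<in> C" using nc c unfolding normC_def by auto
    have "\<psi> (g \<otimes> (inv g \<otimes> c \<otimes> g) \<otimes> inv g) = \<psi> (inv g \<otimes> c \<otimes> g)" using ps c' by blast
    moreover have "g \<otimes> (inv g \<otimes> c \<otimes> g) \<otimes> inv g = c" using gA Cc[OF c] by (simp add: m_assoc mul_inv_cancel_left)
    ultimately show "\<psi> (inv g \<otimes> c \<otimes> inv (inv g)) = \<psi> c" using gA by simp
  qed
  ultimately show "inv g \<in> Kp" using Kp_iff subgroup.m_inv_closed[OF K gK] by blast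
next
  fix g h assume g: "g \<in> Kp" and h: "h \<in> Kp"
  hence gK: "g \<in> K" and ncg: "normC g" and psg: "\<forall>c\<in>C. \<psi> (g \<otimes> c \<otimes> inv g) = \<psi> c"
    and hK: "h \<in> K" and nch: "normC h" and psh: "\<forall>c\<in>C. \<psi> (h \<otimes> c \<otimes> inv h) = \<psi> c" using Kp_iff by auto
  have "\<forall>c\<in>C. \<psi> ((g \<otimes> h) \<otimes> c \<otimes> inv (g \<otimes> h)) = \<psi> c"
  proof
    fix c assume c: "c \<in> C"
    have hc: "h \<otimes> c \<otimes> inv h \<in> C" using nch c unfolding normC_def by auto
    have "(g \<otimes> h) \<otimes> c \<otimes> inv (g \<otimes> h) = g \<otimes> (h \<otimes> c \<otimes> inv h) \<otimes> inv g"
      using Kc[OF gK] Kc[OF hK] Cc[OF c] by (simp add: m_assoc inv_mult_group)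
    thus "\<psi> ((g \<otimes> h) \<otimes> c \<otimes> inv (g \<otimes> h)) = \<psi> c" using psg psh hc c by simp
  qed
  thus "g \<otimes> h \<in> Kp" using Kp_iff subgroup.m_closed[OF K gK hK] normC_mult[OF ncg nch] by blast
qed

lemma Kpc: "x \<in> Kp \<Longrightarrow> x \<in> carrier A" using subgroup.mem_carrier[OF Kp_sub] .
lemma KpK: "x \<in> Kp \<Longrightarrow> x \<in> K" using Kp_iff by blast

lemma YK: "Y \<subseteq> K"
proof
  fix y assume "y \<in> Y"
  then obtain n c where n: "n \<in> Nx" and c: "c \<in> C" and ye: "y = n \<otimes> c" using Y_mem by blast
  have "n \<in> K" "c \<in> K" using n c NK CK by auto
  thus "y \<in> K" using ye subgroup.m_closed[OF K] by simp
qed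

lemma Y_Kp: "Y \<subseteq> Kp"
proof
  fix y assume y: "y \<in> Y"
  then obtain n c where n: "n \<in> Nx" and c: "c \<in> C" and ye: "y = n \<otimes> c" using Y_mem by blast
  have nA: "n \<in> carrier A" using Nc[OF n] .
  have ncn1: "n \<otimes> \<gamma> \<otimes> inv n = \<gamma>" if g: "\<gamma> \<in> C" for \<gamma>
  proof -
    have ng: "n \<otimes> \<gamma> = \<gamma> \<otimes> n" using sym[OF bspec[OF bspec[OF cent g] n]] .
    show ?thesis using comm_conj(1)[OF nA Cc[OF g] ng] .
  qed
  have ncn2: "inv n \<otimes> \<gamma> \<otimes> n = \<gamma>" if g: "\<gamma> \<in> C" for \<gamma>
  proof -
    have ng: "n \<otimes> \<gamma> = \<gamma> \<otimes> n" using sym[OF bspec[OF bspec[OF cent g] n]] .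
    show ?thesis using comm_conj(2)[OF nA Cc[OF g] ng] .
  qed
  have ncn: "normC n" unfolding normC_def using nA ncn1 ncn2 by simp
  have ncy: "normC y" using normC_mult[OF ncn normC_C[OF c]] ye by simp
  have "\<forall>\<gamma>\<in>C. \<psi> (y \<otimes> \<gamma> \<otimes> inv y) = \<psi> \<gamma>"
  proof
    fix \<gamma> assume g: "\<gamma> \<in> C"
    have cg: "c \<otimes> \<gamma> \<otimes> inv c \<in> C" using normC_C[OF c] g unfolding normC_def by auto
    have "y \<otimes> \<gamma> \<otimes> inv y = n \<otimes> (c \<otimes> \<gamma> \<otimes> inv c) \<otimes> inv n"
      using ye Nc[OF n] Cc[OF c] Cc[OF g] by (simp add: m_assoc inv_mult_group)
    also have "\<dots> = c \<otimes> \<gamma> \<otimes> inv c" using ncn1[OF cg] .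
    finally show "\<psi> (y \<otimes> \<gamma> \<otimes> inv y) = \<psi> \<gamma>" using psi_class[OF c g] by simp
  qed
  moreover have "y \<in> K" using YK y by blast
  ultimately show "y \<in> Kp" using Kp_iff ncy by simp
qed

lemma Y_conj: assumes g: "g \<in> Kp" and y: "y \<in> Y" shows "g \<otimes> y \<otimes> inv g \<in> Y"
proof -
  obtain n c where n: "n \<in> Nx" and c: "c \<in> C" and ye: "y = n \<otimes> c" using y Y_mem by blast
  have gK: "g \<in> K" and nc: "normC g" using g Kp_iff by auto
  have "g \<otimes> y \<otimes> inv g = (g \<otimes> n \<otimes> inv g) \<otimes> (g \<otimes> c \<otimes> inv g)"
    using conj_prod ye Kc[OF gK] Nc[OF n] Cc[OF c] by simp
  moreover have "g \<otimes> n \<otimes> inv g \<in> Nx" using N_conj[OF gK n] .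
  moreover have "g \<otimes> c \<otimes> inv g \<in> C" using nc c unfolding normC_def by auto
  ultimately show ?thesis using Y_memI by simp
qed

lemma Y_normal: "Y \<lhd> A\<lparr>carrier := Kp\<rparr>"
proof -
  have grp: "group (A\<lparr>carrier := Kp\<rparr>)" using subgroup.subgroup_is_group[OF Kp_sub is_group] .
  have sg: "subgroup Y (A\<lparr>carrier := Kp\<rparr>)" using subgroup_incl[OF Y_sub Kp_sub Y_Kp] .
  have "\<forall>x\<in>carrier (A\<lparr>carrier := Kp\<rparr>). \<forall>h\<in>Y. x \<otimes>\<^bsub>A\<lparr>carrier := Kp\<rparr>\<^esub> h \<otimes>\<^bsub>A\<lparr>carrier := Kp\<rparr>\<^esub> inv\<^bsub>A\<lparr>carrier := Kp\<rparr>\<^esub> x \<in> Y"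
    using Y_conj m_inv_consistent[OF Kp_sub] by simp
  thus ?thesis using group.normal_inv_iff[OF grp] sg by blast
qed

end

locale side = side0 + base +
  fixes tr :: "'a \<Rightarrow> 'a"
  assumes HpKp: "Hp \<subseteq> char_stab A (normalizer_in A K C) (cprod_char A Nx C \<theta>x \<psi>)"
    and KpHp: "char_stab A (normalizer_in A K C) (cprod_char A Nx C \<theta>x \<psi>) \<subseteq> Nx <#> Hp"
    and tr1: "\<forall>x\<in>char_stab A (normalizer_in A K C) (cprod_char A Nx C \<theta>x \<psi>). tr x \<in> Hp \<and> inv (tr x) \<otimes> x \<in> Nx <#> C"
    and tr2: "\<forall>y\<in>Nx <#> C. tr y = \<one>"
    and tr3: "\<forall>x\<in>char_stab A (normalizer_in A K C) (cprod_char A Nx C \<theta>x \<psi>). \<forall>y\<in>Nx <#> C. tr (x \<otimes> y) = tr x"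
begin

abbreviation "F \<equiv> Fm A Nx C Px Mt \<sigma> tr"

lemma HpK: "Hp \<subseteq> K" using HpKp KpK by blast

lemma tr_Hp: "x \<in> Kp \<Longrightarrow> tr x \<in> Hp" using tr1 by blast

lemma dec: assumes x: "x \<in> Kp" obtains n c where "n \<in> Nx" "c \<in> C" "inv (tr x) \<otimes> x = n \<otimes> c"
proof -
  have "inv (tr x) \<otimes> x \<in> Y" using tr1 x by blast
  then obtain n c where "n \<in> Nx" "c \<in> C" "inv (tr x) \<otimes> x = n \<otimes> c" by (rule Y_memE)
  thus ?thesis using that by simp
qed

lemma F_any:
  assumes x: "x \<in> Kp" and n: "n \<in> Nx" and c: "c \<in> C" and e: "inv (tr x) \<otimes> x = n \<otimes> c"
  shows "F x = kron (Px (tr x \<otimes> n)) (Mt (tr x) * \<sigma> c)"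
proof -
  define p where "p = (SOME p. fst p \<in> Nx \<and> snd p \<in> C \<and> inv (tr x) \<otimes> x = fst p \<otimes> snd p)"
  have ex: "\<exists>p. fst p \<in> Nx \<and> snd p \<in> C \<and> inv (tr x) \<otimes> x = fst p \<otimes> snd p"
    using n c e by (intro exI[of _ "(n,c)"]) simp
  have p: "fst p \<in> Nx" "snd p \<in> C" "inv (tr x) \<otimes> x = fst p \<otimes> snd p"
    using someI_ex[OF ex] unfolding p_def by blast+
  have t: "tr x \<in> K" using tr_Hp[OF x] HpK by blast
  have Mc: "Mt (tr x) \<in> carrier_mat e e" using Mt tr_Hp[OF x] by blast
  have "F x = kron (Px (tr x \<otimes> fst p)) (Mt (tr x) * \<sigma> (snd p))"
    unfolding Fm_def p_def Let_def by simp
  also have "\<dots> = kron (Px (tr x \<otimes> n)) (Mt (tr x) * \<sigma> c)"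
    by (rule kron_wd[OF t p(1) n p(2) c _ Mc]) (use p(3) e in simp)
  finally show ?thesis .
qed

lemma F_Y: assumes n: "n \<in> Nx" and c: "c \<in> C" shows "F (n \<otimes> c) = kron (Px n) (\<sigma> c)"
proof -
  have y: "n \<otimes> c \<in> Y" using Y_memI n c by simp
  have t: "tr (n \<otimes> c) = \<one>" using tr2 y by blast
  have "F (n \<otimes> c) = kron (Px (tr (n \<otimes> c) \<otimes> n)) (Mt (tr (n \<otimes> c)) * \<sigma> c)"
    by (rule F_any[OF subsetD[OF Y_Kp y] n c]) (simp add: t Yc[OF y])
  thus ?thesis using t Mt1 Nc[OF n] sig_carrier[OF c] by simp
qed

lemma F_carrier: assumes x: "x \<in> Kp" shows "F x \<in> carrier_mat (d*e) (d*e) \<and> invertible_mat (F x)"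
proof -
  obtain n c where n: "n \<in> Nx" and c: "c \<in> C" and e: "inv (tr x) \<otimes> x = n \<otimes> c" using dec[OF x] by blast
  have t: "tr x \<in> Hp" using tr_Hp[OF x] .
  have tn: "tr x \<otimes> n \<in> K" using subgroup.m_closed[OF K] HpK t NK n by blast
  have M: "Mt (tr x) \<in> carrier_mat e e" "invertible_mat (Mt (tr x))" using Mt t by blast+
  have Bc: "Mt (tr x) * \<sigma> c \<in> carrier_mat e e" using M sig_carrier[OF c] by simp
  have Bi: "invertible_mat (Mt (tr x) * \<sigma> c)" using invertible_mult[OF M(1) sig_carrier[OF c] M(2) sig_invertible[OF c]] .
  have "kron (Px (tr x \<otimes> n)) (Mt (tr x) * \<sigma> c) \<in> carrier_mat (d*e) (d*e)" by (rule kron_carrier[OF Pc[OF tn] Bc])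
  moreover have "invertible_mat (kron (Px (tr x \<otimes> n)) (Mt (tr x) * \<sigma> c))" by (rule kron_invertible[OF Pc[OF tn] Bc Pinv[OF tn] Bi])
  ultimately show ?thesis unfolding F_any[OF x n c e] by simp
qed

end

context side begin

lemma Fc: "x \<in> Kp \<Longrightarrow> F x \<in> carrier_mat (d*e) (d*e)" using F_carrier by blast
lemma Fi: "x \<in> Kp \<Longrightarrow> invertible_mat (F x)" using F_carrier by blast

lemma tr_A: "x \<in> Kp \<Longrightarrow> tr x \<in> carrier A" using tr_Hp HpK Kc by blast

lemma F_right:
  assumes x: "x \<in> Kp" and y: "y \<in> Y" shows "F (x \<otimes> y) = F x * F y"
proof -
  obtain n c where n: "n \<in> Nx" and c: "c \<in> C" and e: "inv (tr x) \<otimes> x = n \<otimes> c" using dec[OF x] by blast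
  obtain n1 c1 where n1: "n1 \<in> Nx" and c1: "c1 \<in> C" and ye: "y = n1 \<otimes> c1" using y by (rule Y_memE)
  define t where "t = tr x"
  have tA: "t \<in> carrier A" using tr_A[OF x] unfolding t_def .
  have tH: "t \<in> Hp" using tr_Hp[OF x] unfolding t_def .
  have tK: "t \<in> K" using tH HpK by blast
  have xy: "x \<otimes> y \<in> Kp" using subgroup.m_closed[OF Kp_sub x subsetD[OF Y_Kp y]] .
  have txy: "tr (x \<otimes> y) = t" using tr3 x y unfolding t_def by blast
  have cn: "c \<otimes> n1 = n1 \<otimes> c" using cent c n1 by blast
  have "inv t \<otimes> (x \<otimes> y) = (inv t \<otimes> x) \<otimes> (n1 \<otimes> c1)" using tA Kpc[OF x] Yc[OF y] ye by (simp add: m_assoc)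
  also have "\<dots> = n \<otimes> (c \<otimes> n1) \<otimes> c1" using e Nc[OF n] Cc[OF c] Nc[OF n1] Cc[OF c1] unfolding t_def by (simp add: m_assoc)
  also have "\<dots> = (n \<otimes> n1) \<otimes> (c \<otimes> c1)" using cn Nc[OF n] Cc[OF c] Nc[OF n1] Cc[OF c1] by (simp add: m_assoc)
  finally have e2: "inv (tr (x \<otimes> y)) \<otimes> (x \<otimes> y) = (n \<otimes> n1) \<otimes> (c \<otimes> c1)" using txy by simp
  have nn: "n \<otimes> n1 \<in> Nx" using subgroup.m_closed[OF N n n1] .
  have cc: "c \<otimes> c1 \<in> C" using subgroup.m_closed[OF C c c1] .
  have tn: "t \<otimes> n \<in> K" using subgroup.m_closed[OF K tK] NK n by blast
  have M: "Mt t \<in> carrier_mat e e" using Mt tH by blast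
  have "F (x \<otimes> y) = kron (Px (t \<otimes> (n \<otimes> n1))) (Mt t * \<sigma> (c \<otimes> c1))"
    using F_any[OF xy nn cc e2] txy by simp
  also have "Px (t \<otimes> (n \<otimes> n1)) = Px (t \<otimes> n) * Px n1"
    using Pright[OF tn n1] tA Nc[OF n] Nc[OF n1] by (simp add: m_assoc)
  also have "Mt t * \<sigma> (c \<otimes> c1) = (Mt t * \<sigma> c) * \<sigma> c1"
    using sig_mult[OF c c1] M sig_carrier[OF c] sig_carrier[OF c1] by (simp add: assoc_mult_mat[of _ e e _ e _ e])
  also have "kron (Px (t \<otimes> n) * Px n1) ((Mt t * \<sigma> c) * \<sigma> c1) = kron (Px (t \<otimes> n)) (Mt t * \<sigma> c) * kron (Px n1) (\<sigma> c1)"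
    using kron_mult[OF Pc[OF tn] _ is_repD(1)[OF Pr n1] sig_carrier[OF c1], of "Mt t * \<sigma> c"] M sig_carrier[OF c] by simp
  also have "\<dots> = F x * F y" using F_any[OF x n c e] F_Y[OF n1 c1] ye unfolding t_def by simp
  finally show ?thesis .
qed

lemma F_left:
  assumes x: "x \<in> Kp" and y: "y \<in> Y" shows "F (y \<otimes> x) = F y * F x"
proof -
  obtain n c where n: "n \<in> Nx" and c: "c \<in> C" and e: "inv (tr x) \<otimes> x = n \<otimes> c" using dec[OF x] by blast
  obtain n1 c1 where n1: "n1 \<in> Nx" and c1: "c1 \<in> C" and ye: "y = n1 \<otimes> c1" using y by (rule Y_memE)
  define t where "t = tr x"
  have tA: "t \<in> carrier A" using tr_A[OF x] unfolding t_def .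
  have tH: "t \<in> Hp" using tr_Hp[OF x] unfolding t_def .
  have tK: "t \<in> K" using tH HpK by blast
  have xA: "x \<in> carrier A" using Kpc[OF x] .
  have ix: "inv x \<in> Kp" using subgroup.m_inv_closed[OF Kp_sub x] .
  have w: "inv x \<otimes> y \<otimes> x \<in> Y" using Y_conj[OF ix y] xA by simp
  have yx: "y \<otimes> x = x \<otimes> (inv x \<otimes> y \<otimes> x)" using xA Yc[OF y] by (simp add: m_assoc mul_inv_cancel_left)
  have txy: "tr (y \<otimes> x) = t" using tr3 x w yx unfolding t_def by simp
  have yxK: "y \<otimes> x \<in> Kp" using subgroup.m_closed[OF Kp_sub subsetD[OF Y_Kp y] x] .
  define n1' where "n1' = inv t \<otimes> n1 \<otimes> t"
  define c1' where "c1' = inv t \<otimes> c1 \<otimes> t"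
  have n1': "n1' \<in> Nx" unfolding n1'_def using N_conj'[OF tK n1] .
  have c1': "c1' \<in> C" unfolding c1'_def using Hp_norm tH c1 by blast
  have cn: "c1' \<otimes> n = n \<otimes> c1'" using cent c1' n by blast
  have xe: "x = t \<otimes> (n \<otimes> c)" using e tA xA unfolding t_def by (metis mul_inv_cancel_left)
  have "inv t \<otimes> (y \<otimes> x) = (inv t \<otimes> n1 \<otimes> t) \<otimes> (inv t \<otimes> c1 \<otimes> t) \<otimes> (n \<otimes> c)"
    using xe ye tA Nc[OF n1] Cc[OF c1] Nc[OF n] Cc[OF c] by (simp add: m_assoc mul_inv_cancel_left)
  also have "\<dots> = n1' \<otimes> (c1' \<otimes> n) \<otimes> c"
    unfolding n1'_def c1'_def using tA Nc[OF n1] Cc[OF c1] Nc[OF n] Cc[OF c] by (simp add: m_assoc)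
  also have "\<dots> = (n1' \<otimes> n) \<otimes> (c1' \<otimes> c)"
    using cn Nc[OF n1'] Cc[OF c1'] Nc[OF n] Cc[OF c] by (simp add: m_assoc)
  finally have e2: "inv (tr (y \<otimes> x)) \<otimes> (y \<otimes> x) = (n1' \<otimes> n) \<otimes> (c1' \<otimes> c)" using txy by simp
  have nn: "n1' \<otimes> n \<in> Nx" using subgroup.m_closed[OF N n1' n] .
  have cc: "c1' \<otimes> c \<in> C" using subgroup.m_closed[OF C c1' c] .
  have tn: "t \<otimes> n \<in> K" using subgroup.m_closed[OF K tK] NK n by blast
  have M: "Mt t \<in> carrier_mat e e" using Mt tH by blast
  have "F (y \<otimes> x) = kron (Px (t \<otimes> (n1' \<otimes> n))) (Mt t * \<sigma> (c1' \<otimes> c))"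
    using F_any[OF yxK nn cc e2] txy by simp
  also have "t \<otimes> (n1' \<otimes> n) = n1 \<otimes> (t \<otimes> n)"
    unfolding n1'_def using tA Nc[OF n1] Nc[OF n] by (simp add: m_assoc mul_inv_cancel_left)
  also have "Px (n1 \<otimes> (t \<otimes> n)) = Px n1 * Px (t \<otimes> n)" using Pleft[OF tn n1] .
  also have "Mt t * \<sigma> (c1' \<otimes> c) = (Mt t * \<sigma> c1') * \<sigma> c"
    using sig_mult[OF c1' c] M sig_carrier[OF c] sig_carrier[OF c1'] by (simp add: assoc_mult_mat[of _ e e _ e _ e])
  also have "Mt t * \<sigma> c1' = \<sigma> c1 * Mt t"
  proof -
    have "\<sigma> (t \<otimes> c1' \<otimes> inv t) * Mt t = Mt t * \<sigma> c1'" using Mt tH c1' by blast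
    moreover have "t \<otimes> c1' \<otimes> inv t = c1" unfolding c1'_def using tA Cc[OF c1] by (simp add: m_assoc mul_inv_cancel_left)
    ultimately show ?thesis by simp
  qed
  also have "(\<sigma> c1 * Mt t) * \<sigma> c = \<sigma> c1 * (Mt t * \<sigma> c)"
    using M sig_carrier[OF c] sig_carrier[OF c1] by (simp add: assoc_mult_mat[of _ e e _ e _ e])
  also have "kron (Px n1 * Px (t \<otimes> n)) (\<sigma> c1 * (Mt t * \<sigma> c)) = kron (Px n1) (\<sigma> c1) * kron (Px (t \<otimes> n)) (Mt t * \<sigma> c)"
    using kron_mult[OF is_repD(1)[OF Pr n1] sig_carrier[OF c1] Pc[OF tn], of "Mt t * \<sigma> c"] M sig_carrier[OF c] by simp
  also have "\<dots> = F y * F x" using F_any[OF x n c e] F_Y[OF n1 c1] ye unfolding t_def by simp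
  finally show ?thesis .
qed

end

context side begin

lemma F_rep: "is_rep A Y (d*e) F"
  unfolding is_rep_def
proof (intro conjI ballI)
  fix g assume "g \<in> Y" thus "F g \<in> carrier_mat (d*e) (d*e)" using Fc Y_Kp by blast
next
  have "F (\<one> \<otimes> \<one>) = kron (Px \<one>) (\<sigma> \<one>)" using F_Y subgroup.one_closed[OF N] subgroup.one_closed[OF C] by blast
  thus "F \<one> = 1\<^sub>m (d*e)" using Pone sig_one kron_one by simp
next
  fix g h assume "g \<in> Y" "h \<in> Y" thus "F (g \<otimes> h) = F g * F h" using F_right Y_Kp by blast
qed

lemma F_trace: "y \<in> Y \<Longrightarrow> \<chi> y = mat_trace (F y)"
proof -
  assume "y \<in> Y"
  then obtain n c where n: "n \<in> Nx" and c: "c \<in> C" and ye: "y = n \<otimes> c" by (rule Y_memE)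
  have "mat_trace (F y) = mat_trace (Px n) * mat_trace (\<sigma> c)"
    using F_Y[OF n c] ye mat_trace_kron[OF is_repD(1)[OF Pr n] sig_carrier[OF c]] by simp
  also have "\<dots> = \<chi> y" using chi_val[OF n c] ye Pt psiC n c by simp
  finally show ?thesis by simp
qed

lemma F_irr: "irreducible_rep A Y (d*e) F"
proof (rule kron_irr[OF is_group N finN C finC P_irr irrC F_rep])
  show "\<forall>n\<in>Nx. \<forall>c\<in>C. n \<otimes> c \<in> Y \<and> F (n \<otimes> c) = kron (Px n) (\<sigma> c)"
    using Y_memI F_Y by blast
qed

lemma chi_Irr: "\<chi> \<in> Irr A Y"
  unfolding Irr_def using F_irr F_trace chi_out by blast

lemma chi_stab: "g \<in> Kp \<Longrightarrow> x \<in> carrier A \<Longrightarrow> \<chi> (g \<otimes> x \<otimes> inv g) = \<chi> x"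
  unfolding char_stab_def by blast

lemma side_triple: "char_triple A Kp Y \<chi>"
  unfolding char_triple_def using Kp_sub Y_normal chi_Irr chi_stab by blast

lemma F_conj: assumes g: "g \<in> Kp" and w: "w \<in> Y" shows "F g * F w = F (g \<otimes> w \<otimes> inv g) * F g"
proof -
  have gw: "g \<otimes> w \<otimes> inv g \<in> Y" using Y_conj[OF g w] .
  have "g \<otimes> w = (g \<otimes> w \<otimes> inv g) \<otimes> g" using Kpc[OF g] Yc[OF w] by (simp add: m_assoc)
  hence "F (g \<otimes> w) = F (g \<otimes> w \<otimes> inv g) * F g" using F_left[OF g gw] by simp
  thus ?thesis using F_right[OF g w] by simp
qed

lemma F_schur: assumes X: "X \<in> carrier_mat (d*e) (d*e)" and comm: "\<forall>w\<in>Y. X * F w = F w * X"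
  shows "\<exists>a. X = a \<cdot>\<^sub>m 1\<^sub>m (d*e)"
  using schur[OF F_irr X] comm by simp

lemma F_factor: assumes x: "x \<in> Kp" and y: "y \<in> Kp" shows "\<exists>a. F x * F y = a \<cdot>\<^sub>m F (x \<otimes> y)"
proof -
  define g where "g = x \<otimes> y"
  define D where "D = d*e"
  have g: "g \<in> Kp" unfolding g_def using subgroup.m_closed[OF Kp_sub x y] .
  have gA: "g \<in> carrier A" using Kpc[OF g] .
  obtain Gi where Gi: "Gi \<in> carrier_mat D D" "F g * Gi = 1\<^sub>m D" "Gi * F g = 1\<^sub>m D"
    using invertible_matD[OF Fi[OF g] Fc[OF g]] unfolding D_def by blast
  have Fx: "F x \<in> carrier_mat D D" and Fy: "F y \<in> carrier_mat D D" and Fg: "F g \<in> carrier_mat D D"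
    using Fc x y g unfolding D_def by auto
  define X where "X = F x * F y * Gi"
  have Xc: "X \<in> carrier_mat D D" unfolding X_def using Fx Fy Gi by simp
  have comm: "\<forall>w\<in>Y. X * F w = F w * X"
  proof
    fix w assume w: "w \<in> Y"
    define w0 where "w0 = inv g \<otimes> w \<otimes> g"
    have w0: "w0 \<in> Y" unfolding w0_def using Y_conj[OF subgroup.m_inv_closed[OF Kp_sub g] w] gA by simp
    have Fw: "F w \<in> carrier_mat D D" and Fw0: "F w0 \<in> carrier_mat D D" using Fc Y_Kp w w0 unfolding D_def by auto
    have gw0: "g \<otimes> w0 \<otimes> inv g = w" unfolding w0_def using gA Yc[OF w] by (simp add: m_assoc mul_inv_cancel_left)
    have c1: "F g * F w0 = F w * F g" using F_conj[OF g w0] gw0 by simp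
    have c2: "Gi * F w = F w0 * Gi"
    proof -
      have "Gi * F w = Gi * (F w * (F g * Gi))" using Gi Fw by simp
      also have "\<dots> = Gi * ((F w * F g) * Gi)" using Gi Fw Fg by (simp add: assoc_mult_mat[of _ D D _ D _ D])
      also have "\<dots> = Gi * ((F g * F w0) * Gi)" using c1 by simp
      also have "\<dots> = Gi * (F g * (F w0 * Gi))" using Gi Fw0 Fg by (simp add: assoc_mult_mat[of _ D D _ D _ D])
      also have "\<dots> = F w0 * Gi" by (rule mat_cancel_assoc[OF Gi(1) Fg _ Gi(3), of _ D]) (use Fw0 Gi in simp)
      finally show ?thesis .
    qed
    define w1 where "w1 = y \<otimes> w0 \<otimes> inv y"
    have w1: "w1 \<in> Y" unfolding w1_def using Y_conj[OF y w0] .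
    have Fw1: "F w1 \<in> carrier_mat D D" using Fc Y_Kp w1 unfolding D_def by auto
    have c3: "F y * F w0 = F w1 * F y" using F_conj[OF y w0] unfolding w1_def by simp
    have xw1: "x \<otimes> w1 \<otimes> inv x = w"
      unfolding w1_def using gw0 Kpc[OF x] Kpc[OF y] Yc[OF w0] unfolding g_def by (simp add: m_assoc inv_mult_group)
    have c4: "F x * F w1 = F w * F x" using F_conj[OF x w1] xw1 by simp
    have "X * F w = F x * F y * (Gi * F w)" unfolding X_def using Fx Fy Gi Fw by (simp add: assoc_mult_mat[of _ D D _ D _ D])
    also have "\<dots> = F x * (F y * F w0) * Gi" using c2 Fx Fy Gi Fw0 by (simp add: assoc_mult_mat[of _ D D _ D _ D])
    also have "\<dots> = F x * (F w1 * F y) * Gi" using c3 by simp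
    also have "\<dots> = (F x * F w1) * F y * Gi" using Fx Fy Gi Fw1 by (simp add: assoc_mult_mat[of _ D D _ D _ D])
    also have "\<dots> = (F w * F x) * F y * Gi" using c4 by simp
    also have "\<dots> = F w * X" unfolding X_def using Fx Fy Gi Fw by (simp add: assoc_mult_mat[of _ D D _ D _ D])
    finally show "X * F w = F w * X" .
  qed
  obtain a where a: "X = a \<cdot>\<^sub>m 1\<^sub>m D" using F_schur Xc comm unfolding D_def by blast
  have "F x * F y = X * F g" unfolding X_def using Fx Fy Gi Fg by (simp add: assoc_mult_mat[of _ D D _ D _ D])
  also have "\<dots> = a \<cdot>\<^sub>m F g" using a Fg smult_one_mult by simp
  finally show ?thesis unfolding g_def by blast
qed

definition aF :: "'a \<times> 'a \<Rightarrow> complex" where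
  "aF p = (SOME a. F (fst p) * F (snd p) = a \<cdot>\<^sub>m F (fst p \<otimes> snd p))"

lemma aF: "x \<in> Kp \<Longrightarrow> y \<in> Kp \<Longrightarrow> F x * F y = aF (x, y) \<cdot>\<^sub>m F (x \<otimes> y)"
  unfolding aF_def using someI_ex[OF F_factor] by simp

lemma side_proj: "proj_rep_assoc A Kp Y \<chi> F aF"
  unfolding proj_rep_assoc_def
proof (intro exI[of _ "d*e"] conjI ballI)
  have "\<chi> (\<one> \<otimes> \<one>) = \<theta>x \<one> * \<psi> \<one>" using chi_val subgroup.one_closed[OF N] subgroup.one_closed[OF C] by blast
  moreover have "\<psi> \<one> = of_nat e" using psiC sig_one subgroup.one_closed[OF C] by simp
  ultimately show "of_nat (d*e) = \<chi> \<one>" using theta_one by simp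
  show "is_rep A Y (d*e) F" by (rule F_rep)
next
  fix x assume "x \<in> Kp" thus "F x \<in> carrier_mat (d*e) (d*e)" "invertible_mat (F x)" using Fc Fi by auto
next
  fix x y assume "x \<in> Kp" "y \<in> Kp" thus "F x * F y = aF (x, y) \<cdot>\<^sub>m F (x \<otimes> y)" by (rule aF)
next
  fix n assume "n \<in> Y" thus "\<chi> n = mat_trace (F n)" by (rule F_trace)
next
  fix x n assume "x \<in> Kp" "n \<in> Y"
  thus "F (x \<otimes> n) = F x * F n" "F (n \<otimes> x) = F n * F x" using F_right F_left by auto
qed

lemma F_central: assumes g: "g \<in> Kp" and c: "\<forall>y\<in>Y. g \<otimes> y = y \<otimes> g"
  shows "\<exists>w. F g = w \<cdot>\<^sub>m 1\<^sub>m (d*e)"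
proof (rule F_schur[OF Fc[OF g]])
  show "\<forall>w\<in>Y. F g * F w = F w * F g" using F_right[OF g] F_left[OF g] c by metis
qed

end

locale main = base0 +
  fixes G N H M :: "'a set" and \<theta> \<phi> \<nu> \<psi> :: "'a \<Rightarrow> complex" and P P' :: "'a \<Rightarrow> complex mat"
    and \<alpha> \<alpha>' :: "'a \<times> 'a \<Rightarrow> complex" and d d' :: nat
  assumes ctG: "char_triple A G N \<theta>" and ctH: "char_triple A H M \<phi>"
    and GNH: "G = N <#> H" and MNH: "M = N \<inter> H" and cenH: "centralizer_in A G N \<subseteq> H"
    and PGd: "\<forall>x\<in>G. P x \<in> carrier_mat d d \<and> invertible_mat (P x)"
    and PGm: "\<forall>x\<in>G. \<forall>y\<in>G. P x * P y = \<alpha> (x, y) \<cdot>\<^sub>m P (x \<otimes> y)"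
    and PGr: "is_rep A N d P" and PGt: "\<forall>n\<in>N. \<theta> n = mat_trace (P n)"
    and PGa: "\<forall>x\<in>G. \<forall>n\<in>N. P (x \<otimes> n) = P x * P n \<and> P (n \<otimes> x) = P n * P x"
    and PHd: "\<forall>x\<in>H. P' x \<in> carrier_mat d' d' \<and> invertible_mat (P' x)"
    and PHm: "\<forall>x\<in>H. \<forall>y\<in>H. P' x * P' y = \<alpha>' (x, y) \<cdot>\<^sub>m P' (x \<otimes> y)"
    and PHr: "is_rep A M d' P'" and PHt: "\<forall>n\<in>M. \<phi> n = mat_trace (P' n)"
    and PHa: "\<forall>x\<in>H. \<forall>n\<in>M. P' (x \<otimes> n) = P' x * P' n \<and> P' (n \<otimes> x) = P' n * P' x"
    and aa: "\<forall>x\<in>H. \<forall>y\<in>H. \<alpha> (x, y) = \<alpha>' (x, y)"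
    and sc: "\<forall>c\<in>centralizer_in A G N. \<exists>z. P c = z \<cdot>\<^sub>m 1\<^sub>m (dim_row (P c)) \<and> P' c = z \<cdot>\<^sub>m 1\<^sub>m (dim_row (P' c))"
    and CG: "C \<subseteq> centralizer_in A G N"
    and nu: "\<nu> \<in> Irr A (C \<inter> N)" and lo1: "lies_over (C \<inter> N) \<theta> \<nu>" and lo2: "lies_over (C \<inter> N) \<phi> \<nu>"
    and psiC: "\<forall>c\<in>C. \<psi> c = mat_trace (\<sigma> c)" and lo3: "lies_over (C \<inter> N) \<psi> \<nu>"
begin

lemma CcenN: "\<forall>c\<in>C. \<forall>n\<in>N. c \<otimes> n = n \<otimes> c" using CG unfolding centralizer_in_def by blast
lemma CGs: "C \<subseteq> G" using CG unfolding centralizer_in_def by blast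
lemma CH: "C \<subseteq> H" using CG cenH by blast
lemma CM: "C \<inter> M = C \<inter> N" using MNH CH by blast

sublocale Gs0: side0 A C e \<sigma> G N \<theta> P \<alpha> d \<psi> \<nu>
  by unfold_locales (use ctG PGd PGm PGr PGt PGa CGs CcenN psiC nu lo1 lo3 in auto)

lemma CcenM: "\<forall>c\<in>C. \<forall>n\<in>M. c \<otimes> n = n \<otimes> c" using CcenN MNH by blast

sublocale Hs0: side0 A C e \<sigma> H M \<phi> P' \<alpha>' d' \<psi> \<nu>
  by unfold_locales (use ctH PHd PHm PHr PHt PHa CH CcenM psiC nu lo2 lo3 CM in auto)

lemma HG: "H \<subseteq> G"
proof
  fix h assume h: "h \<in> H"
  have "\<one> \<otimes> h = h" using Hs0.Kc[OF h] by simp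
  thus "h \<in> G" using GNH h subgroup.one_closed[OF Gs0.N] unfolding set_mult_def by force
qed

lemma HqGq: "Hs0.Kp \<subseteq> Gs0.Kp"
  using Hs0.Kp_iff Gs0.Kp_iff HG by blast

lemma GqNHq: "Gs0.Kp \<subseteq> N <#> Hs0.Kp"
proof
  fix g assume g: "g \<in> Gs0.Kp"
  hence gG: "g \<in> G" and ncg: "normC g" and psg: "\<forall>c\<in>C. \<psi> (g \<otimes> c \<otimes> inv g) = \<psi> c" using Gs0.Kp_iff by auto
  obtain n h where n: "n \<in> N" and h: "h \<in> H" and ge: "g = n \<otimes> h" using gG GNH unfolding set_mult_def by blast
  have in_: "inv n \<in> Gs0.Kp"
  proof -
    have "inv n \<otimes> \<one> \<in> Gs0.Y" using Gs0.Y_memI subgroup.m_inv_closed[OF Gs0.N n] subgroup.one_closed[OF C] by blast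
    thus ?thesis using Gs0.Y_Kp Gs0.Nc[OF n] by auto
  qed
  have "h = inv n \<otimes> g" using ge Gs0.Nc[OF n] Hs0.Kc[OF h] by (simp add: inv_mul_cancel_left)
  hence hG: "h \<in> Gs0.Kp" using subgroup.m_closed[OF Gs0.Kp_sub in_ g] by simp
  hence "h \<in> Hs0.Kp" using Gs0.Kp_iff Hs0.Kp_iff h by blast
  thus "g \<in> N <#> Hs0.Kp" using n ge unfolding set_mult_def by blast
qed

lemma Hq_sub: "subgroup Hs0.Kp A" using Hs0.Kp_sub .

lemma Hq_norm: "\<forall>h\<in>Hs0.Kp. \<forall>c\<in>C. h \<otimes> c \<otimes> inv h \<in> C \<and> inv h \<otimes> c \<otimes> h \<in> C"
  using Hs0.Kp_iff unfolding normC_def by blast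

lemma Mt_exists:
  assumes t: "t \<in> Hs0.Kp"
  shows "\<exists>T. T \<in> carrier_mat e e \<and> invertible_mat T \<and> (\<forall>c\<in>C. \<sigma> (t \<otimes> c \<otimes> inv t) * T = T * \<sigma> c)"
proof -
  have nt: "normC t" and ps: "\<forall>c\<in>C. \<psi> (t \<otimes> c \<otimes> inv t) = \<psi> c" using Hs0.Kp_iff t by auto
  have tA: "t \<in> carrier A" using nt unfolding normC_def by auto
  have tc: "\<And>c. c \<in> C \<Longrightarrow> t \<otimes> c \<otimes> inv t \<in> C" using nt unfolding normC_def by auto
  have r: "is_rep A C e (\<lambda>c. \<sigma> (t \<otimes> c \<otimes> inv t))"
    unfolding is_rep_def
  proof (intro conjI ballI)
    fix g assume "g \<in> C" thus "\<sigma> (t \<otimes> g \<otimes> inv t) \<in> carrier_mat e e" using sig_carrier tc by blast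
  next
    show "\<sigma> (t \<otimes> \<one> \<otimes> inv t) = 1\<^sub>m e" using tA sig_one by simp
  next
    fix g h assume g: "g \<in> C" and h: "h \<in> C"
    have "t \<otimes> (g \<otimes> h) \<otimes> inv t = (t \<otimes> g \<otimes> inv t) \<otimes> (t \<otimes> h \<otimes> inv t)"
      using tA Cc[OF g] Cc[OF h] by (simp add: m_assoc inv_mul_cancel_left)
    thus "\<sigma> (t \<otimes> (g \<otimes> h) \<otimes> inv t) = \<sigma> (t \<otimes> g \<otimes> inv t) * \<sigma> (t \<otimes> h \<otimes> inv t)"
      using sig_mult[OF tc[OF g] tc[OF h]] by simp
  qed
  have tr: "\<forall>k\<in>C. mat_trace (\<sigma> (t \<otimes> k \<otimes> inv t)) = mat_trace (\<sigma> k)"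
    using ps psiC tc by metis
  from equiv_rep[OF is_group C finC irrC r tr] show ?thesis by blast
qed

definition Mtm :: "'a \<Rightarrow> complex mat" where
  "Mtm t = (if t = \<one> then 1\<^sub>m e else (SOME T. T \<in> carrier_mat e e \<and> invertible_mat T \<and> (\<forall>c\<in>C. \<sigma> (t \<otimes> c \<otimes> inv t) * T = T * \<sigma> c)))"

lemma Mtm: "\<forall>t\<in>Hs0.Kp. Mtm t \<in> carrier_mat e e \<and> invertible_mat (Mtm t) \<and> (\<forall>c\<in>C. \<sigma> (t \<otimes> c \<otimes> inv t) * Mtm t = Mtm t * \<sigma> c)"
proof
  fix t assume t: "t \<in> Hs0.Kp"
  show "Mtm t \<in> carrier_mat e e \<and> invertible_mat (Mtm t) \<and> (\<forall>c\<in>C. \<sigma> (t \<otimes> c \<otimes> inv t) * Mtm t = Mtm t * \<sigma> c)"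
  proof (cases "t = \<one>")
    case True
    have "invertible_mat (1\<^sub>m e :: complex mat)" by (rule invertible_matI[of _ e "1\<^sub>m e"]) auto
    moreover have "\<forall>c\<in>C. \<sigma> (\<one> \<otimes> c \<otimes> inv \<one>) * 1\<^sub>m e = 1\<^sub>m e * \<sigma> c"
    proof
      fix c assume c: "c \<in> C"
      have "\<sigma> c \<in> carrier_mat e e" using sig_carrier[OF c] .
      thus "\<sigma> (\<one> \<otimes> c \<otimes> inv \<one>) * 1\<^sub>m e = 1\<^sub>m e * \<sigma> c" using Cc[OF c] by simp
    qed
    ultimately show ?thesis using True unfolding Mtm_def by simp
  next
    case False
    thus ?thesis unfolding Mtm_def using someI_ex[OF Mt_exists[OF t]] by simp
  qed
qed

lemma Mtm1: "Mtm \<one> = 1\<^sub>m e" unfolding Mtm_def by simp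

definition trm :: "'a \<Rightarrow> 'a" where
  "trm x = (if x \<in> Gs0.Y then \<one> else (SOME t. t \<in> Hs0.Kp \<and> inv t \<otimes> x \<in> Gs0.Y))"

end

context main begin

lemma YM_Y: "Hs0.Y \<subseteq> Gs0.Y"
  unfolding set_mult_def using MNH by blast

lemma Y_Hq: "Gs0.Y \<inter> Hs0.Kp \<subseteq> Hs0.Y"
proof
  fix y assume y: "y \<in> Gs0.Y \<inter> Hs0.Kp"
  then obtain n c where n: "n \<in> N" and c: "c \<in> C" and ye: "y = n \<otimes> c" using Gs0.Y_memE by blast
  have yH: "y \<in> H" using y Hs0.KpK by blast
  have cH: "inv c \<in> H" using CH c subgroup.m_inv_closed[OF Hs0.K] by blast
  have "n = y \<otimes> inv c" using ye Gs0.Nc[OF n] Cc[OF c] by (simp add: m_assoc)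
  hence "n \<in> H" using subgroup.m_closed[OF Hs0.K yH cH] by simp
  hence "n \<in> M" using MNH n by blast
  thus "y \<in> Hs0.Y" using Hs0.Y_memI c ye by simp
qed

lemma tr_ex: assumes x: "x \<in> Gs0.Kp" shows "\<exists>t. t \<in> Hs0.Kp \<and> inv t \<otimes> x \<in> Gs0.Y"
proof -
  obtain n h where n: "n \<in> N" and h: "h \<in> Hs0.Kp" and xe: "x = n \<otimes> h" using GqNHq x unfolding set_mult_def by blast
  have hG: "h \<in> G" using h HqGq Gs0.KpK by blast
  have hA: "h \<in> carrier A" using Gs0.Kc[OF hG] .
  have "inv h \<otimes> x = inv h \<otimes> n \<otimes> h" using xe hA Gs0.Nc[OF n] by (simp add: m_assoc)
  moreover have "inv h \<otimes> n \<otimes> h \<in> N" using Gs0.N_conj'[OF hG n] .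
  moreover have "(inv h \<otimes> n \<otimes> h) \<otimes> \<one> \<in> Gs0.Y"
    using Gs0.Y_memI[OF Gs0.N_conj'[OF hG n] subgroup.one_closed[OF C]] .
  ultimately have "inv h \<otimes> x \<in> Gs0.Y" using Gs0.Nc[OF Gs0.N_conj'[OF hG n]] by simp
  thus ?thesis using h by blast
qed

lemma trG1: "\<forall>x\<in>Gs0.Kp. trm x \<in> Hs0.Kp \<and> inv (trm x) \<otimes> x \<in> Gs0.Y"
proof
  fix x assume x: "x \<in> Gs0.Kp"
  show "trm x \<in> Hs0.Kp \<and> inv (trm x) \<otimes> x \<in> Gs0.Y"
  proof (cases "x \<in> Gs0.Y")
    case True
    thus ?thesis unfolding trm_def using subgroup.one_closed[OF Hq_sub] Gs0.Yc by simp
  next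
    case False
    thus ?thesis unfolding trm_def using someI_ex[OF tr_ex[OF x]] by simp
  qed
qed

lemma trG2: "\<forall>y\<in>Gs0.Y. trm y = \<one>" unfolding trm_def by simp

lemma trG3: "\<forall>x\<in>Gs0.Kp. \<forall>y\<in>Gs0.Y. trm (x \<otimes> y) = trm x"
proof (intro ballI)
  fix x y assume x: "x \<in> Gs0.Kp" and y: "y \<in> Gs0.Y"
  have xA: "x \<in> carrier A" using Gs0.Kpc[OF x] .
  have yA: "y \<in> carrier A" using Gs0.Yc[OF y] .
  have iy: "inv y \<in> Gs0.Y" using subgroup.m_inv_closed[OF Gs0.Y_sub y] .
  show "trm (x \<otimes> y) = trm x"
  proof (cases "x \<in> Gs0.Y")
    case True
    hence "x \<otimes> y \<in> Gs0.Y" using subgroup.m_closed[OF Gs0.Y_sub _ y] by blast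
    thus ?thesis using True unfolding trm_def by simp
  next
    case False
    have nxy: "x \<otimes> y \<notin> Gs0.Y"
    proof
      assume "x \<otimes> y \<in> Gs0.Y"
      hence "x \<otimes> y \<otimes> inv y \<in> Gs0.Y" using subgroup.m_closed[OF Gs0.Y_sub _ iy] by blast
      thus False using False xA yA by (simp add: m_assoc)
    qed
    have eq: "(\<lambda>t. t \<in> Hs0.Kp \<and> inv t \<otimes> (x \<otimes> y) \<in> Gs0.Y) = (\<lambda>t. t \<in> Hs0.Kp \<and> inv t \<otimes> x \<in> Gs0.Y)"
    proof (rule ext)
      fix t
      show "(t \<in> Hs0.Kp \<and> inv t \<otimes> (x \<otimes> y) \<in> Gs0.Y) = (t \<in> Hs0.Kp \<and> inv t \<otimes> x \<in> Gs0.Y)"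
      proof (cases "t \<in> Hs0.Kp")
        case True
        have tA: "t \<in> carrier A" using Hs0.Kpc[OF True] .
        have e1: "inv t \<otimes> (x \<otimes> y) = (inv t \<otimes> x) \<otimes> y" using tA xA yA by (simp add: m_assoc)
        have e2: "inv t \<otimes> x = (inv t \<otimes> (x \<otimes> y)) \<otimes> inv y" using tA xA yA by (simp add: m_assoc)
        show ?thesis
        proof
          assume "t \<in> Hs0.Kp \<and> inv t \<otimes> (x \<otimes> y) \<in> Gs0.Y"
          hence "(inv t \<otimes> (x \<otimes> y)) \<otimes> inv y \<in> Gs0.Y" using subgroup.m_closed[OF Gs0.Y_sub _ iy] by blast
          thus "t \<in> Hs0.Kp \<and> inv t \<otimes> x \<in> Gs0.Y" using e2 True by simp
        next
          assume "t \<in> Hs0.Kp \<and> inv t \<otimes> x \<in> Gs0.Y"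
          hence "(inv t \<otimes> x) \<otimes> y \<in> Gs0.Y" using subgroup.m_closed[OF Gs0.Y_sub _ y] by blast
          thus "t \<in> Hs0.Kp \<and> inv t \<otimes> (x \<otimes> y) \<in> Gs0.Y" using e1 True by simp
        qed
      qed simp
    qed
    show ?thesis using False nxy unfolding trm_def eq by simp
  qed
qed

lemma trH1: "\<forall>x\<in>Hs0.Kp. trm x \<in> Hs0.Kp \<and> inv (trm x) \<otimes> x \<in> Hs0.Y"
proof
  fix x assume x: "x \<in> Hs0.Kp"
  have 1: "trm x \<in> Hs0.Kp" and 2: "inv (trm x) \<otimes> x \<in> Gs0.Y" using trG1 HqGq x by blast+
  have "inv (trm x) \<otimes> x \<in> Hs0.Kp" using subgroup.m_closed[OF Hq_sub subgroup.m_inv_closed[OF Hq_sub 1] x] .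
  thus "trm x \<in> Hs0.Kp \<and> inv (trm x) \<otimes> x \<in> Hs0.Y" using 1 2 Y_Hq by blast
qed

lemma trH2: "\<forall>y\<in>Hs0.Y. trm y = \<one>" using trG2 YM_Y by blast

lemma trH3: "\<forall>x\<in>Hs0.Kp. \<forall>y\<in>Hs0.Y. trm (x \<otimes> y) = trm x" using trG3 YM_Y HqGq by blast

lemma HqMHq: "Hs0.Kp \<subseteq> M <#> Hs0.Kp"
proof
  fix h assume h: "h \<in> Hs0.Kp"
  have "h = \<one> \<otimes> h" using Hs0.Kpc[OF h] by simp
  thus "h \<in> M <#> Hs0.Kp" using h subgroup.one_closed[OF Hs0.N] unfolding set_mult_def by blast
qed

lemma b0: "base0 A C e \<sigma>" by (rule base0.intro[OF is_group base0_axioms.intro[OF finA C irrC]])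

sublocale Gs: side A C e \<sigma> G N \<theta> P \<alpha> d \<psi> \<nu> "Hs0.Kp" Mtm trm
  by (intro side.intro base.intro base_axioms.intro side_axioms.intro Gs0.side0_axioms b0
      Hq_sub Hq_norm Mtm Mtm1 HqGq GqNHq trG1 trG2 trG3)

sublocale Hs: side A C e \<sigma> H M \<phi> P' \<alpha>' d' \<psi> \<nu> "Hs0.Kp" Mtm trm
  by (intro side.intro base.intro base_axioms.intro side_axioms.intro Hs0.side0_axioms b0
      Hq_sub Hq_norm Mtm Mtm1 subset_refl HqMHq trH1 trH2 trH3)

end

lemma smult_smult_mat: "(a::complex) \<cdot>\<^sub>m (b \<cdot>\<^sub>m X) = (a * b) \<cdot>\<^sub>m X"
  by (rule eq_matI) auto

lemma smult_one_mat_id: "(1::complex) \<cdot>\<^sub>m X = X"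
  by (rule eq_matI) auto

lemma not_invertible_zero:
  assumes "n > 0" "Y \<in> carrier_mat n n" "invertible_mat (0 \<cdot>\<^sub>m (Y::complex mat))"
  shows False
proof -
  have Z: "0 \<cdot>\<^sub>m Y \<in> carrier_mat n n" using assms(2) by simp
  obtain B where B: "B \<in> carrier_mat n n" "(0 \<cdot>\<^sub>m Y) * B = 1\<^sub>m n" using invertible_matD[OF assms(3) Z] by blast
  have "((0 \<cdot>\<^sub>m Y) * B) $$ (0,0) = (\<Sum>k<n. (0 \<cdot>\<^sub>m Y) $$ (0,k) * B $$ (k,0))"
    using mult_entry[OF Z B(1)] assms(1) by blast
  also have "\<dots> = 0" using assms(1,2) by simp
  finally show False using B(2) assms(1) by simp
qed

lemma smult_cancel:
  assumes X: "X \<in> carrier_mat n n" and iX: "invertible_mat X" and n: "n > 0"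
    and eq: "a \<cdot>\<^sub>m X = (b::complex) \<cdot>\<^sub>m X"
  shows "a = b"
proof -
  obtain Xi where Xi: "Xi \<in> carrier_mat n n" "X * Xi = 1\<^sub>m n" using invertible_matD[OF iX X] by blast
  have "(a \<cdot>\<^sub>m X) * Xi = a \<cdot>\<^sub>m 1\<^sub>m n" using mult_smult_assoc_mat[OF X Xi(1)] Xi by simp
  moreover have "(b \<cdot>\<^sub>m X) * Xi = b \<cdot>\<^sub>m 1\<^sub>m n" using mult_smult_assoc_mat[OF X Xi(1)] Xi by simp
  ultimately have "(a \<cdot>\<^sub>m 1\<^sub>m n) $$ (0,0) = (b \<cdot>\<^sub>m 1\<^sub>m n) $$ (0,0)" using eq by simp
  thus ?thesis using n by simp
qed

context side begin

lemma Mt_c: "t \<in> Hp \<Longrightarrow> Mt t \<in> carrier_mat e e" using Mt by blast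

lemma F_prod_formula:
  assumes x: "x \<in> Kp" and y: "y \<in> Kp"
    and n: "n \<in> Nx" and c: "c \<in> C" and ex: "inv (tr x) \<otimes> x = n \<otimes> c"
    and n': "n' \<in> Nx" and c': "c' \<in> C" and ey: "inv (tr y) \<otimes> y = n' \<otimes> c'"
    and n'': "n'' \<in> Nx" and c'': "c'' \<in> C" and exy: "inv (tr (x \<otimes> y)) \<otimes> (x \<otimes> y) = n'' \<otimes> c''"
    and c3: "c3 \<in> C" and Pc3: "Px c3 = z3 \<cdot>\<^sub>m 1\<^sub>m d"
    and q: "(tr x \<otimes> n) \<otimes> (tr y \<otimes> n') = (tr (x \<otimes> y) \<otimes> n'') \<otimes> c3"
    and kap: "(Mt (tr x) * \<sigma> c) * (Mt (tr y) * \<sigma> c') = \<kappa> \<cdot>\<^sub>m (Mt (tr (x \<otimes> y)) * \<sigma> c'')"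
  shows "\<alpha>x (tr (x \<otimes> y) \<otimes> n'', c3) \<noteq> 0 \<and>
    F x * F y = (\<alpha>x (tr x \<otimes> n, tr y \<otimes> n') * \<kappa> * z3 / \<alpha>x (tr (x \<otimes> y) \<otimes> n'', c3)) \<cdot>\<^sub>m F (x \<otimes> y)"
proof -
  have xy: "x \<otimes> y \<in> Kp" using subgroup.m_closed[OF Kp_sub x y] .
  define tn where "tn = tr x \<otimes> n"
  define sn where "sn = tr y \<otimes> n'"
  define un where "un = tr (x \<otimes> y) \<otimes> n''"
  have inK: "\<And>z m. z \<in> Kp \<Longrightarrow> m \<in> Nx \<Longrightarrow> tr z \<otimes> m \<in> K"
    using subgroup.m_closed[OF K] tr_Hp HpK NK by blast
  have tn: "tn \<in> K" unfolding tn_def using inK[OF x n] .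
  have sn: "sn \<in> K" unfolding sn_def using inK[OF y n'] .
  have un: "un \<in> K" unfolding un_def using inK[OF xy n''] .
  have c3K: "c3 \<in> K" using c3 CK by blast
  define a3 where "a3 = \<alpha>x (un, c3)"
  define a12 where "a12 = \<alpha>x (tn, sn)"
  have qK: "un \<otimes> c3 \<in> K" using subgroup.m_closed[OF K un c3K] .
  have e1: "Px un * Px c3 = a3 \<cdot>\<^sub>m Px (un \<otimes> c3)" unfolding a3_def using Pm un c3K by blast
  have e2: "Px un * Px c3 = z3 \<cdot>\<^sub>m Px un" using Pc3 mult_smult_one[OF Pc[OF un]] by simp
  have a3nz: "a3 \<noteq> 0"
  proof
    assume "a3 = 0"
    hence "invertible_mat (0 \<cdot>\<^sub>m Px (un \<otimes> c3))"
      using e1 invertible_mult[OF Pc[OF un] Pc[OF c3K] Pinv[OF un] Pinv[OF c3K]] by simp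
    thus False using not_invertible_zero[OF d_pos Pc[OF qK]] by blast
  qed
  have Pq: "Px (un \<otimes> c3) = (z3 / a3) \<cdot>\<^sub>m Px un"
  proof -
    have "a3 \<cdot>\<^sub>m Px (un \<otimes> c3) = z3 \<cdot>\<^sub>m Px un" using e1 e2 by simp
    hence "(1 / a3) \<cdot>\<^sub>m (a3 \<cdot>\<^sub>m Px (un \<otimes> c3)) = (1 / a3) \<cdot>\<^sub>m (z3 \<cdot>\<^sub>m Px un)" by simp
    thus ?thesis using a3nz by (simp add: smult_smult_mat smult_one_mat_id)
  qed
  have Mx: "Mt (tr x) * \<sigma> c \<in> carrier_mat e e" using mult_carrier_mat[OF Mt_c[OF tr_Hp[OF x]] sig_carrier[OF c]] .
  have My: "Mt (tr y) * \<sigma> c' \<in> carrier_mat e e" using mult_carrier_mat[OF Mt_c[OF tr_Hp[OF y]] sig_carrier[OF c']] .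
  have Mxy: "Mt (tr (x \<otimes> y)) * \<sigma> c'' \<in> carrier_mat e e" using mult_carrier_mat[OF Mt_c[OF tr_Hp[OF xy]] sig_carrier[OF c'']] .
  have "F x * F y = kron (Px tn) (Mt (tr x) * \<sigma> c) * kron (Px sn) (Mt (tr y) * \<sigma> c')"
    using F_any[OF x n c ex] F_any[OF y n' c' ey] unfolding tn_def sn_def by simp
  also have "\<dots> = kron (Px tn * Px sn) ((Mt (tr x) * \<sigma> c) * (Mt (tr y) * \<sigma> c'))"
    by (rule kron_mult[OF Pc[OF tn] Mx Pc[OF sn] My])
  also have "Px tn * Px sn = a12 \<cdot>\<^sub>m Px (un \<otimes> c3)" unfolding a12_def using Pm tn sn q unfolding tn_def sn_def un_def by simp
  also have "kron (a12 \<cdot>\<^sub>m Px (un \<otimes> c3)) ((Mt (tr x) * \<sigma> c) * (Mt (tr y) * \<sigma> c'))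
      = (a12 * \<kappa> * (z3 / a3)) \<cdot>\<^sub>m kron (Px un) (Mt (tr (x \<otimes> y)) * \<sigma> c'')"
    unfolding kap Pq by (simp add: kron_smult_left kron_smult_right smult_smult_mat mult_ac)
  also have "kron (Px un) (Mt (tr (x \<otimes> y)) * \<sigma> c'') = F (x \<otimes> y)"
    using F_any[OF xy n'' c'' exy] unfolding un_def by simp
  finally show ?thesis using a3nz unfolding a12_def a3_def tn_def sn_def un_def by simp
qed

end

context main begin

lemma Hq_H: "h \<in> Hs0.Kp \<Longrightarrow> h \<in> H" using Hs0.KpK .
lemma Hq_G: "h \<in> Hs0.Kp \<Longrightarrow> h \<in> Gs0.Kp" using HqGq by blast
lemma Hq_norm': "h \<in> Hs0.Kp \<Longrightarrow> normC h" using Hs0.Kp_iff by blast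
lemma MN: "M \<subseteq> N" using MNH by blast
lemma mcomm: "m \<in> M \<Longrightarrow> \<forall>\<gamma>\<in>C. m \<otimes> \<gamma> = \<gamma> \<otimes> m" using CcenN MN by (metis subsetD)

lemma tw_dec:
  assumes x: "x \<in> Hs0.Kp" and m: "m \<in> M" and c: "c \<in> C" and ex: "inv (trm x) \<otimes> x = m \<otimes> c"
  shows "tw (Mtm (trm x) * \<sigma> c) x" and "x = trm x \<otimes> m \<otimes> c"
proof -
  define t where "t = trm x"
  have tH: "t \<in> Hs0.Kp" unfolding t_def using Hs.tr_Hp[OF x] .
  have tA: "t \<in> carrier A" using Hs0.Kpc[OF tH] .
  have xA: "x \<in> carrier A" using Hs0.Kpc[OF x] .
  have mA: "m \<in> carrier A" using Hs0.Nc[OF m] .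
  have xe: "x = t \<otimes> m \<otimes> c"
  proof -
    have "x = t \<otimes> (inv t \<otimes> x)" using tA xA by (simp add: mul_inv_cancel_left)
    also have "\<dots> = t \<otimes> (m \<otimes> c)" using ex unfolding t_def by simp
    finally show ?thesis using tA mA Cc[OF c] by (simp add: m_assoc)
  qed
  thus "x = trm x \<otimes> m \<otimes> c" unfolding t_def .
  have tw1: "tw (Mtm t * \<sigma> c) (t \<otimes> c)"
    by (rule tw_mult[OF Gs.tw_Mt[OF tH] tw_sig[OF c] normC_C[OF c] Gs.Mt_c[OF tH] sig_carrier[OF c] Hq_norm'[OF tH]])
  have "\<forall>\<gamma>\<in>C. (t \<otimes> m \<otimes> c) \<otimes> \<gamma> \<otimes> inv (t \<otimes> m \<otimes> c) = (t \<otimes> c) \<otimes> \<gamma> \<otimes> inv (t \<otimes> c)"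
    by (rule conj_central[OF tA mA mcomm[OF m] c])
  hence "\<forall>\<gamma>\<in>C. (t \<otimes> c) \<otimes> \<gamma> \<otimes> inv (t \<otimes> c) = x \<otimes> \<gamma> \<otimes> inv x" using xe by simp
  from tw_cong[OF tw1 this] show "tw (Mtm (trm x) * \<sigma> c) x" unfolding t_def .
qed

lemma common:
  assumes x: "x \<in> Hs0.Kp" and y: "y \<in> Hs0.Kp"
  shows "\<exists>a. Gs.F x * Gs.F y = a \<cdot>\<^sub>m Gs.F (x \<otimes> y) \<and> Hs.F x * Hs.F y = a \<cdot>\<^sub>m Hs.F (x \<otimes> y)"
proof -
  have xy: "x \<otimes> y \<in> Hs0.Kp" using subgroup.m_closed[OF Hq_sub x y] .
  obtain m c where m: "m \<in> M" and c: "c \<in> C" and ex: "inv (trm x) \<otimes> x = m \<otimes> c" using Hs.dec[OF x] by blast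
  obtain m' c' where m': "m' \<in> M" and c': "c' \<in> C" and ey: "inv (trm y) \<otimes> y = m' \<otimes> c'" using Hs.dec[OF y] by blast
  obtain m'' c'' where m'': "m'' \<in> M" and c'': "c'' \<in> C" and exy: "inv (trm (x \<otimes> y)) \<otimes> (x \<otimes> y) = m'' \<otimes> c''"
    using Hs.dec[OF xy] by blast
  have tH: "trm x \<in> Hs0.Kp" using Hs.tr_Hp[OF x] .
  have sH: "trm y \<in> Hs0.Kp" using Hs.tr_Hp[OF y] .
  have uH: "trm (x \<otimes> y) \<in> Hs0.Kp" using Hs.tr_Hp[OF xy] .
  have xA: "x \<in> carrier A" and yA: "y \<in> carrier A" using Hs0.Kpc[OF x] Hs0.Kpc[OF y] .
  have tA: "trm x \<in> carrier A" and sA: "trm y \<in> carrier A" and uA: "trm (x \<otimes> y) \<in> carrier A"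
    using Hs0.Kpc[OF tH] Hs0.Kpc[OF sH] Hs0.Kpc[OF uH] .
  have mA: "m \<in> carrier A" and m'A: "m' \<in> carrier A" and m''A: "m'' \<in> carrier A" using Hs0.Nc[OF m] Hs0.Nc[OF m'] Hs0.Nc[OF m''] .
  have cA: "c \<in> carrier A" and c'A: "c' \<in> carrier A" and c''A: "c'' \<in> carrier A" using Cc[OF c] Cc[OF c'] Cc[OF c''] .
  note tw_x = tw_dec[OF x m c ex] and tw_y = tw_dec[OF y m' c' ey] and tw_xy = tw_dec[OF xy m'' c'' exy]
  have ncx: "normC x" and ncy: "normC y" using Hq_norm'[OF x] Hq_norm'[OF y] .
  have ncxy: "normC (x \<otimes> y)" using normC_mult[OF ncx ncy] .
  have X1: "Mtm (trm x) * \<sigma> c \<in> carrier_mat e e" using mult_carrier_mat[OF Gs.Mt_c[OF tH] sig_carrier[OF c]] .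
  have X2: "Mtm (trm y) * \<sigma> c' \<in> carrier_mat e e" using mult_carrier_mat[OF Gs.Mt_c[OF sH] sig_carrier[OF c']] .
  have Vc: "Mtm (trm (x \<otimes> y)) * \<sigma> c'' \<in> carrier_mat e e" using mult_carrier_mat[OF Gs.Mt_c[OF uH] sig_carrier[OF c'']] .
  have Mu: "invertible_mat (Mtm (trm (x \<otimes> y)))" using Mtm uH by blast
  have Vi: "invertible_mat (Mtm (trm (x \<otimes> y)) * \<sigma> c'')"
    using invertible_mult[OF Gs.Mt_c[OF uH] sig_carrier[OF c''] Mu sig_invertible[OF c'']] .
  have tw12: "tw ((Mtm (trm x) * \<sigma> c) * (Mtm (trm y) * \<sigma> c')) (x \<otimes> y)"
    using tw_mult[OF tw_x(1) tw_y(1) ncy X1 X2 ncx] .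
  have X12: "(Mtm (trm x) * \<sigma> c) * (Mtm (trm y) * \<sigma> c') \<in> carrier_mat e e" using mult_carrier_mat[OF X1 X2] .
  obtain \<kappa> where kap: "(Mtm (trm x) * \<sigma> c) * (Mtm (trm y) * \<sigma> c') = \<kappa> \<cdot>\<^sub>m (Mtm (trm (x \<otimes> y)) * \<sigma> c'')"
    using tw_scalar[OF tw12 tw_xy(1) ncxy X12 Vc Vi] by blast
  define c0 where "c0 = inv y \<otimes> inv c \<otimes> y \<otimes> inv c'"
  have yc: "inv y \<otimes> inv c \<otimes> y \<in> C" using ncy subgroup.m_inv_closed[OF C c] unfolding normC_def by blast
  have c0: "c0 \<in> C" unfolding c0_def using subgroup.m_closed[OF C yc subgroup.m_inv_closed[OF C c']] .
  define c3 where "c3 = c'' \<otimes> c0"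
  have c3: "c3 \<in> C" unfolding c3_def using subgroup.m_closed[OF C c'' c0] .
  have e_t: "trm x \<otimes> m = x \<otimes> inv c"
  proof -
    have "x \<otimes> inv c = (trm x \<otimes> m \<otimes> c) \<otimes> inv c"
      by (rule arg_cong[where f="\<lambda>z. z \<otimes> inv c", OF tw_x(2)])
    also have "\<dots> = trm x \<otimes> m" using tA mA cA by (simp add: m_assoc)
    finally show ?thesis by simp
  qed
  have e_s: "trm y \<otimes> m' = y \<otimes> inv c'"
  proof -
    have "y \<otimes> inv c' = (trm y \<otimes> m' \<otimes> c') \<otimes> inv c'"
      by (rule arg_cong[where f="\<lambda>z. z \<otimes> inv c'", OF tw_y(2)])
    also have "\<dots> = trm y \<otimes> m'" using sA m'A c'A by (simp add: m_assoc)
    finally show ?thesis by simp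
  qed
  have e_u: "trm (x \<otimes> y) \<otimes> m'' = x \<otimes> y \<otimes> inv c''"
  proof -
    have "x \<otimes> y \<otimes> inv c'' = (trm (x \<otimes> y) \<otimes> m'' \<otimes> c'') \<otimes> inv c''"
      by (rule arg_cong[where f="\<lambda>z. z \<otimes> inv c''", OF tw_xy(2)])
    also have "\<dots> = trm (x \<otimes> y) \<otimes> m''" using uA m''A c''A by (simp add: m_assoc)
    finally show ?thesis by simp
  qed
  have q: "(trm x \<otimes> m) \<otimes> (trm y \<otimes> m') = (trm (x \<otimes> y) \<otimes> m'') \<otimes> c3"
  proof -
    have i1: "inv c \<in> carrier A" "inv c' \<in> carrier A" "inv c'' \<in> carrier A" "inv y \<in> carrier A"
      using cA c'A c''A yA by auto
    have "(trm (x \<otimes> y) \<otimes> m'') \<otimes> c3 = x \<otimes> (y \<otimes> (inv c'' \<otimes> (c'' \<otimes> (inv y \<otimes> (inv c \<otimes> (y \<otimes> inv c'))))))"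
      unfolding e_u c3_def c0_def using xA yA cA c'A c''A i1 by (simp add: m_assoc)
    also have "inv c'' \<otimes> (c'' \<otimes> (inv y \<otimes> (inv c \<otimes> (y \<otimes> inv c')))) = inv y \<otimes> (inv c \<otimes> (y \<otimes> inv c'))"
      using c''A i1 yA by (simp add: inv_mul_cancel_left)
    also have "y \<otimes> (inv y \<otimes> (inv c \<otimes> (y \<otimes> inv c'))) = inv c \<otimes> (y \<otimes> inv c')"
      using i1 yA by (simp add: mul_inv_cancel_left)
    also have "x \<otimes> (inv c \<otimes> (y \<otimes> inv c')) = (trm x \<otimes> m) \<otimes> (trm y \<otimes> m')"
      unfolding e_t e_s using xA yA i1 by (simp add: m_assoc)
    finally show ?thesis by simp
  qed
  have c3cen: "c3 \<in> centralizer_in A G N" using c3 CG by blast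
  obtain z3 where z3: "P c3 = z3 \<cdot>\<^sub>m 1\<^sub>m (dim_row (P c3))" "P' c3 = z3 \<cdot>\<^sub>m 1\<^sub>m (dim_row (P' c3))"
    using sc c3cen by blast
  have c3G: "c3 \<in> G" using c3 CGs by blast
  have c3H: "c3 \<in> H" using c3 CH by blast
  have "P c3 \<in> carrier_mat d d" using Gs0.Pc[OF c3G] .
  hence z3G: "P c3 = z3 \<cdot>\<^sub>m 1\<^sub>m d" using z3(1) by simp
  have "P' c3 \<in> carrier_mat d' d'" using Hs0.Pc[OF c3H] .
  hence z3H: "P' c3 = z3 \<cdot>\<^sub>m 1\<^sub>m d'" using z3(2) by simp
  have mN: "m \<in> N" "m' \<in> N" "m'' \<in> N" using MN m m' m'' by (auto simp: subset_iff)
  have G: "\<alpha> (trm (x \<otimes> y) \<otimes> m'', c3) \<noteq> 0 \<and> Gs.F x * Gs.F y = (\<alpha> (trm x \<otimes> m, trm y \<otimes> m') * \<kappa> * z3 / \<alpha> (trm (x \<otimes> y) \<otimes> m'', c3)) \<cdot>\<^sub>m Gs.F (x \<otimes> y)"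
    by (rule Gs.F_prod_formula[OF Hq_G[OF x] Hq_G[OF y] mN(1) c ex mN(2) c' ey mN(3) c'' exy c3 z3G q kap])
  have H: "\<alpha>' (trm (x \<otimes> y) \<otimes> m'', c3) \<noteq> 0 \<and> Hs.F x * Hs.F y = (\<alpha>' (trm x \<otimes> m, trm y \<otimes> m') * \<kappa> * z3 / \<alpha>' (trm (x \<otimes> y) \<otimes> m'', c3)) \<cdot>\<^sub>m Hs.F (x \<otimes> y)"
    by (rule Hs.F_prod_formula[OF x y m c ex m' c' ey m'' c'' exy c3 z3H q kap])
  have mH: "m \<in> H" "m' \<in> H" "m'' \<in> H" using m m' m'' Hs0.NK by auto
  have inH: "trm x \<otimes> m \<in> H" "trm y \<otimes> m' \<in> H" "trm (x \<otimes> y) \<otimes> m'' \<in> H"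
    using subgroup.m_closed[OF Hs0.K Hq_H[OF tH] mH(1)] subgroup.m_closed[OF Hs0.K Hq_H[OF sH] mH(2)]
      subgroup.m_closed[OF Hs0.K Hq_H[OF uH] mH(3)] by auto
  have a1: "\<alpha> (trm x \<otimes> m, trm y \<otimes> m') = \<alpha>' (trm x \<otimes> m, trm y \<otimes> m')" using aa inH(1,2) by blast
  have a2: "\<alpha> (trm (x \<otimes> y) \<otimes> m'', c3) = \<alpha>' (trm (x \<otimes> y) \<otimes> m'', c3)" using aa inH(3) c3H by blast
  show ?thesis using G H unfolding a1 a2 by blast
qed

lemma FE: assumes x: "x \<in> Hs0.Kp" and y: "y \<in> Hs0.Kp" shows "Gs.aF (x, y) = Hs.aF (x, y)"
proof -
  obtain a where a: "Gs.F x * Gs.F y = a \<cdot>\<^sub>m Gs.F (x \<otimes> y)" "Hs.F x * Hs.F y = a \<cdot>\<^sub>m Hs.F (x \<otimes> y)"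
    using common[OF x y] by blast
  have xy: "x \<otimes> y \<in> Hs0.Kp" using subgroup.m_closed[OF Hq_sub x y] .
  have "Gs.aF (x, y) \<cdot>\<^sub>m Gs.F (x \<otimes> y) = a \<cdot>\<^sub>m Gs.F (x \<otimes> y)" using Gs.aF[OF Hq_G[OF x] Hq_G[OF y]] a(1) by simp
  hence 1: "Gs.aF (x, y) = a"
    using smult_cancel[OF Gs.Fc[OF Hq_G[OF xy]] Gs.Fi[OF Hq_G[OF xy]]] Gs0.d_pos Gs0.e_pos by simp
  have "Hs.aF (x, y) \<cdot>\<^sub>m Hs.F (x \<otimes> y) = a \<cdot>\<^sub>m Hs.F (x \<otimes> y)" using Hs.aF[OF x y] a(2) by simp
  hence 2: "Hs.aF (x, y) = a"
    using smult_cancel[OF Hs.Fc[OF xy] Hs.Fi[OF xy]] Hs0.d_pos Hs0.e_pos by simp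
  show ?thesis using 1 2 by simp
qed

end

context main begin

lemma cen_sub: "centralizer_in A Gs0.Kp Gs0.Y \<subseteq> Hs0.Kp"
proof
  fix g assume g: "g \<in> centralizer_in A Gs0.Kp Gs0.Y"
  hence gG: "g \<in> Gs0.Kp" and gc: "\<forall>y\<in>Gs0.Y. g \<otimes> y = y \<otimes> g" unfolding centralizer_in_def by auto
  have gK: "g \<in> G" and ncg: "normC g" and ps: "\<forall>c\<in>C. \<psi> (g \<otimes> c \<otimes> inv g) = \<psi> c" using Gs0.Kp_iff gG by auto
  have "\<forall>n\<in>N. g \<otimes> n = n \<otimes> g"
  proof
    fix n assume n: "n \<in> N"
    have "n \<otimes> \<one> \<in> Gs0.Y" using Gs0.Y_memI[OF n subgroup.one_closed[OF C]] .
    hence "n \<in> Gs0.Y" using Gs0.Nc[OF n] by simp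
    thus "g \<otimes> n = n \<otimes> g" using gc by blast
  qed
  hence "g \<in> centralizer_in A G N" using gK unfolding centralizer_in_def by blast
  hence "g \<in> H" using cenH by blast
  thus "g \<in> Hs0.Kp" using Hs0.Kp_iff ncg ps by blast
qed

lemma SC:
  assumes g: "g \<in> centralizer_in A Gs0.Kp Gs0.Y"
  shows "\<exists>z. Gs.F g = z \<cdot>\<^sub>m 1\<^sub>m (dim_row (Gs.F g)) \<and> Hs.F g = z \<cdot>\<^sub>m 1\<^sub>m (dim_row (Hs.F g))"
proof -
  have gG: "g \<in> Gs0.Kp" and gc: "\<forall>y\<in>Gs0.Y. g \<otimes> y = y \<otimes> g" using g unfolding centralizer_in_def by auto
  have gH: "g \<in> Hs0.Kp" using cen_sub g by blast
  obtain w where w: "Gs.F g = w \<cdot>\<^sub>m 1\<^sub>m (d*e)" using Gs.F_central[OF gG gc] by blast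
  obtain m c0 where m: "m \<in> M" and c0: "c0 \<in> C" and ex: "inv (trm g) \<otimes> g = m \<otimes> c0" using Hs.dec[OF gH] by blast
  have tH: "trm g \<in> Hs0.Kp" using Hs.tr_Hp[OF gH] .
  have tA: "trm g \<in> carrier A" using Hs0.Kpc[OF tH] .
  have gA: "g \<in> carrier A" using Hs0.Kpc[OF gH] .
  have mA: "m \<in> carrier A" using Hs0.Nc[OF m] .
  have cA: "c0 \<in> carrier A" using Cc[OF c0] .
  have mN: "m \<in> N" using MN m by blast
  have xe: "g = trm g \<otimes> m \<otimes> c0" using tw_dec(2)[OF gH m c0 ex] .
  have e_t: "trm g \<otimes> m = g \<otimes> inv c0"
  proof -
    have "g \<otimes> inv c0 = (trm g \<otimes> m \<otimes> c0) \<otimes> inv c0"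
      by (rule arg_cong[where f="\<lambda>z. z \<otimes> inv c0", OF xe])
    also have "\<dots> = trm g \<otimes> m" using tA mA cA by (simp add: m_assoc)
    finally show ?thesis by simp
  qed
  have tmH: "trm g \<otimes> m \<in> H" using subgroup.m_closed[OF Hs0.K Hq_H[OF tH]] m Hs0.NK by blast
  have tmG: "trm g \<otimes> m \<in> G" using tmH HG by blast
  have "\<forall>n\<in>N. (trm g \<otimes> m) \<otimes> n = n \<otimes> (trm g \<otimes> m)"
  proof
    fix n assume n: "n \<in> N"
    have nA: "n \<in> carrier A" using Gs0.Nc[OF n] .
    have "n \<otimes> \<one> \<in> Gs0.Y" using Gs0.Y_memI[OF n subgroup.one_closed[OF C]] .
    hence "n \<in> Gs0.Y" using nA by simp
    hence gn: "g \<otimes> n = n \<otimes> g" using gc by blast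
    have cn: "c0 \<otimes> n = n \<otimes> c0" using CcenN c0 n by blast
    have icn: "inv c0 \<otimes> n = n \<otimes> inv c0"
    proof -
      have "inv c0 \<otimes> n = inv c0 \<otimes> (n \<otimes> c0) \<otimes> inv c0" using nA cA by (simp add: m_assoc)
      also have "\<dots> = inv c0 \<otimes> (c0 \<otimes> n) \<otimes> inv c0" using cn by simp
      also have "\<dots> = n \<otimes> inv c0" using nA cA by (simp add: m_assoc[symmetric])
      finally show ?thesis .
    qed
    have "(g \<otimes> inv c0) \<otimes> n = g \<otimes> (inv c0 \<otimes> n)" using gA cA nA by (simp add: m_assoc)
    also have "\<dots> = (g \<otimes> n) \<otimes> inv c0" unfolding icn using gA cA nA by (simp add: m_assoc)
    also have "\<dots> = n \<otimes> (g \<otimes> inv c0)" unfolding gn using gA cA nA by (simp add: m_assoc)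
    finally show "(trm g \<otimes> m) \<otimes> n = n \<otimes> (trm g \<otimes> m)" unfolding e_t .
  qed
  hence tmc: "trm g \<otimes> m \<in> centralizer_in A G N" using tmG unfolding centralizer_in_def by blast
  obtain z where z: "P (trm g \<otimes> m) = z \<cdot>\<^sub>m 1\<^sub>m (dim_row (P (trm g \<otimes> m)))"
    "P' (trm g \<otimes> m) = z \<cdot>\<^sub>m 1\<^sub>m (dim_row (P' (trm g \<otimes> m)))" using sc tmc by blast
  have "P (trm g \<otimes> m) \<in> carrier_mat d d" using Gs0.Pc[OF tmG] .
  hence zG: "P (trm g \<otimes> m) = z \<cdot>\<^sub>m 1\<^sub>m d" using z(1) by simp
  have "P' (trm g \<otimes> m) \<in> carrier_mat d' d'" using Hs0.Pc[OF tmH] .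
  hence zH: "P' (trm g \<otimes> m) = z \<cdot>\<^sub>m 1\<^sub>m d'" using z(2) by simp
  have znz: "z \<noteq> 0"
  proof
    assume "z = 0"
    hence P0: "P (trm g \<otimes> m) = 0 \<cdot>\<^sub>m 1\<^sub>m d" using zG by simp
    have "invertible_mat (0 \<cdot>\<^sub>m (1\<^sub>m d :: complex mat))" using Gs0.Pinv[OF tmG] unfolding P0 .
    thus False by (rule not_invertible_zero[OF Gs0.d_pos one_carrier_mat])
  qed
  define V where "V = Mtm (trm g) * \<sigma> c0"
  have Vc: "V \<in> carrier_mat e e" unfolding V_def using mult_carrier_mat[OF Gs.Mt_c[OF tH] sig_carrier[OF c0]] .
  have GF: "Gs.F g = kron (P (trm g \<otimes> m)) V" unfolding V_def using Gs.F_any[OF gG mN c0 ex] .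
  have HF: "Hs.F g = kron (P' (trm g \<otimes> m)) V" unfolding V_def using Hs.F_any[OF gH m c0 ex] .
  have kz: "z \<cdot>\<^sub>m kron (1\<^sub>m d) V = w \<cdot>\<^sub>m 1\<^sub>m (d*e)" using GF w zG by (simp add: kron_smult_left)
  have Vs: "V = (w / z) \<cdot>\<^sub>m 1\<^sub>m e"
  proof (rule eq_matI)
    fix i j assume i: "i < dim_row ((w / z) \<cdot>\<^sub>m 1\<^sub>m e)" and j: "j < dim_col ((w / z) \<cdot>\<^sub>m 1\<^sub>m e)"
    hence i: "i < e" and j: "j < e" by auto
    have de: "e \<le> d * e" using Gs0.d_pos by simp
    have ide: "i < d * e" "j < d * e" using less_le_trans[OF i de] less_le_trans[OF j de] .
    have "(z \<cdot>\<^sub>m kron (1\<^sub>m d) V) $$ (i,j) = z * V $$ (i,j)"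
      using ide i j Vc Gs0.d_pos by (simp add: kron_index)
    moreover have "(w \<cdot>\<^sub>m 1\<^sub>m (d*e)) $$ (i,j) = w * (if i = j then 1 else 0)" using ide by simp
    ultimately have "z * V $$ (i,j) = w * (if i = j then 1 else 0)" using kz by simp
    thus "V $$ (i,j) = ((w / z) \<cdot>\<^sub>m 1\<^sub>m e) $$ (i,j)" using znz i j by (auto simp: field_simps)
  qed (use Vc in auto)
  have "Hs.F g = w \<cdot>\<^sub>m 1\<^sub>m (d'*e)"
    unfolding HF zH Vs using znz by (simp add: kron_smult_left kron_smult_right smult_smult_mat kron_one)
  moreover have "dim_row (Gs.F g) = d*e" "dim_row (Hs.F g) = d'*e" using Gs.Fc[OF gG] Hs.Fc[OF gH] by auto
  ultimately show ?thesis using w by auto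
qed

lemma final: "geq_c A Gs0.Kp Gs0.Y Gs0.\<chi> Hs0.Kp Hs0.Y Hs0.\<chi>"
  unfolding geq_c_def
proof (intro conjI)
  show "char_triple A Gs0.Kp Gs0.Y Gs0.\<chi>" by (rule Gs.side_triple)
  show "char_triple A Hs0.Kp Hs0.Y Hs0.\<chi>" by (rule Hs.side_triple)
  show "Gs0.Kp = Gs0.Y <#> Hs0.Kp"
  proof
    show "Gs0.Kp \<subseteq> Gs0.Y <#> Hs0.Kp"
    proof
      fix g assume "g \<in> Gs0.Kp"
      then obtain n h where n: "n \<in> N" and h: "h \<in> Hs0.Kp" and ge: "g = n \<otimes> h"
        using GqNHq unfolding set_mult_def by blast
      have "n \<otimes> \<one> \<in> Gs0.Y" using Gs0.Y_memI[OF n subgroup.one_closed[OF C]] .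
      hence "n \<in> Gs0.Y" using Gs0.Nc[OF n] by simp
      thus "g \<in> Gs0.Y <#> Hs0.Kp" using h ge unfolding set_mult_def by blast
    qed
    show "Gs0.Y <#> Hs0.Kp \<subseteq> Gs0.Kp"
    proof
      fix g assume "g \<in> Gs0.Y <#> Hs0.Kp"
      then obtain y h where y: "y \<in> Gs0.Y" and h: "h \<in> Hs0.Kp" and ge: "g = y \<otimes> h"
        unfolding set_mult_def by blast
      have "y \<in> Gs0.Kp" "h \<in> Gs0.Kp" using Gs0.Y_Kp y Hq_G h by auto
      thus "g \<in> Gs0.Kp" using ge subgroup.m_closed[OF Gs0.Kp_sub] by simp
    qed
  qed
  show "Hs0.Y = Gs0.Y \<inter> Hs0.Kp" using YM_Y Hs0.Y_Kp Y_Hq by blast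
  show "centralizer_in A Gs0.Kp Gs0.Y \<subseteq> Hs0.Kp" by (rule cen_sub)
  show "\<exists>Pa \<alpha>a P'a \<alpha>'a. proj_rep_assoc A Gs0.Kp Gs0.Y Gs0.\<chi> Pa \<alpha>a \<and> proj_rep_assoc A Hs0.Kp Hs0.Y Hs0.\<chi> P'a \<alpha>'a \<and>
      (\<forall>x\<in>Hs0.Kp. \<forall>y\<in>Hs0.Kp. \<alpha>a (x, y) = \<alpha>'a (x, y)) \<and>
      (\<forall>c\<in>centralizer_in A Gs0.Kp Gs0.Y. \<exists>z. Pa c = z \<cdot>\<^sub>m 1\<^sub>m (dim_row (Pa c)) \<and> P'a c = z \<cdot>\<^sub>m 1\<^sub>m (dim_row (P'a c)))"
    using Gs.side_proj Hs.side_proj FE SC by blast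
qed

end

theorem lemma3p3:
  fixes A :: "('a, 'b) monoid_scheme"
    and G N H M C :: "'a set"
    and \<theta> \<phi> \<nu> \<psi> :: "'a \<Rightarrow> complex"
  assumes "group A" and "finite (carrier A)"
    and "geq_c A G N \<theta> H M \<phi>"
    and "subgroup C A" and "C \<subseteq> centralizer_in A G N"
    and "\<nu> \<in> Irr A (C \<inter> N)" and "lies_over (C \<inter> N) \<theta> \<nu>" and "lies_over (C \<inter> N) \<phi> \<nu>"
    and "\<psi> \<in> Irr_over A C (C \<inter> N) \<nu>"
  shows "geq_c A
           (char_stab A (normalizer_in A G C) (cprod_char A N C \<theta> \<psi>)) (N <#>\<^bsub>A\<^esub> C) (cprod_char A N C \<theta> \<psi>)
           (char_stab A (normalizer_in A H C) (cprod_char A M C \<phi> \<psi>)) (M <#>\<^bsub>A\<^esub> C) (cprod_char A M C \<phi> \<psi>)"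
proof -
  note geq = assms(3)[unfolded geq_c_def]
  have ctG: "char_triple A G N \<theta>" and ctH: "char_triple A H M \<phi>" and GNH: "G = N <#>\<^bsub>A\<^esub> H"
    and MNH: "M = N \<inter> H" and cenH: "centralizer_in A G N \<subseteq> H" using geq by blast+
  obtain P \<alpha> P' \<alpha>' where pG: "proj_rep_assoc A G N \<theta> P \<alpha>" and pH: "proj_rep_assoc A H M \<phi> P' \<alpha>'"
    and aa: "\<forall>x\<in>H. \<forall>y\<in>H. \<alpha> (x, y) = \<alpha>' (x, y)"
    and sc: "\<forall>c\<in>centralizer_in A G N. \<exists>z. P c = z \<cdot>\<^sub>m 1\<^sub>m (dim_row (P c)) \<and> P' c = z \<cdot>\<^sub>m 1\<^sub>m (dim_row (P' c))"
    using geq by blast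
  obtain d where
    PGd: "\<forall>x\<in>G. P x \<in> carrier_mat d d \<and> invertible_mat (P x)"
    and PGm: "\<forall>x\<in>G. \<forall>y\<in>G. P x * P y = \<alpha> (x, y) \<cdot>\<^sub>m P (x \<otimes>\<^bsub>A\<^esub> y)"
    and PGr: "is_rep A N d P" and PGt: "\<forall>n\<in>N. \<theta> n = mat_trace (P n)"
    and PGa: "\<forall>x\<in>G. \<forall>n\<in>N. P (x \<otimes>\<^bsub>A\<^esub> n) = P x * P n \<and> P (n \<otimes>\<^bsub>A\<^esub> x) = P n * P x"
    using pG unfolding proj_rep_assoc_def by blast
  obtain d' where
    PHd: "\<forall>x\<in>H. P' x \<in> carrier_mat d' d' \<and> invertible_mat (P' x)"
    and PHm: "\<forall>x\<in>H. \<forall>y\<in>H. P' x * P' y = \<alpha>' (x, y) \<cdot>\<^sub>m P' (x \<otimes>\<^bsub>A\<^esub> y)"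
    and PHr: "is_rep A M d' P'" and PHt: "\<forall>n\<in>M. \<phi> n = mat_trace (P' n)"
    and PHa: "\<forall>x\<in>H. \<forall>n\<in>M. P' (x \<otimes>\<^bsub>A\<^esub> n) = P' x * P' n \<and> P' (n \<otimes>\<^bsub>A\<^esub> x) = P' n * P' x"
    using pH unfolding proj_rep_assoc_def by blast
  have psiIrr: "\<psi> \<in> Irr A C" and lo3: "lies_over (C \<inter> N) \<psi> \<nu>" using assms(9) unfolding Irr_over_def by auto
  obtain e \<sigma> where irrC: "irreducible_rep A C e \<sigma>" and psiC: "\<forall>c\<in>C. \<psi> c = mat_trace (\<sigma> c)"
    using psiIrr unfolding Irr_def by blast
  have b0: "base0 A C e \<sigma>" by (rule base0.intro[OF assms(1) base0_axioms.intro[OF assms(2) assms(4) irrC]])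
  have m: "main A C e \<sigma> G N H M \<theta> \<phi> \<nu> \<psi> P P' \<alpha> \<alpha>' d d'"
    by (rule main.intro[OF b0 main_axioms.intro[OF ctG ctH GNH MNH cenH PGd PGm PGr PGt PGa PHd PHm PHr PHt PHa aa sc
          assms(5) assms(6) assms(7) assms(8) psiC lo3]])
  show ?thesis using main.final[OF m] .
qed

end
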